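(* Let $\{(n_i,\mathsf{G}_i)\}_{i\in I}$ be any family of pairs consisting of an integer $n_i\geq 1$ and a group $\mathsf{G}_i$, with $\mathsf{G}_i\not\cong\mathsf{G}_{i'}$ for $i\neq i'$. Let $\mathcal{G}_{\{(n_i,\mathsf{G}_i)\}_{i\in I}}=\coprod_{i\in I}\coprod^{n_i}\mathsf{G}_i$ (the coproduct of $n_i$ copies of the one-object groupoid $\mathsf{G}_i$, over all $i$). Then there is an isomorphism of 2-groups $$\mathbb{S}ym\big(\mathcal{G}_{\{(n_i,\mathsf{G}_i)\}_{i\in I}}\big)\;\cong\;\prod_{i\in I}\mathsf{S}_{n_i}\wr\wr\ \mathbb{S}ym(\mathsf{G}_i).$$
   Context: A 2-group is a monoidal groupoid $\mathbb{G}=(\mathcal{G},\otimes,e,a,l,r)$ (groupoid $\mathcal G$, tensor functor $\otimes$, unit object $e$, natural isomorphisms $a_{x,y,z}:x\otimes(y\otimes z)\to(x\otimes y)\otimes z$, $l_x:e\otimes x\to x$, $r_x:x\otimes e\to x$ satisfying pentagon and triangle axioms) in which every object $x$ has an object $x^*$ with $x\otimes x^*\cong e\cong x^*\otimes x$. Morphisms of 2-groups are strong monoidal functors; an isomorphism of 2-groups is a monoidal functor with a strict inverse monoidal functor. A group $\mathsf G$ is regarded as the one-object groupoid with morphisms the elements of $\mathsf G$. For a groupoid $\mathcal G$, $\mathbb{S}ym(\mathcal{G})$ is the 2-group whose objects are the self-equivalences (functors $\mathcal G\to\mathcal G$ that are equivalences) of $\mathcal G$, whose morphisms are natural isomorphisms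 between them, with tensor product given by composition of functors and horizontal composition of natural transformations and unit $id_{\mathcal G}$. The product $\prod_i\mathbb{G}_i$ of 2-groups is the product groupoid with tensor product, unit, associator and unitors defined componentwise. For a 2-group $\mathbb G$ and $n\ge1$, the wreath 2-product $\mathsf{S}_n\wr\wr\ \mathbb{G}$ is the 2-group whose objects are pairs $(\sigma,\mathbf{x})$ with $\sigma\in\mathsf S_n$ and $\mathbf x=(x_1,\dots,x_n)$ an $n$-tuple of objects of $\mathcal G$, whose morphisms $(\sigma,\mathbf x)\to(\sigma',\mathbf x')$ exist only if $\sigma=\sigma'$ and are the $n$-tuples $\mathbf f=(f_1,\dots,f_n)$ of morphisms $f_i:x_i\to x'_i$ (written $(id_\sigma,\mathbf f)$), composed componentwise, with tensor product $(\sigma,\mathbf{x})\otimes(\sigma',\mathbf{x}')=(\sigma\sigma',(\mathbf{x}\rhd\sigma')\otimes\mathbf{x}')$ and $(id_\sigma,\mathbf f)\otimes(id_{\sigma'},\mathbf f')=(id_{\sigma\sigma'},(\mathbf f\rhd\sigma')\otimes\mathbf f')$, where $\mathbf{x}\rhd\sigma:=(x_{\sigma(1)},\dots,x_{\sigma(n)})$ (similarly for tuples of morphisms) and $\otimes$ on $n$-tuples is componentwise; unit $(id,(e,\dots,e))$; associator $a_{(\sigma,\mathbf x),(\sigma',\mathbf x'),(\sigma'',\mathbf x'')}=(id_{\sigma\sigma'\sigma''},a_{\mathbf x\rhd(\sigma'\sigma''),\mathbf x'\rhd\sigma'',\mathbf x''})$ and unitors $l_{(\sigma,\mathbf x)}=(id_\sigma,l_{\mathbf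 x})$, $r_{(\sigma,\mathbf x)}=(id_\sigma,r_{\mathbf x})$, all computed componentwise in $\mathbb G$. *)

theory Defs
  imports "HOL-Algebra.Group" "HOL-Combinatorics.Permutations"
begin

text \<open>A category is given by a set of objects, hom-sets, composition
  (c_comp g f = g after f) and identities.  A monoidal groupoid additionally
  carries tensor on objects and morphisms, unit, associator
  a x y z : x (y z) -> (x y) z, and unitors.\<close>

record ('o, 'm) cat =
  c_obj :: "'o set"
  c_hom :: "'o \<Rightarrow> 'o \<Rightarrow> 'm set"
  c_comp :: "'m \<Rightarrow> 'm \<Rightarrow> 'm"
  c_id :: "'o \<Rightarrow> 'm"

record ('o, 'm) mcat = "('o, 'm) cat" +
  m_tens :: "'o \<Rightarrow> 'o \<Rightarrow> 'o"
  m_tensm :: "'m \<Rightarrow> 'm \<Rightarrow> 'm"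
  m_unit :: "'o"
  m_assoc :: "'o \<Rightarrow> 'o \<Rightarrow> 'o \<Rightarrow> 'm"
  m_lu :: "'o \<Rightarrow> 'm"
  m_ru :: "'o \<Rightarrow> 'm"

definition mor :: "('o, 'm, 'a) cat_scheme \<Rightarrow> 'm set" where
  "mor C = (\<Union>x\<in>c_obj C. \<Union>y\<in>c_obj C. c_hom C x y)"

definition is_iso_in :: "('o, 'm, 'a) cat_scheme \<Rightarrow> 'o \<Rightarrow> 'o \<Rightarrow> 'm \<Rightarrow> bool" where
  "is_iso_in C x y f \<longleftrightarrow> f \<in> c_hom C x y \<and>
     (\<exists>g\<in>c_hom C y x. c_comp C g f = c_id C x \<and> c_comp C f g = c_id C y)"

definition is_functor ::
  "('o, 'm, 'a) cat_scheme \<Rightarrow> ('p, 'n, 'b) cat_scheme \<Rightarrow> ('o \<Rightarrow> 'p) \<times> ('m \<Rightarrow> 'n) \<Rightarrow> bool" where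
  "is_functor C D F \<longleftrightarrow>
     (\<forall>x\<in>c_obj C. fst F x \<in> c_obj D) \<and>
     (\<forall>x\<in>c_obj C. \<forall>y\<in>c_obj C. \<forall>f\<in>c_hom C x y. snd F f \<in> c_hom D (fst F x) (fst F y)) \<and>
     (\<forall>x\<in>c_obj C. \<forall>y\<in>c_obj C. \<forall>z\<in>c_obj C. \<forall>f\<in>c_hom C x y. \<forall>g\<in>c_hom C y z.
        snd F (c_comp C g f) = c_comp D (snd F g) (snd F f)) \<and>
     (\<forall>x\<in>c_obj C. snd F (c_id C x) = c_id D (fst F x))"

definition nat_trans ::
  "('o, 'm, 'a) cat_scheme \<Rightarrow> ('p, 'n, 'b) cat_scheme \<Rightarrow> ('o \<Rightarrow> 'p) \<times> ('m \<Rightarrow> 'n)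
    \<Rightarrow> ('o \<Rightarrow> 'p) \<times> ('m \<Rightarrow> 'n) \<Rightarrow> ('o \<Rightarrow> 'n) \<Rightarrow> bool" where
  "nat_trans C D F F' \<alpha> \<longleftrightarrow>
     (\<forall>x\<in>c_obj C. \<alpha> x \<in> c_hom D (fst F x) (fst F' x)) \<and>
     (\<forall>x\<in>c_obj C. \<forall>y\<in>c_obj C. \<forall>f\<in>c_hom C x y.
        c_comp D (\<alpha> y) (snd F f) = c_comp D (snd F' f) (\<alpha> x))"

definition nat_iso ::
  "('o, 'm, 'a) cat_scheme \<Rightarrow> ('p, 'n, 'b) cat_scheme \<Rightarrow> ('o \<Rightarrow> 'p) \<times> ('m \<Rightarrow> 'n)
    \<Rightarrow> ('o \<Rightarrow> 'p) \<times> ('m \<Rightarrow> 'n) \<Rightarrow> ('o \<Rightarrow> 'n) \<Rightarrow> bool" where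
  "nat_iso C D F F' \<alpha> \<longleftrightarrow> nat_trans C D F F' \<alpha> \<and>
     (\<forall>x\<in>c_obj C. is_iso_in D (fst F x) (fst F' x) (\<alpha> x))"

definition fcomp :: "('b \<Rightarrow> 'c) \<times> ('n \<Rightarrow> 'p) \<Rightarrow> ('a \<Rightarrow> 'b) \<times> ('m \<Rightarrow> 'n) \<Rightarrow> ('a \<Rightarrow> 'c) \<times> ('m \<Rightarrow> 'p)" where
  "fcomp F G = (fst F \<circ> fst G, snd F \<circ> snd G)"

definition is_equivalence ::
  "('o, 'm, 'a) cat_scheme \<Rightarrow> ('p, 'n, 'b) cat_scheme \<Rightarrow> ('o \<Rightarrow> 'p) \<times> ('m \<Rightarrow> 'n) \<Rightarrow> bool" where
  "is_equivalence C D F \<longleftrightarrow> is_functor C D F \<and>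
     (\<exists>G \<eta> \<epsilon>. is_functor D C G \<and> nat_iso C C (id, id) (fcomp G F) \<eta> \<and>
               nat_iso D D (fcomp F G) (id, id) \<epsilon>)"

text \<open>Functors are represented extensionally (undefined off objects/morphisms),
  so that each functor has a unique representative.\<close>

definition ext_functor :: "('o, 'm, 'a) cat_scheme \<Rightarrow> ('o \<Rightarrow> 'o) \<times> ('m \<Rightarrow> 'm) \<Rightarrow> bool" where
  "ext_functor C F \<longleftrightarrow> fst F \<in> extensional (c_obj C) \<and> snd F \<in> extensional (mor C)"

definition monoidal_functor ::
  "('o, 'm, 'a) mcat_scheme \<Rightarrow> ('p, 'n, 'b) mcat_scheme \<Rightarrow> ('o \<Rightarrow> 'p) \<times> ('m \<Rightarrow> 'n)
    \<Rightarrow> ('o \<Rightarrow> 'o \<Rightarrow> 'n) \<Rightarrow> 'n \<Rightarrow> bool" where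
  "monoidal_functor A B F \<mu> \<epsilon> \<longleftrightarrow> is_functor A B F \<and>
     (\<forall>x\<in>c_obj A. \<forall>y\<in>c_obj A.
        is_iso_in B (m_tens B (fst F x) (fst F y)) (fst F (m_tens A x y)) (\<mu> x y)) \<and>
     (\<forall>x\<in>c_obj A. \<forall>x'\<in>c_obj A. \<forall>y\<in>c_obj A. \<forall>y'\<in>c_obj A.
        \<forall>f\<in>c_hom A x x'. \<forall>g\<in>c_hom A y y'.
        c_comp B (\<mu> x' y') (m_tensm B (snd F f) (snd F g))
          = c_comp B (snd F (m_tensm A f g)) (\<mu> x y)) \<and>
     is_iso_in B (m_unit B) (fst F (m_unit A)) \<epsilon> \<and>
     (\<forall>x\<in>c_obj A. \<forall>y\<in>c_obj A. \<forall>z\<in>c_obj A.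
        c_comp B (snd F (m_assoc A x y z))
          (c_comp B (\<mu> x (m_tens A y z)) (m_tensm B (c_id B (fst F x)) (\<mu> y z)))
        = c_comp B (\<mu> (m_tens A x y) z)
          (c_comp B (m_tensm B (\<mu> x y) (c_id B (fst F z)))
                    (m_assoc B (fst F x) (fst F y) (fst F z)))) \<and>
     (\<forall>x\<in>c_obj A.
        c_comp B (snd F (m_lu A x))
          (c_comp B (\<mu> (m_unit A) x) (m_tensm B \<epsilon> (c_id B (fst F x))))
        = m_lu B (fst F x)) \<and>
     (\<forall>x\<in>c_obj A.
        c_comp B (snd F (m_ru A x))
          (c_comp B (\<mu> x (m_unit A)) (m_tensm B (c_id B (fst F x)) \<epsilon>))
        = m_ru B (fst F x))"

definition two_group_iso :: "('o, 'm, 'a) mcat_scheme \<Rightarrow> ('p, 'n, 'b) mcat_scheme \<Rightarrow> bool" where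
  "two_group_iso A B \<longleftrightarrow>
     (\<exists>F \<mu> \<epsilon> G \<nu> \<delta>. monoidal_functor A B F \<mu> \<epsilon> \<and> monoidal_functor B A G \<nu> \<delta> \<and>
        (\<forall>x\<in>c_obj A. fst G (fst F x) = x) \<and> (\<forall>f\<in>mor A. snd G (snd F f) = f) \<and>
        (\<forall>y\<in>c_obj B. fst F (fst G y) = y) \<and> (\<forall>g\<in>mor B. snd F (snd G g) = g))"

definition fcomp_r :: "('o, 'm, 'a) cat_scheme \<Rightarrow> ('o \<Rightarrow> 'o) \<times> ('m \<Rightarrow> 'm)
    \<Rightarrow> ('o \<Rightarrow> 'o) \<times> ('m \<Rightarrow> 'm) \<Rightarrow> ('o \<Rightarrow> 'o) \<times> ('m \<Rightarrow> 'm)" where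
  "fcomp_r C F G = (\<lambda>x\<in>c_obj C. fst F (fst G x), \<lambda>f\<in>mor C. snd F (snd G f))"

definition Sym_2grp :: "('o, 'm) cat \<Rightarrow>
   (('o \<Rightarrow> 'o) \<times> ('m \<Rightarrow> 'm),
    (('o \<Rightarrow> 'o) \<times> ('m \<Rightarrow> 'm)) \<times> (('o \<Rightarrow> 'o) \<times> ('m \<Rightarrow> 'm)) \<times> ('o \<Rightarrow> 'm)) mcat" where
  "Sym_2grp C =
    (let Ob = {F. is_equivalence C C F \<and> ext_functor C F} in
    \<lparr> c_obj = Ob,
      c_hom = (\<lambda>F F'. if F \<in> Ob \<and> F' \<in> Ob
                 then {(F, F', \<alpha>) | \<alpha>. nat_iso C C F F' \<alpha> \<and> \<alpha> \<in> extensional (c_obj C)}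
                 else {}),
      c_comp = (\<lambda>(G, H, \<beta>) (F, G', \<alpha>). (F, H, \<lambda>x\<in>c_obj C. c_comp C (\<beta> x) (\<alpha> x))),
      c_id = (\<lambda>F. (F, F, \<lambda>x\<in>c_obj C. c_id C (fst F x))),
      m_tens = fcomp_r C,
      m_tensm = (\<lambda>(F, G, \<alpha>) (F', G', \<alpha>').
                   (fcomp_r C F F', fcomp_r C G G',
                    \<lambda>x\<in>c_obj C. c_comp C (\<alpha> (fst G' x)) (snd F (\<alpha>' x)))),
      m_unit = (\<lambda>x\<in>c_obj C. x, \<lambda>f\<in>mor C. f),
      m_assoc = (\<lambda>F G H. (fcomp_r C F (fcomp_r C G H), fcomp_r C (fcomp_r C F G) H,
                          \<lambda>x\<in>c_obj C. c_id C (fst F (fst G (fst H x))))),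
      m_lu = (\<lambda>F. (fcomp_r C (\<lambda>x\<in>c_obj C. x, \<lambda>f\<in>mor C. f) F, F,
                   \<lambda>x\<in>c_obj C. c_id C (fst F x))),
      m_ru = (\<lambda>F. (fcomp_r C F (\<lambda>x\<in>c_obj C. x, \<lambda>f\<in>mor C. f), F,
                   \<lambda>x\<in>c_obj C. c_id C (fst F x))) \<rparr>)"

text \<open>Objects (sigma, x) with sigma a permutation of {1..n} and x an n-tuple
  (function on {1..n}); morphisms (sigma, f).  (x |> sigma)_k = x_(sigma k).\<close>

definition wreath :: "nat \<Rightarrow> ('o, 'm) mcat \<Rightarrow>
   ((nat \<Rightarrow> nat) \<times> (nat \<Rightarrow> 'o), (nat \<Rightarrow> nat) \<times> (nat \<Rightarrow> 'm)) mcat" where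
  "wreath n M =
    (let Ob = {(\<sigma>, x). \<sigma> permutes {1..n} \<and> x \<in> extensional {1..n} \<and>
                        (\<forall>k\<in>{1..n}. x k \<in> c_obj M)} in
    \<lparr> c_obj = Ob,
      c_hom = (\<lambda>(\<sigma>, x) (\<sigma>', x'). if (\<sigma>, x) \<in> Ob \<and> (\<sigma>', x') \<in> Ob \<and> \<sigma> = \<sigma>'
                 then {(\<sigma>, f) | f. f \<in> extensional {1..n} \<and>
                                   (\<forall>k\<in>{1..n}. f k \<in> c_hom M (x k) (x' k))}
                 else {}),
      c_comp = (\<lambda>(\<sigma>, g) (\<sigma>', f). (\<sigma>, \<lambda>k\<in>{1..n}. c_comp M (g k) (f k))),
      c_id = (\<lambda>(\<sigma>, x). (\<sigma>, \<lambda>k\<in>{1..n}. c_id M (x k))),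
      m_tens = (\<lambda>(\<sigma>, x) (\<sigma>', x'). (\<sigma> \<circ> \<sigma>', \<lambda>k\<in>{1..n}. m_tens M (x (\<sigma>' k)) (x' k))),
      m_tensm = (\<lambda>(\<sigma>, f) (\<sigma>', f'). (\<sigma> \<circ> \<sigma>', \<lambda>k\<in>{1..n}. m_tensm M (f (\<sigma>' k)) (f' k))),
      m_unit = (id, \<lambda>k\<in>{1..n}. m_unit M),
      m_assoc = (\<lambda>(\<sigma>, x) (\<sigma>', x') (\<sigma>'', x'').
                   (\<sigma> \<circ> \<sigma>' \<circ> \<sigma>'',
                    \<lambda>k\<in>{1..n}. m_assoc M (x (\<sigma>' (\<sigma>'' k))) (x' (\<sigma>'' k)) (x'' k))),
      m_lu = (\<lambda>(\<sigma>, x). (\<sigma>, \<lambda>k\<in>{1..n}. m_lu M (x k))),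
      m_ru = (\<lambda>(\<sigma>, x). (\<sigma>, \<lambda>k\<in>{1..n}. m_ru M (x k))) \<rparr>)"

definition prod_mcat :: "'i set \<Rightarrow> ('i \<Rightarrow> ('o, 'm) mcat) \<Rightarrow> ('i \<Rightarrow> 'o, 'i \<Rightarrow> 'm) mcat" where
  "prod_mcat I M =
    \<lparr> c_obj = (\<Pi>\<^sub>E i\<in>I. c_obj (M i)),
      c_hom = (\<lambda>x y. if x \<in> (\<Pi>\<^sub>E i\<in>I. c_obj (M i)) \<and> y \<in> (\<Pi>\<^sub>E i\<in>I. c_obj (M i))
                      then (\<Pi>\<^sub>E i\<in>I. c_hom (M i) (x i) (y i)) else {}),
      c_comp = (\<lambda>g f. \<lambda>i\<in>I. c_comp (M i) (g i) (f i)),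
      c_id = (\<lambda>x. \<lambda>i\<in>I. c_id (M i) (x i)),
      m_tens = (\<lambda>x y. \<lambda>i\<in>I. m_tens (M i) (x i) (y i)),
      m_tensm = (\<lambda>f g. \<lambda>i\<in>I. m_tensm (M i) (f i) (g i)),
      m_unit = (\<lambda>i\<in>I. m_unit (M i)),
      m_assoc = (\<lambda>x y z. \<lambda>i\<in>I. m_assoc (M i) (x i) (y i) (z i)),
      m_lu = (\<lambda>x. \<lambda>i\<in>I. m_lu (M i) (x i)),
      m_ru = (\<lambda>x. \<lambda>i\<in>I. m_ru (M i) (x i)) \<rparr>"

definition grp_cat :: "'g monoid \<Rightarrow> (unit, 'g) cat" where
  "grp_cat G = \<lparr> c_obj = {()}, c_hom = (\<lambda>_ _. carrier G),
                 c_comp = (\<lambda>g h. g \<otimes>\<^bsub>G\<^esub> h), c_id = (\<lambda>_. \<one>\<^bsub>G\<^esub>) \<rparr>"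

definition coprod_cat :: "'i set \<Rightarrow> ('i \<Rightarrow> nat) \<Rightarrow> ('i \<Rightarrow> 'g monoid) \<Rightarrow> ('i \<times> nat, 'i \<times> nat \<times> 'g) cat" where
  "coprod_cat I n G =
    (let Ob = {(i, k). i \<in> I \<and> k \<in> {1..n i}} in
    \<lparr> c_obj = Ob,
      c_hom = (\<lambda>(i, k) (j, l). if (i, k) \<in> Ob \<and> (i, k) = (j, l)
                 then {(i, k, g) | g. g \<in> carrier (G i)} else {}),
      c_comp = (\<lambda>(i, k, g) (j, l, h). (i, k, g \<otimes>\<^bsub>G i\<^esub> h)),
      c_id = (\<lambda>(i, k). (i, k, \<one>\<^bsub>G i\<^esub>)) \<rparr>)"

end

theory Submission
  imports Defs
begin


locale mlaws =
  fixes M :: "('o, 'm, 'a) mcat_scheme"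
  assumes unit_obj: "m_unit M \<in> c_obj M"
    and tens_obj: "\<And>x y. x \<in> c_obj M \<Longrightarrow> y \<in> c_obj M \<Longrightarrow> m_tens M x y \<in> c_obj M"
    and id_hom: "\<And>x. x \<in> c_obj M \<Longrightarrow> c_id M x \<in> c_hom M x x"
    and comp_hom: "\<And>x y z f g. x \<in> c_obj M \<Longrightarrow> y \<in> c_obj M \<Longrightarrow> z \<in> c_obj M \<Longrightarrow>
        f \<in> c_hom M x y \<Longrightarrow> g \<in> c_hom M y z \<Longrightarrow> c_comp M g f \<in> c_hom M x z"
    and id_left: "\<And>x y f. x \<in> c_obj M \<Longrightarrow> y \<in> c_obj M \<Longrightarrow> f \<in> c_hom M x y \<Longrightarrow>
        c_comp M (c_id M y) f = f"
    and id_right: "\<And>x y f. x \<in> c_obj M \<Longrightarrow> y \<in> c_obj M \<Longrightarrow> f \<in> c_hom M x y \<Longrightarrow>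
        c_comp M f (c_id M x) = f"
    and tensm_hom: "\<And>x x' y y' f g. x \<in> c_obj M \<Longrightarrow> x' \<in> c_obj M \<Longrightarrow> y \<in> c_obj M \<Longrightarrow> y' \<in> c_obj M \<Longrightarrow>
        f \<in> c_hom M x x' \<Longrightarrow> g \<in> c_hom M y y' \<Longrightarrow>
        m_tensm M f g \<in> c_hom M (m_tens M x y) (m_tens M x' y')"
    and tensm_id: "\<And>x y. x \<in> c_obj M \<Longrightarrow> y \<in> c_obj M \<Longrightarrow>
        m_tensm M (c_id M x) (c_id M y) = c_id M (m_tens M x y)"
    and assoc_hom: "\<And>x y z. x \<in> c_obj M \<Longrightarrow> y \<in> c_obj M \<Longrightarrow> z \<in> c_obj M \<Longrightarrow>
        m_assoc M x y z \<in> c_hom M (m_tens M x (m_tens M y z)) (m_tens M (m_tens M x y) z)"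
    and lu_hom: "\<And>x. x \<in> c_obj M \<Longrightarrow> m_lu M x \<in> c_hom M (m_tens M (m_unit M) x) x"
    and ru_hom: "\<And>x. x \<in> c_obj M \<Longrightarrow> m_ru M x \<in> c_hom M (m_tens M x (m_unit M)) x"

lemma strict_monoidal:
  fixes X :: "('o, 'm, 'a) mcat_scheme" and Y :: "('p, 'n, 'b) mcat_scheme"
  assumes X: "mlaws X" and H: "is_functor X Y H"
    and Ht: "\<And>x y. x \<in> c_obj X \<Longrightarrow> y \<in> c_obj X \<Longrightarrow> fst H (m_tens X x y) = m_tens Y (fst H x) (fst H y)"
    and Htm: "\<And>x x' y y' f g. x \<in> c_obj X \<Longrightarrow> x' \<in> c_obj X \<Longrightarrow> y \<in> c_obj X \<Longrightarrow> y' \<in> c_obj X \<Longrightarrow>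
        f \<in> c_hom X x x' \<Longrightarrow> g \<in> c_hom X y y' \<Longrightarrow>
        snd H (m_tensm X f g) = m_tensm Y (snd H f) (snd H g)"
    and Hu: "fst H (m_unit X) = m_unit Y"
    and Ha: "\<And>x y z. x \<in> c_obj X \<Longrightarrow> y \<in> c_obj X \<Longrightarrow> z \<in> c_obj X \<Longrightarrow>
        snd H (m_assoc X x y z) = m_assoc Y (fst H x) (fst H y) (fst H z)"
    and Hl: "\<And>x. x \<in> c_obj X \<Longrightarrow> snd H (m_lu X x) = m_lu Y (fst H x)"
    and Hr: "\<And>x. x \<in> c_obj X \<Longrightarrow> snd H (m_ru X x) = m_ru Y (fst H x)"
  shows "monoidal_functor X Y H (\<lambda>x y. c_id Y (fst H (m_tens X x y))) (c_id Y (m_unit Y))"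
proof -
  interpret mlaws X by (rule X)
  have Fo: "\<And>x. x \<in> c_obj X \<Longrightarrow> fst H x \<in> c_obj Y"
    and Fh: "\<And>x y f. x \<in> c_obj X \<Longrightarrow> y \<in> c_obj X \<Longrightarrow> f \<in> c_hom X x y \<Longrightarrow> snd H f \<in> c_hom Y (fst H x) (fst H y)"
    and Fc: "\<And>x y z f g. x \<in> c_obj X \<Longrightarrow> y \<in> c_obj X \<Longrightarrow> z \<in> c_obj X \<Longrightarrow> f \<in> c_hom X x y \<Longrightarrow> g \<in> c_hom X y z \<Longrightarrow>
        snd H (c_comp X g f) = c_comp Y (snd H g) (snd H f)"
    and Fi: "\<And>x. x \<in> c_obj X \<Longrightarrow> snd H (c_id X x) = c_id Y (fst H x)"
    using H unfolding is_functor_def by blast+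
  have idY: "\<And>x. x \<in> c_obj X \<Longrightarrow> c_id Y (fst H x) \<in> c_hom Y (fst H x) (fst H x)"
    by (metis Fh Fi id_hom)
  have idl: "\<And>x y f. x \<in> c_obj X \<Longrightarrow> y \<in> c_obj X \<Longrightarrow> f \<in> c_hom X x y \<Longrightarrow>
      c_comp Y (c_id Y (fst H y)) (snd H f) = snd H f"
    by (metis Fc Fi id_hom id_left)
  have idr: "\<And>x y f. x \<in> c_obj X \<Longrightarrow> y \<in> c_obj X \<Longrightarrow> f \<in> c_hom X x y \<Longrightarrow>
      c_comp Y (snd H f) (c_id Y (fst H x)) = snd H f"
    by (metis Fc Fi id_hom id_right)
  have tid: "\<And>x y. x \<in> c_obj X \<Longrightarrow> y \<in> c_obj X \<Longrightarrow>
      m_tensm Y (c_id Y (fst H x)) (c_id Y (fst H y)) = c_id Y (fst H (m_tens X x y))"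
    by (metis Fi Htm id_hom tens_obj tensm_id)
  have isoid: "\<And>x. x \<in> c_obj X \<Longrightarrow> is_iso_in Y (fst H x) (fst H x) (c_id Y (fst H x))"
  proof -
    fix x assume x: "x \<in> c_obj X"
    have "c_comp Y (c_id Y (fst H x)) (c_id Y (fst H x)) = c_id Y (fst H x)"
      using idl[OF x x id_hom[OF x]] Fi[OF x] by simp
    then show "is_iso_in Y (fst H x) (fst H x) (c_id Y (fst H x))"
      unfolding is_iso_in_def using idY[OF x] by blast
  qed
  show ?thesis
    unfolding monoidal_functor_def
  proof (intro conjI ballI)
    show "is_functor X Y H" by (rule H)
  next
    fix x y assume "x \<in> c_obj X" "y \<in> c_obj X"
    then show "is_iso_in Y (m_tens Y (fst H x) (fst H y)) (fst H (m_tens X x y)) (c_id Y (fst H (m_tens X x y)))"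
      using isoid[of "m_tens X x y"] Ht tens_obj by simp
  next
    fix x x' y y' f g assume a: "x \<in> c_obj X" "x' \<in> c_obj X" "y \<in> c_obj X" "y' \<in> c_obj X"
      "f \<in> c_hom X x x'" "g \<in> c_hom X y y'"
    then show "c_comp Y (c_id Y (fst H (m_tens X x' y'))) (m_tensm Y (snd H f) (snd H g)) =
           c_comp Y (snd H (m_tensm X f g)) (c_id Y (fst H (m_tens X x y)))"
      using idl[OF _ _ tensm_hom[OF a]] idr[OF _ _ tensm_hom[OF a]] Htm[OF a] tens_obj by simp
  next
    show "is_iso_in Y (m_unit Y) (fst H (m_unit X)) (c_id Y (m_unit Y))"
      using isoid[OF unit_obj] Hu by simp
  next
    fix x y z assume a: "x \<in> c_obj X" "y \<in> c_obj X" "z \<in> c_obj X"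
    have e1: "m_tensm Y (c_id Y (fst H x)) (c_id Y (fst H (m_tens X y z))) = c_id Y (fst H (m_tens X x (m_tens X y z)))"
      using tid a tens_obj by simp
    have e2: "m_tensm Y (c_id Y (fst H (m_tens X x y))) (c_id Y (fst H z)) = c_id Y (fst H (m_tens X (m_tens X x y) z))"
      using tid a tens_obj by simp
    have h: "m_assoc X x y z \<in> c_hom X (m_tens X x (m_tens X y z)) (m_tens X (m_tens X x y) z)"
      using assoc_hom a by simp
    have ob: "m_tens X x (m_tens X y z) \<in> c_obj X" "m_tens X (m_tens X x y) z \<in> c_obj X"
      using a tens_obj by auto
    show "c_comp Y (snd H (m_assoc X x y z))
          (c_comp Y (c_id Y (fst H (m_tens X x (m_tens X y z)))) (m_tensm Y (c_id Y (fst H x)) (c_id Y (fst H (m_tens X y z))))) =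
         c_comp Y (c_id Y (fst H (m_tens X (m_tens X x y) z)))
          (c_comp Y (m_tensm Y (c_id Y (fst H (m_tens X x y))) (c_id Y (fst H z))) (m_assoc Y (fst H x) (fst H y) (fst H z)))"
      unfolding e1 e2 using idl[OF ob h] idr[OF ob h] Ha[OF a] idl[OF ob(1) ob(1) id_hom[OF ob(1)]] Fi[OF ob(1)]
      by (metis Fi idl id_hom ob(2))
  next
    fix x assume a: "x \<in> c_obj X"
    have e1: "m_tensm Y (c_id Y (m_unit Y)) (c_id Y (fst H x)) = c_id Y (fst H (m_tens X (m_unit X) x))"
      using tid[OF unit_obj a] Hu by simp
    have ob: "m_tens X (m_unit X) x \<in> c_obj X" using a tens_obj unit_obj by auto
    have h: "m_lu X x \<in> c_hom X (m_tens X (m_unit X) x) x" using lu_hom a by simp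
    show "c_comp Y (snd H (m_lu X x)) (c_comp Y (c_id Y (fst H (m_tens X (m_unit X) x))) (m_tensm Y (c_id Y (m_unit Y)) (c_id Y (fst H x)))) =
         m_lu Y (fst H x)"
      unfolding e1 by (metis Fi id_hom idl idr[OF ob a h] Hl[OF a] ob)
  next
    fix x assume a: "x \<in> c_obj X"
    have e1: "m_tensm Y (c_id Y (fst H x)) (c_id Y (m_unit Y)) = c_id Y (fst H (m_tens X x (m_unit X)))"
      using tid[OF a unit_obj] Hu by simp
    have ob: "m_tens X x (m_unit X) \<in> c_obj X" using a tens_obj unit_obj by auto
    have h: "m_ru X x \<in> c_hom X (m_tens X x (m_unit X)) x" using ru_hom a by simp
    show "c_comp Y (snd H (m_ru X x)) (c_comp Y (c_id Y (fst H (m_tens X x (m_unit X)))) (m_tensm Y (c_id Y (fst H x)) (c_id Y (m_unit Y)))) =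
         m_ru Y (fst H x)"
      unfolding e1 by (metis Fi id_hom idl idr[OF ob a h] Hr[OF a] ob)
  qed
qed

lemma mor_iff: "f \<in> mor C \<longleftrightarrow> (\<exists>x\<in>c_obj C. \<exists>y\<in>c_obj C. f \<in> c_hom C x y)"
  unfolding mor_def by blast

lemma strict_iso:
  fixes A :: "('o, 'm, 'a) mcat_scheme" and B :: "('p, 'n, 'b) mcat_scheme"
    and F :: "('o \<Rightarrow> 'p) \<times> ('m \<Rightarrow> 'n)" and K :: "('p \<Rightarrow> 'o) \<times> ('n \<Rightarrow> 'm)"
  assumes B: "mlaws B"
    and Fo: "\<And>x. x \<in> c_obj A \<Longrightarrow> fst F x \<in> c_obj B"
    and Fh: "\<And>x y f. x \<in> c_obj A \<Longrightarrow> y \<in> c_obj A \<Longrightarrow> f \<in> c_hom A x y \<Longrightarrow> snd F f \<in> c_hom B (fst F x) (fst F y)"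
    and Ko: "\<And>x. x \<in> c_obj B \<Longrightarrow> fst K x \<in> c_obj A"
    and Kh: "\<And>x y f. x \<in> c_obj B \<Longrightarrow> y \<in> c_obj B \<Longrightarrow> f \<in> c_hom B x y \<Longrightarrow> snd K f \<in> c_hom A (fst K x) (fst K y)"
    and KFo: "\<And>x. x \<in> c_obj A \<Longrightarrow> fst K (fst F x) = x"
    and KFm: "\<And>f. f \<in> mor A \<Longrightarrow> snd K (snd F f) = f"
    and FKo: "\<And>x. x \<in> c_obj B \<Longrightarrow> fst F (fst K x) = x"
    and FKm: "\<And>f. f \<in> mor B \<Longrightarrow> snd F (snd K f) = f"
    and Kc: "\<And>x y z f g. x \<in> c_obj B \<Longrightarrow> y \<in> c_obj B \<Longrightarrow> z \<in> c_obj B \<Longrightarrow> f \<in> c_hom B x y \<Longrightarrow> g \<in> c_hom B y z \<Longrightarrow>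
        snd K (c_comp B g f) = c_comp A (snd K g) (snd K f)"
    and Ki: "\<And>x. x \<in> c_obj B \<Longrightarrow> snd K (c_id B x) = c_id A (fst K x)"
    and Kt: "\<And>x y. x \<in> c_obj B \<Longrightarrow> y \<in> c_obj B \<Longrightarrow> fst K (m_tens B x y) = m_tens A (fst K x) (fst K y)"
    and Ktm: "\<And>x x' y y' f g. x \<in> c_obj B \<Longrightarrow> x' \<in> c_obj B \<Longrightarrow> y \<in> c_obj B \<Longrightarrow> y' \<in> c_obj B \<Longrightarrow>
        f \<in> c_hom B x x' \<Longrightarrow> g \<in> c_hom B y y' \<Longrightarrow>
        snd K (m_tensm B f g) = m_tensm A (snd K f) (snd K g)"
    and Ku: "fst K (m_unit B) = m_unit A"
    and Ka: "\<And>x y z. x \<in> c_obj B \<Longrightarrow> y \<in> c_obj B \<Longrightarrow> z \<in> c_obj B \<Longrightarrow>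
        snd K (m_assoc B x y z) = m_assoc A (fst K x) (fst K y) (fst K z)"
    and Kl: "\<And>x. x \<in> c_obj B \<Longrightarrow> snd K (m_lu B x) = m_lu A (fst K x)"
    and Kr: "\<And>x. x \<in> c_obj B \<Longrightarrow> snd K (m_ru B x) = m_ru A (fst K x)"
  shows "two_group_iso A B"
proof -
  interpret b: mlaws B by (rule B)
  have Kfun: "is_functor B A K"
    unfolding is_functor_def using Ko Kh Kc Ki by blast
  have morA: "\<And>x y f. x \<in> c_obj A \<Longrightarrow> y \<in> c_obj A \<Longrightarrow> f \<in> c_hom A x y \<Longrightarrow> f \<in> mor A"
    unfolding mor_iff by blast
  have morB: "\<And>x y f. x \<in> c_obj B \<Longrightarrow> y \<in> c_obj B \<Longrightarrow> f \<in> c_hom B x y \<Longrightarrow> f \<in> mor B"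
    unfolding mor_iff by blast
  have KF: "\<And>x y f. x \<in> c_obj A \<Longrightarrow> y \<in> c_obj A \<Longrightarrow> f \<in> c_hom A x y \<Longrightarrow> snd K (snd F f) = f"
    using KFm morA by blast
  have FK: "\<And>x y f. x \<in> c_obj B \<Longrightarrow> y \<in> c_obj B \<Longrightarrow> f \<in> c_hom B x y \<Longrightarrow> snd F (snd K f) = f"
    using FKm morB by blast
  have Fc: "\<And>x y z f g. x \<in> c_obj A \<Longrightarrow> y \<in> c_obj A \<Longrightarrow> z \<in> c_obj A \<Longrightarrow> f \<in> c_hom A x y \<Longrightarrow> g \<in> c_hom A y z \<Longrightarrow>
        snd F (c_comp A g f) = c_comp B (snd F g) (snd F f)"
  proof -
    fix x y z f g assume a: "x \<in> c_obj A" "y \<in> c_obj A" "z \<in> c_obj A" "f \<in> c_hom A x y" "g \<in> c_hom A y z"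
    have "c_comp A g f = snd K (c_comp B (snd F g) (snd F f))"
      using Kc[OF Fo[OF a(1)] Fo[OF a(2)] Fo[OF a(3)] Fh[OF a(1,2,4)] Fh[OF a(2,3,5)]] KF a by simp
    then show "snd F (c_comp A g f) = c_comp B (snd F g) (snd F f)"
      using FK[OF Fo[OF a(1)] Fo[OF a(3)] b.comp_hom[OF Fo[OF a(1)] Fo[OF a(2)] Fo[OF a(3)] Fh[OF a(1,2,4)] Fh[OF a(2,3,5)]]]
      by simp
  qed
  have Fi: "\<And>x. x \<in> c_obj A \<Longrightarrow> snd F (c_id A x) = c_id B (fst F x)"
  proof -
    fix x assume a: "x \<in> c_obj A"
    have "c_id A x = snd K (c_id B (fst F x))" using Ki[OF Fo[OF a]] KFo[OF a] by simp
    then show "snd F (c_id A x) = c_id B (fst F x)"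
      using FK[OF Fo[OF a] Fo[OF a] b.id_hom[OF Fo[OF a]]] by simp
  qed
  have Ffun: "is_functor A B F"
    unfolding is_functor_def using Fo Fh Fc Fi by blast
  have Ft: "\<And>x y. x \<in> c_obj A \<Longrightarrow> y \<in> c_obj A \<Longrightarrow> fst F (m_tens A x y) = m_tens B (fst F x) (fst F y)"
  proof -
    fix x y assume a: "x \<in> c_obj A" "y \<in> c_obj A"
    have "m_tens A x y = fst K (m_tens B (fst F x) (fst F y))" using Kt[OF Fo[OF a(1)] Fo[OF a(2)]] KFo a by simp
    then show "fst F (m_tens A x y) = m_tens B (fst F x) (fst F y)"
      using FKo[OF b.tens_obj[OF Fo[OF a(1)] Fo[OF a(2)]]] by simp
  qed
  have Ftm: "\<And>x x' y y' f g. x \<in> c_obj A \<Longrightarrow> x' \<in> c_obj A \<Longrightarrow> y \<in> c_obj A \<Longrightarrow> y' \<in> c_obj A \<Longrightarrow>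
        f \<in> c_hom A x x' \<Longrightarrow> g \<in> c_hom A y y' \<Longrightarrow>
        snd F (m_tensm A f g) = m_tensm B (snd F f) (snd F g)"
  proof -
    fix x x' y y' f g assume a: "x \<in> c_obj A" "x' \<in> c_obj A" "y \<in> c_obj A" "y' \<in> c_obj A"
        "f \<in> c_hom A x x'" "g \<in> c_hom A y y'"
    have "m_tensm A f g = snd K (m_tensm B (snd F f) (snd F g))"
      using Ktm[OF Fo[OF a(1)] Fo[OF a(2)] Fo[OF a(3)] Fo[OF a(4)] Fh[OF a(1,2,5)] Fh[OF a(3,4,6)]] KF a by simp
    then show "snd F (m_tensm A f g) = m_tensm B (snd F f) (snd F g)"
      using FK[OF b.tens_obj[OF Fo[OF a(1)] Fo[OF a(3)]] b.tens_obj[OF Fo[OF a(2)] Fo[OF a(4)]]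
            b.tensm_hom[OF Fo[OF a(1)] Fo[OF a(2)] Fo[OF a(3)] Fo[OF a(4)] Fh[OF a(1,2,5)] Fh[OF a(3,4,6)]]]
      by simp
  qed
  have Fu: "fst F (m_unit A) = m_unit B"
    using FKo[OF b.unit_obj] Ku by simp
  have Fa: "\<And>x y z. x \<in> c_obj A \<Longrightarrow> y \<in> c_obj A \<Longrightarrow> z \<in> c_obj A \<Longrightarrow>
        snd F (m_assoc A x y z) = m_assoc B (fst F x) (fst F y) (fst F z)"
  proof -
    fix x y z assume a: "x \<in> c_obj A" "y \<in> c_obj A" "z \<in> c_obj A"
    have "m_assoc A x y z = snd K (m_assoc B (fst F x) (fst F y) (fst F z))"
      using Ka[OF Fo[OF a(1)] Fo[OF a(2)] Fo[OF a(3)]] KFo a by simp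
    then show "snd F (m_assoc A x y z) = m_assoc B (fst F x) (fst F y) (fst F z)"
      using FK[OF b.tens_obj[OF Fo[OF a(1)] b.tens_obj[OF Fo[OF a(2)] Fo[OF a(3)]]]
                  b.tens_obj[OF b.tens_obj[OF Fo[OF a(1)] Fo[OF a(2)]] Fo[OF a(3)]]
                  b.assoc_hom[OF Fo[OF a(1)] Fo[OF a(2)] Fo[OF a(3)]]] by simp
  qed
  have Fl: "\<And>x. x \<in> c_obj A \<Longrightarrow> snd F (m_lu A x) = m_lu B (fst F x)"
  proof -
    fix x assume a: "x \<in> c_obj A"
    have "m_lu A x = snd K (m_lu B (fst F x))" using Kl[OF Fo[OF a]] KFo a by simp
    then show "snd F (m_lu A x) = m_lu B (fst F x)"
      using FK[OF b.tens_obj[OF b.unit_obj Fo[OF a]] Fo[OF a] b.lu_hom[OF Fo[OF a]]] by simp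
  qed
  have Fr: "\<And>x. x \<in> c_obj A \<Longrightarrow> snd F (m_ru A x) = m_ru B (fst F x)"
  proof -
    fix x assume a: "x \<in> c_obj A"
    have "m_ru A x = snd K (m_ru B (fst F x))" using Kr[OF Fo[OF a]] KFo a by simp
    then show "snd F (m_ru A x) = m_ru B (fst F x)"
      using FK[OF b.tens_obj[OF Fo[OF a] b.unit_obj] Fo[OF a] b.ru_hom[OF Fo[OF a]]] by simp
  qed
  \<comment> \<open>laws of A by transport\<close>
  have A: "mlaws A"
  proof
    show "m_unit A \<in> c_obj A" using Ku Ko[OF b.unit_obj] by simp
  next
    fix x y assume a: "x \<in> c_obj A" "y \<in> c_obj A"
    then show "m_tens A x y \<in> c_obj A"
      using Ko[OF b.tens_obj[OF Fo[OF a(1)] Fo[OF a(2)]]] Kt[OF Fo[OF a(1)] Fo[OF a(2)]] KFo by simp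
  next
    fix x assume a: "x \<in> c_obj A"
    then show "c_id A x \<in> c_hom A x x"
      using Kh[OF Fo[OF a] Fo[OF a] b.id_hom[OF Fo[OF a]]] Ki[OF Fo[OF a]] KFo by simp
  next
    fix x y z f g assume a: "x \<in> c_obj A" "y \<in> c_obj A" "z \<in> c_obj A" "f \<in> c_hom A x y" "g \<in> c_hom A y z"
    have "c_comp A g f = snd K (c_comp B (snd F g) (snd F f))"
      using Kc[OF Fo[OF a(1)] Fo[OF a(2)] Fo[OF a(3)] Fh[OF a(1,2,4)] Fh[OF a(2,3,5)]] KF a by simp
    then show "c_comp A g f \<in> c_hom A x z"
      using Kh[OF Fo[OF a(1)] Fo[OF a(3)] b.comp_hom[OF Fo[OF a(1)] Fo[OF a(2)] Fo[OF a(3)] Fh[OF a(1,2,4)] Fh[OF a(2,3,5)]]] KFo a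
      by simp
  next
    fix x y f assume a: "x \<in> c_obj A" "y \<in> c_obj A" "f \<in> c_hom A x y"
    have "c_comp A (c_id A y) f = snd K (c_comp B (c_id B (fst F y)) (snd F f))"
      using Kc[OF Fo[OF a(1)] Fo[OF a(2)] Fo[OF a(2)] Fh[OF a] b.id_hom[OF Fo[OF a(2)]]] Ki[OF Fo[OF a(2)]] KFo KF a by simp
    then show "c_comp A (c_id A y) f = f" using b.id_left[OF Fo[OF a(1)] Fo[OF a(2)] Fh[OF a]] KF[OF a] by simp
  next
    fix x y f assume a: "x \<in> c_obj A" "y \<in> c_obj A" "f \<in> c_hom A x y"
    have "c_comp A f (c_id A x) = snd K (c_comp B (snd F f) (c_id B (fst F x)))"
      using Kc[OF Fo[OF a(1)] Fo[OF a(1)] Fo[OF a(2)] b.id_hom[OF Fo[OF a(1)]] Fh[OF a]] Ki[OF Fo[OF a(1)]] KFo KF a by simp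
    then show "c_comp A f (c_id A x) = f" using b.id_right[OF Fo[OF a(1)] Fo[OF a(2)] Fh[OF a]] KF[OF a] by simp
  next
    fix x x' y y' f g assume a: "x \<in> c_obj A" "x' \<in> c_obj A" "y \<in> c_obj A" "y' \<in> c_obj A"
        "f \<in> c_hom A x x'" "g \<in> c_hom A y y'"
    have "m_tensm A f g = snd K (m_tensm B (snd F f) (snd F g))"
      using Ktm[OF Fo[OF a(1)] Fo[OF a(2)] Fo[OF a(3)] Fo[OF a(4)] Fh[OF a(1,2,5)] Fh[OF a(3,4,6)]] KF a by simp
    moreover have "snd K (m_tensm B (snd F f) (snd F g)) \<in> c_hom A (fst K (m_tens B (fst F x) (fst F y))) (fst K (m_tens B (fst F x') (fst F y')))"
      using Kh[OF b.tens_obj[OF Fo[OF a(1)] Fo[OF a(3)]] b.tens_obj[OF Fo[OF a(2)] Fo[OF a(4)]]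
            b.tensm_hom[OF Fo[OF a(1)] Fo[OF a(2)] Fo[OF a(3)] Fo[OF a(4)] Fh[OF a(1,2,5)] Fh[OF a(3,4,6)]]] .
    ultimately show "m_tensm A f g \<in> c_hom A (m_tens A x y) (m_tens A x' y')"
      using Kt Fo KFo a by simp
  next
    fix x y assume a: "x \<in> c_obj A" "y \<in> c_obj A"
    have "m_tensm A (c_id A x) (c_id A y) = snd K (m_tensm B (c_id B (fst F x)) (c_id B (fst F y)))"
      using Ktm[OF Fo[OF a(1)] Fo[OF a(1)] Fo[OF a(2)] Fo[OF a(2)] b.id_hom[OF Fo[OF a(1)]] b.id_hom[OF Fo[OF a(2)]]]
        Ki Fo KFo a by simp
    also have "\<dots> = c_id A (m_tens A x y)"
      using b.tensm_id[OF Fo[OF a(1)] Fo[OF a(2)]] Ki[OF b.tens_obj[OF Fo[OF a(1)] Fo[OF a(2)]]] Kt Fo KFo a by simp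
    finally show "m_tensm A (c_id A x) (c_id A y) = c_id A (m_tens A x y)" .
  next
    fix x y z assume a: "x \<in> c_obj A" "y \<in> c_obj A" "z \<in> c_obj A"
    show "m_assoc A x y z \<in> c_hom A (m_tens A x (m_tens A y z)) (m_tens A (m_tens A x y) z)"
      using Kh[OF b.tens_obj[OF Fo[OF a(1)] b.tens_obj[OF Fo[OF a(2)] Fo[OF a(3)]]]
                  b.tens_obj[OF b.tens_obj[OF Fo[OF a(1)] Fo[OF a(2)]] Fo[OF a(3)]]
                  b.assoc_hom[OF Fo[OF a(1)] Fo[OF a(2)] Fo[OF a(3)]]]
        Ka[OF Fo[OF a(1)] Fo[OF a(2)] Fo[OF a(3)]] Kt b.tens_obj Fo KFo a by simp
  next
    fix x assume a: "x \<in> c_obj A"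
    show "m_lu A x \<in> c_hom A (m_tens A (m_unit A) x) x"
      using Kh[OF b.tens_obj[OF b.unit_obj Fo[OF a]] Fo[OF a] b.lu_hom[OF Fo[OF a]]]
        Kl[OF Fo[OF a]] Kt[OF b.unit_obj Fo[OF a]] Ku KFo a by simp
  next
    fix x assume a: "x \<in> c_obj A"
    show "m_ru A x \<in> c_hom A (m_tens A x (m_unit A)) x"
      using Kh[OF b.tens_obj[OF Fo[OF a] b.unit_obj] Fo[OF a] b.ru_hom[OF Fo[OF a]]]
        Kr[OF Fo[OF a]] Kt[OF Fo[OF a] b.unit_obj] Ku KFo a by simp
  qed
  have m1: "monoidal_functor A B F (\<lambda>x y. c_id B (fst F (m_tens A x y))) (c_id B (m_unit B))"
    by (rule strict_monoidal[OF A Ffun Ft Ftm Fu Fa Fl Fr])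
  have m2: "monoidal_functor B A K (\<lambda>x y. c_id A (fst K (m_tens B x y))) (c_id A (m_unit A))"
    by (rule strict_monoidal[OF B Kfun Kt Ktm Ku Ka Kl Kr])
  show ?thesis unfolding two_group_iso_def
    using m1 m2 KFo KFm FKo FKm by blast
qed



lemma restrict_unit[simp]: "restrict f ({()}::unit set) = f"
  by (rule ext) (simp add: restrict_def)

lemma Sym_obj: "c_obj (Sym_2grp C) = {F. is_equivalence C C F \<and> ext_functor C F}"
  by (simp add: Sym_2grp_def Let_def)
lemma Sym_hom: "c_hom (Sym_2grp C) F F' = (if F \<in> c_obj (Sym_2grp C) \<and> F' \<in> c_obj (Sym_2grp C)
      then {(F, F', \<alpha>) | \<alpha>. nat_iso C C F F' \<alpha> \<and> \<alpha> \<in> extensional (c_obj C)} else {})"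
  by (simp add: Sym_2grp_def Let_def)
lemma Sym_comp: "c_comp (Sym_2grp C) = (\<lambda>(G, H, \<beta>) (F, G', \<alpha>). (F, H, \<lambda>x\<in>c_obj C. c_comp C (\<beta> x) (\<alpha> x)))"
  by (simp add: Sym_2grp_def Let_def)
lemma Sym_id: "c_id (Sym_2grp C) = (\<lambda>F. (F, F, \<lambda>x\<in>c_obj C. c_id C (fst F x)))"
  by (simp add: Sym_2grp_def Let_def)
lemma Sym_tens: "m_tens (Sym_2grp C) = fcomp_r C"
  by (simp add: Sym_2grp_def Let_def)
lemma Sym_tensm: "m_tensm (Sym_2grp C) = (\<lambda>(F, G, \<alpha>) (F', G', \<alpha>').
                   (fcomp_r C F F', fcomp_r C G G',
                    \<lambda>x\<in>c_obj C. c_comp C (\<alpha> (fst G' x)) (snd F (\<alpha>' x))))"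
  by (simp add: Sym_2grp_def Let_def)
lemma Sym_unit: "m_unit (Sym_2grp C) = (\<lambda>x\<in>c_obj C. x, \<lambda>f\<in>mor C. f)"
  by (simp add: Sym_2grp_def Let_def)
lemma Sym_assoc: "m_assoc (Sym_2grp C) = (\<lambda>F G H. (fcomp_r C F (fcomp_r C G H), fcomp_r C (fcomp_r C F G) H,
                          \<lambda>x\<in>c_obj C. c_id C (fst F (fst G (fst H x)))))"
  by (simp add: Sym_2grp_def Let_def)
lemma Sym_lu: "m_lu (Sym_2grp C) = (\<lambda>F. (fcomp_r C (\<lambda>x\<in>c_obj C. x, \<lambda>f\<in>mor C. f) F, F,
                   \<lambda>x\<in>c_obj C. c_id C (fst F x)))"
  by (simp add: Sym_2grp_def Let_def)
lemma Sym_ru: "m_ru (Sym_2grp C) = (\<lambda>F. (fcomp_r C F (\<lambda>x\<in>c_obj C. x, \<lambda>f\<in>mor C. f), F,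
                   \<lambda>x\<in>c_obj C. c_id C (fst F x)))"
  by (simp add: Sym_2grp_def Let_def)

lemma iso_equiv:
  assumes F: "is_functor C C F" and Q: "is_functor C C Q"
    and QFo: "\<And>x. x \<in> c_obj C \<Longrightarrow> fst Q (fst F x) = x"
    and QFm: "\<And>f. f \<in> mor C \<Longrightarrow> snd Q (snd F f) = f"
    and FQo: "\<And>x. x \<in> c_obj C \<Longrightarrow> fst F (fst Q x) = x"
    and FQm: "\<And>f. f \<in> mor C \<Longrightarrow> snd F (snd Q f) = f"
    and idh: "\<And>x. x \<in> c_obj C \<Longrightarrow> c_id C x \<in> c_hom C x x"
    and idl: "\<And>x y f. x \<in> c_obj C \<Longrightarrow> y \<in> c_obj C \<Longrightarrow> f \<in> c_hom C x y \<Longrightarrow> c_comp C (c_id C y) f = f"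
    and idr: "\<And>x y f. x \<in> c_obj C \<Longrightarrow> y \<in> c_obj C \<Longrightarrow> f \<in> c_hom C x y \<Longrightarrow> c_comp C f (c_id C x) = f"
  shows "is_equivalence C C F"
proof -
  have mor: "\<And>x y f. x \<in> c_obj C \<Longrightarrow> y \<in> c_obj C \<Longrightarrow> f \<in> c_hom C x y \<Longrightarrow> f \<in> mor C"
    unfolding mor_iff by blast
  have isoid: "\<And>x. x \<in> c_obj C \<Longrightarrow> is_iso_in C x x (c_id C x)"
    unfolding is_iso_in_def using idh idl by metis
  have "nat_iso C C (id, id) (fcomp Q F) (c_id C)"
    unfolding nat_iso_def nat_trans_def fcomp_def
    using idh idl idr QFo QFm mor isoid by auto
  moreover have "nat_iso C C (fcomp F Q) (id, id) (c_id C)"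
    unfolding nat_iso_def nat_trans_def fcomp_def
    using idh idl idr FQo FQm mor isoid by auto
  ultimately show ?thesis unfolding is_equivalence_def using F Q by blast
qed

definition aut :: "'g monoid \<Rightarrow> ('g \<Rightarrow> 'g) \<Rightarrow> bool" where
  "aut H \<phi> \<longleftrightarrow> \<phi> \<in> hom H H \<and> bij_betw \<phi> (carrier H) (carrier H) \<and> \<phi> \<in> extensional (carrier H)"

lemma grp_obj[simp]: "c_obj (grp_cat H) = {()}" by (simp add: grp_cat_def)
lemma grp_hom[simp]: "c_hom (grp_cat H) x y = carrier H" by (simp add: grp_cat_def)
lemma grp_comp[simp]: "c_comp (grp_cat H) g h = g \<otimes>\<^bsub>H\<^esub> h" by (simp add: grp_cat_def)
lemma grp_id[simp]: "c_id (grp_cat H) x = \<one>\<^bsub>H\<^esub>" by (simp add: grp_cat_def)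
lemma grp_mor[simp]: "mor (grp_cat H) = carrier H" by (simp add: mor_def)

lemma grp_functor: "is_functor (grp_cat H) (grp_cat H) F \<longleftrightarrow>
   (\<forall>f\<in>carrier H. snd F f \<in> carrier H) \<and> (\<forall>f\<in>carrier H. \<forall>g\<in>carrier H. snd F (g \<otimes>\<^bsub>H\<^esub> f) = snd F g \<otimes>\<^bsub>H\<^esub> snd F f)
   \<and> snd F \<one>\<^bsub>H\<^esub> = \<one>\<^bsub>H\<^esub>"
  unfolding is_functor_def by auto

lemma symg_obj:
  fixes H :: "'g monoid" (structure)
  assumes H: "group H"
  shows "F \<in> c_obj (Sym_2grp (grp_cat H)) \<longleftrightarrow> aut H (snd F)"
proof
  interpret group H by (rule H)
  assume "F \<in> c_obj (Sym_2grp (grp_cat H))"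
  then have eq: "is_equivalence (grp_cat H) (grp_cat H) F" and ex: "ext_functor (grp_cat H) F"
    by (auto simp: Sym_obj)
  then obtain Q \<eta> \<epsilon> where fF: "is_functor (grp_cat H) (grp_cat H) F" and fQ: "is_functor (grp_cat H) (grp_cat H) Q"
    and \<eta>: "nat_iso (grp_cat H) (grp_cat H) (id, id) (fcomp Q F) \<eta>"
    and \<epsilon>: "nat_iso (grp_cat H) (grp_cat H) (fcomp F Q) (id, id) \<epsilon>"
    unfolding is_equivalence_def by blast
  let ?\<phi> = "snd F" and ?\<psi> = "snd Q"
  have \<phi>c: "\<And>f. f \<in> carrier H \<Longrightarrow> ?\<phi> f \<in> carrier H" and \<phi>m: "\<And>f g. f \<in> carrier H \<Longrightarrow> g \<in> carrier H \<Longrightarrow> ?\<phi> (g \<otimes> f) = ?\<phi> g \<otimes> ?\<phi> f"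
    using fF unfolding grp_functor by auto
  have \<psi>c: "\<And>f. f \<in> carrier H \<Longrightarrow> ?\<psi> f \<in> carrier H"
    using fQ unfolding grp_functor by auto
  have a: "\<eta> () \<in> carrier H" and an: "\<And>f. f \<in> carrier H \<Longrightarrow> \<eta> () \<otimes> f = ?\<psi> (?\<phi> f) \<otimes> \<eta> ()"
    using \<eta> unfolding nat_iso_def nat_trans_def fcomp_def by auto
  have b: "\<epsilon> () \<in> carrier H" and bn: "\<And>f. f \<in> carrier H \<Longrightarrow> \<epsilon> () \<otimes> ?\<phi> (?\<psi> f) = f \<otimes> \<epsilon> ()"
    using \<epsilon> unfolding nat_iso_def nat_trans_def fcomp_def by auto
  have hom: "?\<phi> \<in> hom H H" unfolding hom_def using \<phi>c \<phi>m by auto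
  have inj: "inj_on ?\<phi> (carrier H)"
  proof (rule inj_onI)
    fix f g assume f: "f \<in> carrier H" and g: "g \<in> carrier H" and e: "?\<phi> f = ?\<phi> g"
    have "\<eta> () \<otimes> f = \<eta> () \<otimes> g" using an[OF f] an[OF g] e by simp
    then show "f = g" using f g a by simp
  qed
  have surj: "?\<phi> ` carrier H = carrier H"
  proof
    show "?\<phi> ` carrier H \<subseteq> carrier H" using \<phi>c by auto
  next
    show "carrier H \<subseteq> ?\<phi> ` carrier H"
    proof
      fix h assume h: "h \<in> carrier H"
      let ?h' = "\<epsilon> () \<otimes> h \<otimes> inv (\<epsilon> ())"
      have h': "?h' \<in> carrier H" using h b by simp
      have "\<epsilon> () \<otimes> ?\<phi> (?\<psi> ?h') = ?h' \<otimes> \<epsilon> ()" by (rule bn[OF h'])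
      also have "\<dots> = \<epsilon> () \<otimes> h" using h b by (simp add: m_assoc)
      finally have "?\<phi> (?\<psi> ?h') = h" using h b \<phi>c \<psi>c h' by simp
      then show "h \<in> ?\<phi> ` carrier H" using \<psi>c[OF h'] by (metis image_eqI)
    qed
  qed
  have "?\<phi> \<in> extensional (carrier H)" using ex unfolding ext_functor_def by simp
  then show "aut H (snd F)" unfolding aut_def bij_betw_def using hom inj surj by blast
next
  interpret group H by (rule H)
  assume A: "aut H (snd F)"
  let ?\<phi> = "snd F"
  have hom: "?\<phi> \<in> hom H H" and bij: "bij_betw ?\<phi> (carrier H) (carrier H)" and ex: "?\<phi> \<in> extensional (carrier H)"
    using A unfolding aut_def by auto
  have iso: "?\<phi> \<in> iso H H" using hom bij by (simp add: iso_def)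
  let ?\<psi> = "inv_into (carrier H) ?\<phi>"
  have iso': "?\<psi> \<in> iso H H" by (rule iso_set_sym[OF iso])
  have fF: "is_functor (grp_cat H) (grp_cat H) F"
    unfolding grp_functor using hom by (auto simp: hom_def hom_one[OF hom H H])
  have fQ: "is_functor (grp_cat H) (grp_cat H) (fst F, ?\<psi>)"
    unfolding grp_functor using iso' by (auto simp: iso_def hom_def hom_one[of _ H H] H)
  have "is_equivalence (grp_cat H) (grp_cat H) F"
  proof (rule iso_equiv[OF fF fQ])
    show "\<And>x. x \<in> c_obj (grp_cat H) \<Longrightarrow> fst (fst F, ?\<psi>) (fst F x) = x" by simp
    show "\<And>x. x \<in> c_obj (grp_cat H) \<Longrightarrow> fst F (fst (fst F, ?\<psi>) x) = x" by simp
    show "\<And>f. f \<in> mor (grp_cat H) \<Longrightarrow> snd (fst F, ?\<psi>) (snd F f) = f"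
      using bij by (simp add: bij_betw_inv_into_left)
    show "\<And>f. f \<in> mor (grp_cat H) \<Longrightarrow> snd F (snd (fst F, ?\<psi>) f) = f"
      using bij by (simp add: bij_betw_inv_into_right)
  qed auto
  moreover have "ext_functor (grp_cat H) F"
    unfolding ext_functor_def using ex by (simp add: extensional_def)
  ultimately show "F \<in> c_obj (Sym_2grp (grp_cat H))" by (simp add: Sym_obj)
qed

lemma symg_hom:
  fixes H :: "'g monoid" (structure)
  assumes H: "group H" and x: "x \<in> c_obj (Sym_2grp (grp_cat H))" and x': "x' \<in> c_obj (Sym_2grp (grp_cat H))"
  shows "m \<in> c_hom (Sym_2grp (grp_cat H)) x x' \<longleftrightarrow>
    (\<exists>\<alpha>. m = (x, x', \<alpha>) \<and> \<alpha> () \<in> carrier H \<and> (\<forall>g\<in>carrier H. \<alpha> () \<otimes>\<^bsub>H\<^esub> snd x g = snd x' g \<otimes>\<^bsub>H\<^esub> \<alpha> ()))"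
proof -
  interpret group H by (rule H)
  have "nat_iso (grp_cat H) (grp_cat H) x x' \<alpha> \<longleftrightarrow> \<alpha> () \<in> carrier H \<and> (\<forall>g\<in>carrier H. \<alpha> () \<otimes> snd x g = snd x' g \<otimes> \<alpha> ())" for \<alpha>
    unfolding nat_iso_def nat_trans_def is_iso_in_def
    by (auto intro!: bexI[of _ "inv (\<alpha> ())"])
  moreover have "\<alpha> \<in> extensional (c_obj (grp_cat H))" for \<alpha> :: "unit \<Rightarrow> 'a"
    by (simp add: extensional_def)
  ultimately show ?thesis using x x' by (auto simp: Sym_hom)
qed

lemma symg_homI:
  fixes H :: "'g monoid" (structure)
  assumes H: "group H" and x: "x \<in> c_obj (Sym_2grp (grp_cat H))" and x': "x' \<in> c_obj (Sym_2grp (grp_cat H))"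
    and "\<alpha> () \<in> carrier H" and "\<And>g. g \<in> carrier H \<Longrightarrow> \<alpha> () \<otimes> snd x g = snd x' g \<otimes> \<alpha> ()"
  shows "(x, x', \<alpha>) \<in> c_hom (Sym_2grp (grp_cat H)) x x'"
  apply (subst symg_hom[OF H x x'])
  apply (rule exI[of _ \<alpha>])
  using assms by simp

lemma aut_id: assumes "group H" shows "aut H (\<lambda>f\<in>carrier H. f)"
proof -
  interpret group H by fact
  show ?thesis unfolding aut_def hom_def bij_betw_def inj_on_def by auto
qed

lemma aut_comp: assumes "group H" "aut H \<phi>" "aut H \<psi>" shows "aut H (\<lambda>f\<in>carrier H. \<phi> (\<psi> f))"
proof -
  have h: "\<phi> \<in> hom H H" "\<psi> \<in> hom H H" and b: "bij_betw \<phi> (carrier H) (carrier H)" "bij_betw \<psi> (carrier H) (carrier H)"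
    using assms unfolding aut_def by auto
  interpret group H by fact
  have "(\<lambda>f\<in>carrier H. \<phi> (\<psi> f)) \<in> hom H H" using h unfolding hom_def by (auto simp: Pi_def)
  moreover have "bij_betw (\<lambda>f\<in>carrier H. \<phi> (\<psi> f)) (carrier H) (carrier H)"
  proof -
    have "bij_betw (\<phi> \<circ> \<psi>) (carrier H) (carrier H)" using b by (rule bij_betw_trans[rotated])
    then show ?thesis by (rule bij_betw_cong[THEN iffD1, rotated]) auto
  qed
  ultimately show ?thesis unfolding aut_def by auto
qed

lemma aut_carrier: "aut H \<phi> \<Longrightarrow> x \<in> carrier H \<Longrightarrow> \<phi> x \<in> carrier H"
  unfolding aut_def hom_def by auto
lemma aut_mult: "aut H \<phi> \<Longrightarrow> x \<in> carrier H \<Longrightarrow> y \<in> carrier H \<Longrightarrow> \<phi> (x \<otimes>\<^bsub>H\<^esub> y) = \<phi> x \<otimes>\<^bsub>H\<^esub> \<phi> y"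
  unfolding aut_def hom_def by auto
lemma aut_one: "group H \<Longrightarrow> aut H \<phi> \<Longrightarrow> \<phi> \<one>\<^bsub>H\<^esub> = \<one>\<^bsub>H\<^esub>"
  unfolding aut_def using hom_one[of \<phi> H H] by auto

lemma fcomp_r_grp: "fcomp_r (grp_cat H) F F' = (\<lambda>x. fst F (fst F' x), \<lambda>f\<in>carrier H. snd F (snd F' f))"
  by (simp add: fcomp_r_def)


lemma symg_car:
  fixes H :: "'g monoid" (structure)
  assumes H: "group H"
  assumes x: "x \<in> c_obj (Sym_2grp (grp_cat H))" and g: "g \<in> carrier H"
  shows "snd x g \<in> carrier H"
  by (rule aut_carrier[OF symg_obj[OF H, THEN iffD1, OF x] g])

lemma symg_unit_obj:
  fixes H :: "'g monoid" (structure)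
  assumes H: "group H"
  shows "m_unit (Sym_2grp (grp_cat H)) \<in> c_obj (Sym_2grp (grp_cat H))"
  by (simp add: symg_obj[OF H] Sym_unit aut_id[OF H])

lemma symg_tens_obj:
  fixes H :: "'g monoid" (structure)
  assumes H: "group H"
  shows "x \<in> c_obj (Sym_2grp (grp_cat H)) \<Longrightarrow> y \<in> c_obj (Sym_2grp (grp_cat H)) \<Longrightarrow> m_tens (Sym_2grp (grp_cat H)) x y \<in> c_obj (Sym_2grp (grp_cat H))"
  by (simp add: symg_obj[OF H] Sym_tens fcomp_r_grp aut_comp[OF H])

lemma symg_id_hom:
  fixes H :: "'g monoid" (structure)
  assumes H: "group H"
  assumes x: "x \<in> c_obj (Sym_2grp (grp_cat H))"
  shows "c_id (Sym_2grp (grp_cat H)) x \<in> c_hom (Sym_2grp (grp_cat H)) x x"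
proof -
  interpret group H by (rule H)
  have "\<forall>g\<in>carrier H. snd x g \<in> carrier H" using symg_car[OF H x] by blast
  then show ?thesis using symg_homI[OF H x x, of "\<lambda>u. \<one>"] by (simp add: Sym_id)
qed

lemma symg_comp_hom:
  fixes H :: "'g monoid" (structure)
  assumes H: "group H"
  assumes x: "x \<in> c_obj (Sym_2grp (grp_cat H))" and y: "y \<in> c_obj (Sym_2grp (grp_cat H))" and z: "z \<in> c_obj (Sym_2grp (grp_cat H))"
      and f: "f \<in> c_hom (Sym_2grp (grp_cat H)) x y" and g: "g \<in> c_hom (Sym_2grp (grp_cat H)) y z"
  shows "c_comp (Sym_2grp (grp_cat H)) g f \<in> c_hom (Sym_2grp (grp_cat H)) x z"
proof -
  interpret group H by (rule H)
  note ob = symg_obj[OF H]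
  note hm = symg_hom[OF H]
  obtain a where fa: "f = (x, y, a)" "a () \<in> carrier H" "\<forall>h\<in>carrier H. a () \<otimes> snd x h = snd y h \<otimes> a ()"
    using hm[OF x y, THEN iffD1, OF f] by blast
  obtain b where gb: "g = (y, z, b)" "b () \<in> carrier H" "\<forall>h\<in>carrier H. b () \<otimes> snd y h = snd z h \<otimes> b ()"
    using hm[OF y z, THEN iffD1, OF g] by blast
  have "(x, z, \<lambda>u. b u \<otimes> a u) \<in> c_hom (Sym_2grp (grp_cat H)) x z"
  proof (rule symg_homI[OF H x z])
    show "b () \<otimes> a () \<in> carrier H" using fa gb by simp
    fix h assume h: "h \<in> carrier H"
    have cx: "snd x h \<in> carrier H" and cy: "snd y h \<in> carrier H" and cz: "snd z h \<in> carrier H"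
      using symg_car[OF H _ h] x y z by auto
    have "(b () \<otimes> a ()) \<otimes> snd x h = b () \<otimes> (a () \<otimes> snd x h)" using fa gb cx by (simp add: m_assoc)
    also have "\<dots> = b () \<otimes> (snd y h \<otimes> a ())" using fa h by simp
    also have "\<dots> = (b () \<otimes> snd y h) \<otimes> a ()" using fa gb cy by (simp add: m_assoc)
    also have "\<dots> = (snd z h \<otimes> b ()) \<otimes> a ()" using gb h by simp
    also have "\<dots> = snd z h \<otimes> (b () \<otimes> a ())" using fa gb cz by (simp add: m_assoc)
    finally show "(b () \<otimes> a ()) \<otimes> snd x h = snd z h \<otimes> (b () \<otimes> a ())" .
  qed
  then show ?thesis using fa gb by (simp add: Sym_comp)
qed

lemma symg_idl:
  fixes H :: "'g monoid" (structure)
  assumes H: "group H"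
  assumes x: "x \<in> c_obj (Sym_2grp (grp_cat H))" and y: "y \<in> c_obj (Sym_2grp (grp_cat H))" and f: "f \<in> c_hom (Sym_2grp (grp_cat H)) x y"
  shows "c_comp (Sym_2grp (grp_cat H)) (c_id (Sym_2grp (grp_cat H)) y) f = f"
proof -
  interpret group H by (rule H)
  obtain a where fa: "f = (x, y, a)" "a () \<in> carrier H"
    using symg_hom[OF H x y, THEN iffD1, OF f] by blast
  have "(\<lambda>u. \<one> \<otimes> a u) = a"
    by (rule ext, case_tac u, simp add: fa)
  then show ?thesis using fa by (simp add: Sym_comp Sym_id)
qed

lemma symg_idr:
  fixes H :: "'g monoid" (structure)
  assumes H: "group H"
  assumes x: "x \<in> c_obj (Sym_2grp (grp_cat H))" and y: "y \<in> c_obj (Sym_2grp (grp_cat H))" and f: "f \<in> c_hom (Sym_2grp (grp_cat H)) x y"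
  shows "c_comp (Sym_2grp (grp_cat H)) f (c_id (Sym_2grp (grp_cat H)) x) = f"
proof -
  interpret group H by (rule H)
  obtain a where fa: "f = (x, y, a)" "a () \<in> carrier H"
    using symg_hom[OF H x y, THEN iffD1, OF f] by blast
  have "(\<lambda>u. a u \<otimes> \<one>) = a"
    by (rule ext, case_tac u, simp add: fa)
  then show ?thesis using fa by (simp add: Sym_comp Sym_id)
qed

lemma symg_tensm_hom:
  fixes H :: "'g monoid" (structure)
  assumes H: "group H"
  assumes x: "x \<in> c_obj (Sym_2grp (grp_cat H))" and x': "x' \<in> c_obj (Sym_2grp (grp_cat H))" and y: "y \<in> c_obj (Sym_2grp (grp_cat H))" and y': "y' \<in> c_obj (Sym_2grp (grp_cat H))"
      and f: "f \<in> c_hom (Sym_2grp (grp_cat H)) x x'" and g: "g \<in> c_hom (Sym_2grp (grp_cat H)) y y'"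
  shows "m_tensm (Sym_2grp (grp_cat H)) f g \<in> c_hom (Sym_2grp (grp_cat H)) (m_tens (Sym_2grp (grp_cat H)) x y) (m_tens (Sym_2grp (grp_cat H)) x' y')"
proof -
  interpret group H by (rule H)
  note ob = symg_obj[OF H]
  note hm = symg_hom[OF H]
  obtain a where fa: "f = (x, x', a)" "a () \<in> carrier H" "\<forall>h\<in>carrier H. a () \<otimes> snd x h = snd x' h \<otimes> a ()"
    using hm[OF x x', THEN iffD1, OF f] by blast
  obtain b where gb: "g = (y, y', b)" "b () \<in> carrier H" "\<forall>h\<in>carrier H. b () \<otimes> snd y h = snd y' h \<otimes> b ()"
    using hm[OF y y', THEN iffD1, OF g] by blast
  have ax: "aut H (snd x)" "aut H (snd x')" "aut H (snd y)" "aut H (snd y')" using x x' y y' symg_obj[OF H] by blast+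
  have xy: "m_tens (Sym_2grp (grp_cat H)) x y \<in> c_obj (Sym_2grp (grp_cat H))" "m_tens (Sym_2grp (grp_cat H)) x' y' \<in> c_obj (Sym_2grp (grp_cat H))"
    using symg_tens_obj[OF H] x x' y y' by auto
  have "(m_tens (Sym_2grp (grp_cat H)) x y, m_tens (Sym_2grp (grp_cat H)) x' y', \<lambda>u. a u \<otimes> snd x (b u)) \<in> c_hom (Sym_2grp (grp_cat H)) (m_tens (Sym_2grp (grp_cat H)) x y) (m_tens (Sym_2grp (grp_cat H)) x' y')"
  proof (rule symg_homI[OF H xy])
    show "a () \<otimes> snd x (b ()) \<in> carrier H" by (rule m_closed[OF fa(2) symg_car[OF H x gb(2)]])
    fix h assume h: "h \<in> carrier H"
    have cs: "snd y h \<in> carrier H" "snd y' h \<in> carrier H" "snd x (b ()) \<in> carrier H"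
      "snd x (snd y h) \<in> carrier H" "snd x (snd y' h) \<in> carrier H" "snd x' (snd y' h) \<in> carrier H"
      using symg_car[OF H _ h] symg_car[OF H _ gb(2)] symg_car[OF H _ symg_car[OF H _ h]] x x' y y' by auto
    have e1: "snd (m_tens (Sym_2grp (grp_cat H)) x y) h = snd x (snd y h)" "snd (m_tens (Sym_2grp (grp_cat H)) x' y') h = snd x' (snd y' h)"
      using h by (simp_all add: Sym_tens fcomp_r_grp)
    have "(a () \<otimes> snd x (b ())) \<otimes> snd x (snd y h) = a () \<otimes> snd x (b () \<otimes> snd y h)"
      using cs fa(2) gb(2) ax(1) by (simp add: m_assoc aut_mult)
    also have "\<dots> = a () \<otimes> snd x (snd y' h \<otimes> b ())" using gb h by simp
    also have "\<dots> = (a () \<otimes> snd x (snd y' h)) \<otimes> snd x (b ())"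
      using cs fa(2) gb(2) ax(1) by (simp add: m_assoc aut_mult)
    also have "\<dots> = (snd x' (snd y' h) \<otimes> a ()) \<otimes> snd x (b ())" using fa cs by simp
    also have "\<dots> = snd x' (snd y' h) \<otimes> (a () \<otimes> snd x (b ()))" using cs fa(2) by (simp add: m_assoc)
    finally show "(a () \<otimes> snd x (b ())) \<otimes> snd (m_tens (Sym_2grp (grp_cat H)) x y) h = snd (m_tens (Sym_2grp (grp_cat H)) x' y') h \<otimes> (a () \<otimes> snd x (b ()))"
      unfolding e1 .
  qed
  then show ?thesis using fa gb by (simp add: Sym_tensm Sym_tens)
qed

lemma symg_tensm_id:
  fixes H :: "'g monoid" (structure)
  assumes H: "group H"
  assumes x: "x \<in> c_obj (Sym_2grp (grp_cat H))" and y: "y \<in> c_obj (Sym_2grp (grp_cat H))"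
  shows "m_tensm (Sym_2grp (grp_cat H)) (c_id (Sym_2grp (grp_cat H)) x) (c_id (Sym_2grp (grp_cat H)) y) = c_id (Sym_2grp (grp_cat H)) (m_tens (Sym_2grp (grp_cat H)) x y)"
proof -
  interpret group H by (rule H)
  have "snd x \<one> = \<one>" using aut_one[OF H symg_obj[OF H, THEN iffD1, OF x]] .
  then show ?thesis by (simp add: Sym_tensm Sym_id Sym_tens fcomp_r_grp)
qed

lemma symg_assoc_hom:
  fixes H :: "'g monoid" (structure)
  assumes H: "group H"
  assumes x: "x \<in> c_obj (Sym_2grp (grp_cat H))" and y: "y \<in> c_obj (Sym_2grp (grp_cat H))" and z: "z \<in> c_obj (Sym_2grp (grp_cat H))"
  shows "m_assoc (Sym_2grp (grp_cat H)) x y z \<in> c_hom (Sym_2grp (grp_cat H)) (m_tens (Sym_2grp (grp_cat H)) x (m_tens (Sym_2grp (grp_cat H)) y z)) (m_tens (Sym_2grp (grp_cat H)) (m_tens (Sym_2grp (grp_cat H)) x y) z)"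
proof -
  interpret group H by (rule H)
  have o1: "m_tens (Sym_2grp (grp_cat H)) x (m_tens (Sym_2grp (grp_cat H)) y z) \<in> c_obj (Sym_2grp (grp_cat H))" "m_tens (Sym_2grp (grp_cat H)) (m_tens (Sym_2grp (grp_cat H)) x y) z \<in> c_obj (Sym_2grp (grp_cat H))"
    using x y z symg_tens_obj[OF H] by auto
  have "(m_tens (Sym_2grp (grp_cat H)) x (m_tens (Sym_2grp (grp_cat H)) y z), m_tens (Sym_2grp (grp_cat H)) (m_tens (Sym_2grp (grp_cat H)) x y) z, \<lambda>u. \<one>) \<in> c_hom (Sym_2grp (grp_cat H)) (m_tens (Sym_2grp (grp_cat H)) x (m_tens (Sym_2grp (grp_cat H)) y z)) (m_tens (Sym_2grp (grp_cat H)) (m_tens (Sym_2grp (grp_cat H)) x y) z)"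
  proof (rule symg_homI[OF H o1])
    fix g assume g: "g \<in> carrier H"
    have c: "snd z g \<in> carrier H" "snd y (snd z g) \<in> carrier H" "snd x (snd y (snd z g)) \<in> carrier H"
      using symg_car[OF H _ g] symg_car[OF H _ symg_car[OF H _ g]] symg_car[OF H _ symg_car[OF H _ symg_car[OF H _ g]]] x y z by auto
    have "snd (m_tens (Sym_2grp (grp_cat H)) x (m_tens (Sym_2grp (grp_cat H)) y z)) g = snd x (snd y (snd z g))"
         "snd (m_tens (Sym_2grp (grp_cat H)) (m_tens (Sym_2grp (grp_cat H)) x y) z) g = snd x (snd y (snd z g))"
      using g c by (simp_all add: Sym_tens fcomp_r_grp)
    then show "\<one> \<otimes> snd (m_tens (Sym_2grp (grp_cat H)) x (m_tens (Sym_2grp (grp_cat H)) y z)) g = snd (m_tens (Sym_2grp (grp_cat H)) (m_tens (Sym_2grp (grp_cat H)) x y) z) g \<otimes> \<one>"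
      using c by simp
  qed simp
  then show ?thesis by (simp add: Sym_assoc Sym_tens)
qed

lemma symg_lu_hom:
  fixes H :: "'g monoid" (structure)
  assumes H: "group H"
  assumes x: "x \<in> c_obj (Sym_2grp (grp_cat H))"
  shows "m_lu (Sym_2grp (grp_cat H)) x \<in> c_hom (Sym_2grp (grp_cat H)) (m_tens (Sym_2grp (grp_cat H)) (m_unit (Sym_2grp (grp_cat H))) x) x"
proof -
  interpret group H by (rule H)
  have o1: "m_tens (Sym_2grp (grp_cat H)) (m_unit (Sym_2grp (grp_cat H))) x \<in> c_obj (Sym_2grp (grp_cat H))"
    using x symg_tens_obj[OF H] symg_unit_obj[OF H] by auto
  have "(m_tens (Sym_2grp (grp_cat H)) (m_unit (Sym_2grp (grp_cat H))) x, x, \<lambda>u. \<one>) \<in> c_hom (Sym_2grp (grp_cat H)) (m_tens (Sym_2grp (grp_cat H)) (m_unit (Sym_2grp (grp_cat H))) x) x"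
  proof (rule symg_homI[OF H o1 x])
    fix g assume g: "g \<in> carrier H"
    have c: "snd x g \<in> carrier H" using symg_car[OF H x g] .
    have "snd (m_tens (Sym_2grp (grp_cat H)) (m_unit (Sym_2grp (grp_cat H))) x) g = snd x g" using g c by (simp add: Sym_tens Sym_unit fcomp_r_grp)
    then show "\<one> \<otimes> snd (m_tens (Sym_2grp (grp_cat H)) (m_unit (Sym_2grp (grp_cat H))) x) g = snd x g \<otimes> \<one>" using c by simp
  qed simp
  then show ?thesis by (simp add: Sym_lu Sym_tens Sym_unit)
qed

lemma symg_ru_hom:
  fixes H :: "'g monoid" (structure)
  assumes H: "group H"
  assumes x: "x \<in> c_obj (Sym_2grp (grp_cat H))"
  shows "m_ru (Sym_2grp (grp_cat H)) x \<in> c_hom (Sym_2grp (grp_cat H)) (m_tens (Sym_2grp (grp_cat H)) x (m_unit (Sym_2grp (grp_cat H)))) x"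
proof -
  interpret group H by (rule H)
  have o1: "m_tens (Sym_2grp (grp_cat H)) x (m_unit (Sym_2grp (grp_cat H))) \<in> c_obj (Sym_2grp (grp_cat H))"
    using x symg_tens_obj[OF H] symg_unit_obj[OF H] by auto
  have "(m_tens (Sym_2grp (grp_cat H)) x (m_unit (Sym_2grp (grp_cat H))), x, \<lambda>u. \<one>) \<in> c_hom (Sym_2grp (grp_cat H)) (m_tens (Sym_2grp (grp_cat H)) x (m_unit (Sym_2grp (grp_cat H)))) x"
  proof (rule symg_homI[OF H o1 x])
    fix g assume g: "g \<in> carrier H"
    have c: "snd x g \<in> carrier H" using symg_car[OF H x g] .
    have "snd (m_tens (Sym_2grp (grp_cat H)) x (m_unit (Sym_2grp (grp_cat H)))) g = snd x g" using g c by (simp add: Sym_tens Sym_unit fcomp_r_grp)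
    then show "\<one> \<otimes> snd (m_tens (Sym_2grp (grp_cat H)) x (m_unit (Sym_2grp (grp_cat H)))) g = snd x g \<otimes> \<one>" using c by simp
  qed simp
  then show ?thesis by (simp add: Sym_ru Sym_tens Sym_unit)
qed

lemma mlaws_symg:
  fixes H :: "'g monoid" (structure)
  assumes H: "group H"
  shows "mlaws (Sym_2grp (grp_cat H))"
  by (rule mlaws.intro[OF symg_unit_obj[OF H] symg_tens_obj[OF H] symg_id_hom[OF H] symg_comp_hom[OF H] symg_idl[OF H]
    symg_idr[OF H] symg_tensm_hom[OF H] symg_tensm_id[OF H] symg_assoc_hom[OF H] symg_lu_hom[OF H] symg_ru_hom[OF H]])




lemma wr_obj: "c_obj (wreath n M) = {(\<sigma>, x). \<sigma> permutes {1..n} \<and> x \<in> extensional {1..n} \<and> (\<forall>k\<in>{1..n}. x k \<in> c_obj M)}"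
  by (simp add: wreath_def Let_def)
lemma wr_obj_iff: "(\<sigma>, x) \<in> c_obj (wreath n M) \<longleftrightarrow> \<sigma> permutes {1..n} \<and> x \<in> extensional {1..n} \<and> (\<forall>k\<in>{1..n}. x k \<in> c_obj M)"
  by (simp add: wr_obj)
lemma wr_hom: "c_hom (wreath n M) (\<sigma>, x) (\<sigma>', x') = (if (\<sigma>, x) \<in> c_obj (wreath n M) \<and> (\<sigma>', x') \<in> c_obj (wreath n M) \<and> \<sigma> = \<sigma>'
                 then {(\<sigma>, f) | f. f \<in> extensional {1..n} \<and> (\<forall>k\<in>{1..n}. f k \<in> c_hom M (x k) (x' k))} else {})"
  by (simp add: wreath_def Let_def)
lemma wr_comp: "c_comp (wreath n M) (\<sigma>, g) (\<sigma>', f) = (\<sigma>, \<lambda>k\<in>{1..n}. c_comp M (g k) (f k))"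
  by (simp add: wreath_def Let_def)
lemma wr_id: "c_id (wreath n M) (\<sigma>, x) = (\<sigma>, \<lambda>k\<in>{1..n}. c_id M (x k))"
  by (simp add: wreath_def Let_def)
lemma wr_tens: "m_tens (wreath n M) (\<sigma>, x) (\<sigma>', x') = (\<sigma> \<circ> \<sigma>', \<lambda>k\<in>{1..n}. m_tens M (x (\<sigma>' k)) (x' k))"
  by (simp add: wreath_def Let_def)
lemma wr_tensm: "m_tensm (wreath n M) (\<sigma>, f) (\<sigma>', f') = (\<sigma> \<circ> \<sigma>', \<lambda>k\<in>{1..n}. m_tensm M (f (\<sigma>' k)) (f' k))"
  by (simp add: wreath_def Let_def)
lemma wr_unit: "m_unit (wreath n M) = (id, \<lambda>k\<in>{1..n}. m_unit M)"
  by (simp add: wreath_def Let_def)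
lemma wr_assoc: "m_assoc (wreath n M) (\<sigma>, x) (\<sigma>', x') (\<sigma>'', x'') = (\<sigma> \<circ> \<sigma>' \<circ> \<sigma>'',
                    \<lambda>k\<in>{1..n}. m_assoc M (x (\<sigma>' (\<sigma>'' k))) (x' (\<sigma>'' k)) (x'' k))"
  by (simp add: wreath_def Let_def)
lemma wr_lu: "m_lu (wreath n M) (\<sigma>, x) = (\<sigma>, \<lambda>k\<in>{1..n}. m_lu M (x k))"
  by (simp add: wreath_def Let_def)
lemma wr_ru: "m_ru (wreath n M) (\<sigma>, x) = (\<sigma>, \<lambda>k\<in>{1..n}. m_ru M (x k))"
  by (simp add: wreath_def Let_def)

lemma wr_homI:
  assumes "(\<sigma>, x) \<in> c_obj (wreath n M)" "(\<sigma>, x') \<in> c_obj (wreath n M)" "h \<in> extensional {1..n}"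
    "\<And>k. k \<in> {1..n} \<Longrightarrow> h k \<in> c_hom M (x k) (x' k)"
  shows "(\<sigma>, h) \<in> c_hom (wreath n M) (\<sigma>, x) (\<sigma>, x')"
  using assms by (simp add: wr_hom)

lemma wr_homE:
  assumes "m \<in> c_hom (wreath n M) (\<sigma>, x) (\<sigma>', x')"
  obtains h where "\<sigma>' = \<sigma>" "m = (\<sigma>, h)" "h \<in> extensional {1..n}" "\<And>k. k \<in> {1..n} \<Longrightarrow> h k \<in> c_hom M (x k) (x' k)"
    "(\<sigma>, x) \<in> c_obj (wreath n M)" "(\<sigma>', x') \<in> c_obj (wreath n M)"
  using assms by (auto simp: wr_hom split: if_splits)

lemma perm_b: "\<sigma> permutes {1..n} \<Longrightarrow> Suc 0 \<le> k \<Longrightarrow> k \<le> n \<Longrightarrow> Suc 0 \<le> \<sigma> k"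
   "\<sigma> permutes {1..n} \<Longrightarrow> Suc 0 \<le> k \<Longrightarrow> k \<le> n \<Longrightarrow> \<sigma> k \<le> (n::nat)"
  using permutes_in_image[of \<sigma> "{1..n}" k] by auto

lemma perm_in: "\<sigma> permutes {1..n} \<Longrightarrow> k \<in> {1..n} \<Longrightarrow> \<sigma> k \<in> {1..(n::nat)}"
  by (rule permutes_in_image[THEN iffD2])

context
  fixes n :: nat and M :: "('o, 'm) mcat"
  assumes M: "mlaws M"
begin

interpretation m: mlaws M by (rule M)

lemma wr_unit_obj: "m_unit (wreath n M) \<in> c_obj (wreath n M)"
  by (simp add: wr_unit wr_obj permutes_id m.unit_obj)

lemma wr_tens_obj: assumes "p \<in> c_obj (wreath n M)" "q \<in> c_obj (wreath n M)"
  shows "m_tens (wreath n M) p q \<in> c_obj (wreath n M)"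
proof -
  obtain \<sigma> x where p: "p = (\<sigma>, x)" by (cases p)
  obtain \<tau> y where q: "q = (\<tau>, y)" by (cases q)
  show ?thesis using assms unfolding p q
    by (auto simp: wr_tens wr_obj permutes_compose perm_in perm_b intro!: m.tens_obj)
qed

lemma wr_id_hom: assumes "p \<in> c_obj (wreath n M)" shows "c_id (wreath n M) p \<in> c_hom (wreath n M) p p"
proof -
  obtain \<sigma> x where p: "p = (\<sigma>, x)" by (cases p)
  show ?thesis using assms unfolding p wr_id by (intro wr_homI) (auto simp: wr_obj intro: m.id_hom)
qed

lemma wr_comp_hom: assumes "p \<in> c_obj (wreath n M)" "q \<in> c_obj (wreath n M)" "r \<in> c_obj (wreath n M)"
   "f \<in> c_hom (wreath n M) p q" "g \<in> c_hom (wreath n M) q r"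
  shows "c_comp (wreath n M) g f \<in> c_hom (wreath n M) p r"
proof -
  obtain \<sigma> x where p: "p = (\<sigma>, x)" by (cases p)
  obtain \<tau> y where q: "q = (\<tau>, y)" by (cases q)
  obtain \<rho> z where r: "r = (\<rho>, z)" by (cases r)
  obtain h where h: "\<tau> = \<sigma>" "f = (\<sigma>, h)" "\<And>k. k \<in> {1..n} \<Longrightarrow> h k \<in> c_hom M (x k) (y k)"
    using assms(4)[unfolded p q] by (elim wr_homE) blast
  obtain h' where h': "\<rho> = \<tau>" "g = (\<tau>, h')" "\<And>k. k \<in> {1..n} \<Longrightarrow> h' k \<in> c_hom M (y k) (z k)"
    using assms(5)[unfolded q r] by (elim wr_homE) blast
  show ?thesis using assms(1,2,3) unfolding p q r h h' wr_comp
    by (intro wr_homI) (auto simp: wr_obj h h' intro!: m.comp_hom[OF _ _ _ h(3) h'(3)])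
qed

lemma wr_idl: assumes "p \<in> c_obj (wreath n M)" "q \<in> c_obj (wreath n M)" "f \<in> c_hom (wreath n M) p q"
  shows "c_comp (wreath n M) (c_id (wreath n M) q) f = f"
proof -
  obtain \<sigma> x where p: "p = (\<sigma>, x)" by (cases p)
  obtain \<tau> y where q: "q = (\<tau>, y)" by (cases q)
  obtain h where h: "\<tau> = \<sigma>" "f = (\<sigma>, h)" "h \<in> extensional {1..n}" "\<And>k. k \<in> {1..n} \<Longrightarrow> h k \<in> c_hom M (x k) (y k)"
    "(\<sigma>, x) \<in> c_obj (wreath n M)" "(\<tau>, y) \<in> c_obj (wreath n M)"
    using assms(3)[unfolded p q] by (elim wr_homE) blast
  have "(\<lambda>k\<in>{1..n}. c_comp M ((\<lambda>k\<in>{1..n}. c_id M (y k)) k) (h k)) = h"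
    using h m.id_left[OF _ _ h(4)] by (auto simp: wr_obj extensional_def fun_eq_iff)
  then show ?thesis unfolding q h(2) wr_id wr_comp h(1) by simp
qed

lemma wr_idr: assumes "p \<in> c_obj (wreath n M)" "q \<in> c_obj (wreath n M)" "f \<in> c_hom (wreath n M) p q"
  shows "c_comp (wreath n M) f (c_id (wreath n M) p) = f"
proof -
  obtain \<sigma> x where p: "p = (\<sigma>, x)" by (cases p)
  obtain \<tau> y where q: "q = (\<tau>, y)" by (cases q)
  obtain h where h: "\<tau> = \<sigma>" "f = (\<sigma>, h)" "h \<in> extensional {1..n}" "\<And>k. k \<in> {1..n} \<Longrightarrow> h k \<in> c_hom M (x k) (y k)"
    "(\<sigma>, x) \<in> c_obj (wreath n M)" "(\<tau>, y) \<in> c_obj (wreath n M)"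
    using assms(3)[unfolded p q] by (elim wr_homE) blast
  have "(\<lambda>k\<in>{1..n}. c_comp M (h k) ((\<lambda>k\<in>{1..n}. c_id M (x k)) k)) = h"
    using h m.id_right[OF _ _ h(4)] by (auto simp: wr_obj extensional_def fun_eq_iff)
  then show ?thesis unfolding p h(2) wr_id wr_comp by simp
qed

lemma wr_tensm_hom: assumes "p \<in> c_obj (wreath n M)" "p' \<in> c_obj (wreath n M)" "q \<in> c_obj (wreath n M)" "q' \<in> c_obj (wreath n M)"
   "f \<in> c_hom (wreath n M) p p'" "g \<in> c_hom (wreath n M) q q'"
  shows "m_tensm (wreath n M) f g \<in> c_hom (wreath n M) (m_tens (wreath n M) p q) (m_tens (wreath n M) p' q')"
proof -
  obtain \<sigma> x where p: "p = (\<sigma>, x)" by (cases p)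
  obtain \<sigma>' x' where p': "p' = (\<sigma>', x')" by (cases p')
  obtain \<tau> y where q: "q = (\<tau>, y)" by (cases q)
  obtain \<tau>' y' where q': "q' = (\<tau>', y')" by (cases q')
  obtain h where h: "\<sigma>' = \<sigma>" "f = (\<sigma>, h)" "\<And>k. k \<in> {1..n} \<Longrightarrow> h k \<in> c_hom M (x k) (x' k)"
    using assms(5)[unfolded p p'] by (elim wr_homE) blast
  obtain h' where h': "\<tau>' = \<tau>" "g = (\<tau>, h')" "\<And>k. k \<in> {1..n} \<Longrightarrow> h' k \<in> c_hom M (y k) (y' k)"
    using assms(6)[unfolded q q'] by (elim wr_homE) blast
  have o: "m_tens (wreath n M) p q \<in> c_obj (wreath n M)" "m_tens (wreath n M) p' q' \<in> c_obj (wreath n M)"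
    using wr_tens_obj assms by auto
  have tp: "\<tau> permutes {1..n}" using assms(3) q by (simp add: wr_obj)
  show ?thesis using o unfolding p p' q q' h h' wr_tens wr_tensm
    apply (intro wr_homI)
       apply simp_all
    using assms(1-4) unfolding p p' q q' h h'
    by (auto simp: wr_obj perm_in[OF tp] perm_b[OF tp] intro!: m.tensm_hom h(3) h'(3))
qed

lemma wr_tensm_id: assumes "p \<in> c_obj (wreath n M)" "q \<in> c_obj (wreath n M)"
  shows "m_tensm (wreath n M) (c_id (wreath n M) p) (c_id (wreath n M) q) = c_id (wreath n M) (m_tens (wreath n M) p q)"
proof -
  obtain \<sigma> x where p: "p = (\<sigma>, x)" by (cases p)
  obtain \<tau> y where q: "q = (\<tau>, y)" by (cases q)
  have tp: "\<tau> permutes {1..n}" using assms(2) q by (simp add: wr_obj)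
  show ?thesis using assms unfolding p q wr_id wr_tens wr_tensm
    by (auto simp: wr_obj perm_in[OF tp] perm_b[OF tp] m.tensm_id intro!: restrict_ext)
qed

lemma wr_assoc_hom: assumes "p \<in> c_obj (wreath n M)" "q \<in> c_obj (wreath n M)" "r \<in> c_obj (wreath n M)"
  shows "m_assoc (wreath n M) p q r \<in> c_hom (wreath n M) (m_tens (wreath n M) p (m_tens (wreath n M) q r)) (m_tens (wreath n M) (m_tens (wreath n M) p q) r)"
proof -
  obtain \<sigma> x where p: "p = (\<sigma>, x)" by (cases p)
  obtain \<tau> y where q: "q = (\<tau>, y)" by (cases q)
  obtain \<rho> z where r: "r = (\<rho>, z)" by (cases r)
  have o: "m_tens (wreath n M) p (m_tens (wreath n M) q r) \<in> c_obj (wreath n M)" "m_tens (wreath n M) (m_tens (wreath n M) p q) r \<in> c_obj (wreath n M)"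
    using wr_tens_obj assms by auto
  have tp: "\<tau> permutes {1..n}" "\<rho> permutes {1..n}" using assms q r by (simp_all add: wr_obj)
  show ?thesis using o unfolding p q r wr_tens wr_assoc o_assoc
    apply (intro wr_homI)
       apply simp_all
    using assms unfolding p q r
    by (auto simp: wr_obj perm_in[OF tp(1)] perm_in[OF tp(2)] perm_b[OF tp(1)] perm_b[OF tp(2)] intro!: m.assoc_hom)
qed

lemma wr_lu_hom: assumes "p \<in> c_obj (wreath n M)"
  shows "m_lu (wreath n M) p \<in> c_hom (wreath n M) (m_tens (wreath n M) (m_unit (wreath n M)) p) p"
proof -
  obtain \<sigma> x where p: "p = (\<sigma>, x)" by (cases p)
  have o: "m_tens (wreath n M) (m_unit (wreath n M)) p \<in> c_obj (wreath n M)"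
    using wr_tens_obj wr_unit_obj assms by auto
  have tp: "\<sigma> permutes {1..n}" using assms p by (simp add: wr_obj)
  show ?thesis using o assms unfolding p wr_tens wr_unit wr_lu
    apply simp
    apply (intro wr_homI)
    using assms unfolding p
    by (auto simp: wr_obj perm_in[OF tp] perm_b[OF tp] intro!: m.lu_hom)
qed

lemma wr_ru_hom: assumes "p \<in> c_obj (wreath n M)"
  shows "m_ru (wreath n M) p \<in> c_hom (wreath n M) (m_tens (wreath n M) p (m_unit (wreath n M))) p"
proof -
  obtain \<sigma> x where p: "p = (\<sigma>, x)" by (cases p)
  have o: "m_tens (wreath n M) p (m_unit (wreath n M)) \<in> c_obj (wreath n M)"
    using wr_tens_obj wr_unit_obj assms by auto
  have tp: "\<sigma> permutes {1..n}" using assms p by (simp add: wr_obj)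
  show ?thesis using o assms unfolding p wr_tens wr_unit wr_ru
    apply simp
    apply (intro wr_homI)
    using assms unfolding p
    by (auto simp: wr_obj intro!: m.ru_hom)
qed

lemma mlaws_wreath: "mlaws (wreath n M)"
  by (rule mlaws.intro[OF wr_unit_obj wr_tens_obj wr_id_hom wr_comp_hom wr_idl wr_idr wr_tensm_hom wr_tensm_id
     wr_assoc_hom wr_lu_hom wr_ru_hom])

end


lemma mlaws_prod:
  fixes M :: "'i \<Rightarrow> ('o, 'm) mcat"
  assumes M: "\<And>i. i \<in> I \<Longrightarrow> mlaws (M i)"
  shows "mlaws (prod_mcat I M)"
proof
  show "m_unit (prod_mcat I M) \<in> c_obj (prod_mcat I M)" by (simp add: prod_mcat_def mlaws.unit_obj[OF M])
  fix x y assume "x \<in> c_obj (prod_mcat I M)" "y \<in> c_obj (prod_mcat I M)"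
  then show "m_tens (prod_mcat I M) x y \<in> c_obj (prod_mcat I M)"
    by (auto simp add: prod_mcat_def intro!: mlaws.tens_obj[OF M])
next
  fix x assume "x \<in> c_obj (prod_mcat I M)"
  then show "c_id (prod_mcat I M) x \<in> c_hom (prod_mcat I M) x x"
    by (auto simp add: prod_mcat_def intro!: mlaws.id_hom[OF M])
next
  fix x y z f g assume "x \<in> c_obj (prod_mcat I M)" "y \<in> c_obj (prod_mcat I M)" "z \<in> c_obj (prod_mcat I M)"
    "f \<in> c_hom (prod_mcat I M) x y" "g \<in> c_hom (prod_mcat I M) y z"
  then show "c_comp (prod_mcat I M) g f \<in> c_hom (prod_mcat I M) x z"
    by (auto simp add: prod_mcat_def intro!: mlaws.comp_hom[OF M, of _ "x _" "y _" "z _"])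
next
  fix x y f assume a: "x \<in> c_obj (prod_mcat I M)" "y \<in> c_obj (prod_mcat I M)" "f \<in> c_hom (prod_mcat I M) x y"
  then show "c_comp (prod_mcat I M) (c_id (prod_mcat I M) y) f = f"
    by (auto simp add: prod_mcat_def fun_eq_iff PiE_def extensional_def Pi_def intro: mlaws.id_left[OF M])
next
  fix x y f assume a: "x \<in> c_obj (prod_mcat I M)" "y \<in> c_obj (prod_mcat I M)" "f \<in> c_hom (prod_mcat I M) x y"
  then show "c_comp (prod_mcat I M) f (c_id (prod_mcat I M) x) = f"
    by (auto simp add: prod_mcat_def fun_eq_iff PiE_def extensional_def Pi_def intro: mlaws.id_right[OF M])
next
  fix x x' y y' f g assume "x \<in> c_obj (prod_mcat I M)" "x' \<in> c_obj (prod_mcat I M)" "y \<in> c_obj (prod_mcat I M)" "y' \<in> c_obj (prod_mcat I M)"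
    "f \<in> c_hom (prod_mcat I M) x x'" "g \<in> c_hom (prod_mcat I M) y y'"
  then show "m_tensm (prod_mcat I M) f g \<in> c_hom (prod_mcat I M) (m_tens (prod_mcat I M) x y) (m_tens (prod_mcat I M) x' y')"
    by (auto simp add: prod_mcat_def intro!: mlaws.tensm_hom[OF M] mlaws.tens_obj[OF M])
next
  fix x y assume "x \<in> c_obj (prod_mcat I M)" "y \<in> c_obj (prod_mcat I M)"
  then show "m_tensm (prod_mcat I M) (c_id (prod_mcat I M) x) (c_id (prod_mcat I M) y) = c_id (prod_mcat I M) (m_tens (prod_mcat I M) x y)"
    by (auto simp add: prod_mcat_def intro!: restrict_ext mlaws.tensm_id[OF M])
next
  fix x y z assume "x \<in> c_obj (prod_mcat I M)" "y \<in> c_obj (prod_mcat I M)" "z \<in> c_obj (prod_mcat I M)"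
  then show "m_assoc (prod_mcat I M) x y z \<in> c_hom (prod_mcat I M) (m_tens (prod_mcat I M) x (m_tens (prod_mcat I M) y z)) (m_tens (prod_mcat I M) (m_tens (prod_mcat I M) x y) z)"
    by (auto simp add: prod_mcat_def intro!: mlaws.assoc_hom[OF M] mlaws.tens_obj[OF M])
next
  fix x assume "x \<in> c_obj (prod_mcat I M)"
  then show "m_lu (prod_mcat I M) x \<in> c_hom (prod_mcat I M) (m_tens (prod_mcat I M) (m_unit (prod_mcat I M)) x) x"
    by (auto simp add: prod_mcat_def intro!: mlaws.lu_hom[OF M] mlaws.tens_obj[OF M] mlaws.unit_obj[OF M])
next
  fix x assume "x \<in> c_obj (prod_mcat I M)"
  then show "m_ru (prod_mcat I M) x \<in> c_hom (prod_mcat I M) (m_tens (prod_mcat I M) x (m_unit (prod_mcat I M))) x"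
    by (auto simp add: prod_mcat_def intro!: mlaws.ru_hom[OF M] mlaws.tens_obj[OF M] mlaws.unit_obj[OF M])
qed



lemma co_obj: "c_obj (coprod_cat I n G) = {(i, k). i \<in> I \<and> k \<in> {1..n i}}"
  by (simp add: coprod_cat_def Let_def)
lemma co_hom: "c_hom (coprod_cat I n G) (i, k) (j, l) = (if (i, k) \<in> c_obj (coprod_cat I n G) \<and> (i, k) = (j, l)
                 then {(i, k, g) | g. g \<in> carrier (G i)} else {})"
  by (simp add: coprod_cat_def Let_def)
lemma co_comp: "c_comp (coprod_cat I n G) (i, k, g) (j, l, h) = (i, k, g \<otimes>\<^bsub>G i\<^esub> h)"
  by (simp add: coprod_cat_def Let_def)
lemma co_id: "c_id (coprod_cat I n G) (i, k) = (i, k, \<one>\<^bsub>G i\<^esub>)"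
  by (simp add: coprod_cat_def Let_def)
lemma co_obj_iff: "(i, k) \<in> c_obj (coprod_cat I n G) \<longleftrightarrow> i \<in> I \<and> k \<in> {1..n i}"
  by (simp add: co_obj)
lemma co_hom_iff: "f \<in> c_hom (coprod_cat I n G) (i, k) (j, l) \<longleftrightarrow> i \<in> I \<and> k \<in> {1..n i} \<and> j = i \<and> l = k \<and>
   (\<exists>g. f = (i, k, g) \<and> g \<in> carrier (G i))"
  by (auto simp: co_hom co_obj)

lemma co_mor: "mor (coprod_cat I n G) = {(i, k, g). i \<in> I \<and> k \<in> {1..n i} \<and> g \<in> carrier (G i)}"
proof (intro Set.set_eqI iffI)
  fix f assume "f \<in> mor (coprod_cat I n G)"
  then obtain x y where "x \<in> c_obj (coprod_cat I n G)" "y \<in> c_obj (coprod_cat I n G)" "f \<in> c_hom (coprod_cat I n G) x y"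
    unfolding mor_iff by blast
  moreover obtain i k j l where "x = (i, k)" "y = (j, l)" by (cases x, cases y)
  ultimately show "f \<in> {(i, k, g). i \<in> I \<and> k \<in> {1..n i} \<and> g \<in> carrier (G i)}"
    by (auto simp: co_hom_iff)
next
  fix f assume "f \<in> {(i, k, g). i \<in> I \<and> k \<in> {1..n i} \<and> g \<in> carrier (G i)}"
  then obtain i k g where f: "f = (i, k, g)" "i \<in> I" "k \<in> {1..n i}" "g \<in> carrier (G i)" by auto
  then have "(i, k) \<in> c_obj (coprod_cat I n G)" "f \<in> c_hom (coprod_cat I n G) (i, k) (i, k)"
    by (auto simp: co_obj_iff co_hom_iff)
  then show "f \<in> mor (coprod_cat I n G)" unfolding mor_iff by blast
qed
lemma co_mor_iff: "(i, k, g) \<in> mor (coprod_cat I n G) \<longleftrightarrow> i \<in> I \<and> k \<in> {1..n i} \<and> g \<in> carrier (G i)"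
  by (simp add: co_mor)
definition mkF :: "'i set \<Rightarrow> ('i \<Rightarrow> nat) \<Rightarrow> ('i \<Rightarrow> 'g monoid) \<Rightarrow> ('i \<Rightarrow> nat \<Rightarrow> nat) \<Rightarrow> ('i \<Rightarrow> nat \<Rightarrow> 'g \<Rightarrow> 'g)
   \<Rightarrow> ('i \<times> nat \<Rightarrow> 'i \<times> nat) \<times> ('i \<times> nat \<times> 'g \<Rightarrow> 'i \<times> nat \<times> 'g)" where
  "mkF I n G \<sigma> \<phi> = (restrict (\<lambda>(i, k). (i, \<sigma> i k)) (c_obj (coprod_cat I n G)),
                    restrict (\<lambda>(i, k, g). (i, \<sigma> i k, \<phi> i k g)) (mor (coprod_cat I n G)))"

lemma mkF_o: "i \<in> I \<Longrightarrow> k \<in> {1..n i} \<Longrightarrow> fst (mkF I n G \<sigma> \<phi>) (i, k) = (i, \<sigma> i k)"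
  by (simp add: mkF_def co_obj)
lemma mkF_m: "i \<in> I \<Longrightarrow> k \<in> {1..n i} \<Longrightarrow> g \<in> carrier (G i) \<Longrightarrow> snd (mkF I n G \<sigma> \<phi>) (i, k, g) = (i, \<sigma> i k, \<phi> i k g)"
  by (simp add: mkF_def co_mor)
lemma mkF_ext: "ext_functor (coprod_cat I n G) (mkF I n G \<sigma> \<phi>)"
  by (simp add: mkF_def ext_functor_def)

lemma mkF_functor:
  assumes \<sigma>: "\<And>i k. i \<in> I \<Longrightarrow> k \<in> {1..n i} \<Longrightarrow> \<sigma> i k \<in> {1..n i}"
    and \<phi>: "\<And>i k. i \<in> I \<Longrightarrow> k \<in> {1..n i} \<Longrightarrow> \<phi> i k \<in> hom (G i) (G i)"
    and grp: "\<And>i. i \<in> I \<Longrightarrow> group (G i)"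
  shows "is_functor (coprod_cat I n G) (coprod_cat I n G) (mkF I n G \<sigma> \<phi>)"
  unfolding is_functor_def
proof (intro conjI ballI)
  fix x assume "x \<in> c_obj (coprod_cat I n G)"
  then show "fst (mkF I n G \<sigma> \<phi>) x \<in> c_obj (coprod_cat I n G)"
    using \<sigma> by (auto simp: co_obj mkF_o)
next
  fix x y f assume x: "x \<in> c_obj (coprod_cat I n G)" and y: "y \<in> c_obj (coprod_cat I n G)"
    and f: "f \<in> c_hom (coprod_cat I n G) x y"
  obtain i k where xe: "x = (i, k)" by (cases x)
  obtain j l where ye: "y = (j, l)" by (cases y)
  from f obtain g where "i \<in> I" "k \<in> {1..n i}" "j = i" "l = k" "f = (i, k, g)" "g \<in> carrier (G i)"
    unfolding xe ye co_hom_iff by blast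
  then show "snd (mkF I n G \<sigma> \<phi>) f \<in> c_hom (coprod_cat I n G) (fst (mkF I n G \<sigma> \<phi>) x) (fst (mkF I n G \<sigma> \<phi>) y)"
    using \<sigma> hom_in_carrier[OF \<phi>] unfolding xe ye by (auto simp: mkF_o mkF_m co_hom_iff)
next
  fix x y z f g assume x: "x \<in> c_obj (coprod_cat I n G)" and y: "y \<in> c_obj (coprod_cat I n G)"
    and z: "z \<in> c_obj (coprod_cat I n G)"
    and f: "f \<in> c_hom (coprod_cat I n G) x y" and g: "g \<in> c_hom (coprod_cat I n G) y z"
  obtain i k where xe: "x = (i, k)" by (cases x)
  obtain j l where ye: "y = (j, l)" by (cases y)
  obtain j' l' where ze: "z = (j', l')" by (cases z)
  from f obtain a where fa: "i \<in> I" "k \<in> {1..n i}" "j = i" "l = k" "f = (i, k, a)" "a \<in> carrier (G i)"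
    unfolding xe ye co_hom_iff by blast
  from g fa obtain b where gb: "j' = i" "l' = k" "g = (i, k, b)" "b \<in> carrier (G i)"
    unfolding ye ze co_hom_iff by blast
  interpret group "G i" using grp fa by blast
  show "snd (mkF I n G \<sigma> \<phi>) (c_comp (coprod_cat I n G) g f) =
      c_comp (coprod_cat I n G) (snd (mkF I n G \<sigma> \<phi>) g) (snd (mkF I n G \<sigma> \<phi>) f)"
    using fa gb \<phi>[OF fa(1,2)] by (simp add: co_comp mkF_m hom_mult)
next
  fix x assume "x \<in> c_obj (coprod_cat I n G)"
  then obtain i k where x: "x = (i, k)" "i \<in> I" "k \<in> {1..n i}" by (auto simp: co_obj)
  interpret group "G i" using grp x by blast
  show "snd (mkF I n G \<sigma> \<phi>) (c_id (coprod_cat I n G) x) = c_id (coprod_cat I n G) (fst (mkF I n G \<sigma> \<phi>) x)"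
    using x \<phi>[OF x(2,3)] by (simp add: co_id mkF_m mkF_o hom_one)
qed


lemma co_laws:
  assumes grp: "\<And>i. i \<in> I \<Longrightarrow> group (G i)"
  shows "\<And>x. x \<in> c_obj (coprod_cat I n G) \<Longrightarrow> c_id (coprod_cat I n G) x \<in> c_hom (coprod_cat I n G) x x"
    and "\<And>x y f. x \<in> c_obj (coprod_cat I n G) \<Longrightarrow> y \<in> c_obj (coprod_cat I n G) \<Longrightarrow> f \<in> c_hom (coprod_cat I n G) x y \<Longrightarrow>
       c_comp (coprod_cat I n G) (c_id (coprod_cat I n G) y) f = f"
    and "\<And>x y f. x \<in> c_obj (coprod_cat I n G) \<Longrightarrow> y \<in> c_obj (coprod_cat I n G) \<Longrightarrow> f \<in> c_hom (coprod_cat I n G) x y \<Longrightarrow>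
       c_comp (coprod_cat I n G) f (c_id (coprod_cat I n G) x) = f"
proof -
  fix x assume "x \<in> c_obj (coprod_cat I n G)"
  then obtain i k where x: "x = (i, k)" "i \<in> I" "k \<in> {1..n i}" by (auto simp: co_obj)
  then show "c_id (coprod_cat I n G) x \<in> c_hom (coprod_cat I n G) x x"
    using group.is_monoid[OF grp] by (auto simp: co_id co_hom_iff)
next
  fix x y f assume "x \<in> c_obj (coprod_cat I n G)" "y \<in> c_obj (coprod_cat I n G)" and f: "f \<in> c_hom (coprod_cat I n G) x y"
  obtain i k j l where x: "x = (i, k)" "y = (j, l)" by (cases x, cases y)
  from f obtain g where "i \<in> I" "j = i" "l = k" "f = (i, k, g)" "g \<in> carrier (G i)"
    unfolding x co_hom_iff by blast
  then show "c_comp (coprod_cat I n G) (c_id (coprod_cat I n G) y) f = f"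
    and "c_comp (coprod_cat I n G) f (c_id (coprod_cat I n G) x) = f"
    using group.is_monoid[OF grp] unfolding x by (auto simp: co_id co_comp)
qed

lemma mkF_equiv:
  assumes grp: "\<And>i. i \<in> I \<Longrightarrow> group (G i)"
    and \<sigma>: "\<And>i. i \<in> I \<Longrightarrow> bij_betw (\<sigma> i) {1..n i} {1..n i}"
    and \<phi>: "\<And>i k. i \<in> I \<Longrightarrow> k \<in> {1..n i} \<Longrightarrow> \<phi> i k \<in> hom (G i) (G i) \<and> bij_betw (\<phi> i k) (carrier (G i)) (carrier (G i))"
  shows "is_equivalence (coprod_cat I n G) (coprod_cat I n G) (mkF I n G \<sigma> \<phi>)"
proof -
  define \<rho> where "\<rho> i = inv_into {1..n i} (\<sigma> i)" for i
  define \<psi> where "\<psi> i l = inv_into (carrier (G i)) (\<phi> i (\<rho> i l))" for i l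
  have \<sigma>in: "\<And>i k. i \<in> I \<Longrightarrow> k \<in> {1..n i} \<Longrightarrow> \<sigma> i k \<in> {1..n i}"
    by (rule bij_betw_apply[OF \<sigma>])
  have \<rho>b: "\<And>i. i \<in> I \<Longrightarrow> bij_betw (\<rho> i) {1..n i} {1..n i}"
    unfolding \<rho>_def by (rule bij_betw_inv_into[OF \<sigma>])
  have \<rho>in: "\<And>i k. i \<in> I \<Longrightarrow> k \<in> {1..n i} \<Longrightarrow> \<rho> i k \<in> {1..n i}"
    by (rule bij_betw_apply[OF \<rho>b])
  have \<rho>\<sigma>: "\<And>i k. i \<in> I \<Longrightarrow> k \<in> {1..n i} \<Longrightarrow> \<rho> i (\<sigma> i k) = k"
    unfolding \<rho>_def by (rule bij_betw_inv_into_left[OF \<sigma>])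
  have \<sigma>\<rho>: "\<And>i k. i \<in> I \<Longrightarrow> k \<in> {1..n i} \<Longrightarrow> \<sigma> i (\<rho> i k) = k"
    unfolding \<rho>_def by (rule bij_betw_inv_into_right[OF \<sigma>])
  have \<psi>h: "\<And>i k. i \<in> I \<Longrightarrow> k \<in> {1..n i} \<Longrightarrow> \<psi> i k \<in> hom (G i) (G i) \<and> bij_betw (\<psi> i k) (carrier (G i)) (carrier (G i))"
  proof -
    fix i k assume i: "i \<in> I" and k: "k \<in> {1..n i}"
    have "\<phi> i (\<rho> i k) \<in> iso (G i) (G i)" using \<phi>[OF i \<rho>in[OF i k]] by (simp add: iso_def)
    then have "\<psi> i k \<in> iso (G i) (G i)" unfolding \<psi>_def by (rule group.iso_set_sym[OF grp[OF i]])
    then show "\<psi> i k \<in> hom (G i) (G i) \<and> bij_betw (\<psi> i k) (carrier (G i)) (carrier (G i))" by (simp add: iso_def)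
  qed
  have \<psi>\<phi>: "\<And>i k g. i \<in> I \<Longrightarrow> k \<in> {1..n i} \<Longrightarrow> g \<in> carrier (G i) \<Longrightarrow> \<psi> i (\<sigma> i k) (\<phi> i k g) = g"
    unfolding \<psi>_def using \<rho>\<sigma> \<sigma>in by (simp add: bij_betw_inv_into_left[OF conjunct2[OF \<phi>]])
  have \<phi>\<psi>: "\<And>i k g. i \<in> I \<Longrightarrow> k \<in> {1..n i} \<Longrightarrow> g \<in> carrier (G i) \<Longrightarrow> \<phi> i (\<rho> i k) (\<psi> i k g) = g"
    unfolding \<psi>_def by (simp add: bij_betw_inv_into_right[OF conjunct2[OF \<phi>[OF _ \<rho>in]]])
  have \<phi>c: "\<And>i k g. i \<in> I \<Longrightarrow> k \<in> {1..n i} \<Longrightarrow> g \<in> carrier (G i) \<Longrightarrow> \<phi> i k g \<in> carrier (G i)"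
    by (rule hom_in_carrier[OF conjunct1[OF \<phi>]])
  have \<psi>c: "\<And>i k g. i \<in> I \<Longrightarrow> k \<in> {1..n i} \<Longrightarrow> g \<in> carrier (G i) \<Longrightarrow> \<psi> i k g \<in> carrier (G i)"
    by (rule hom_in_carrier[OF conjunct1[OF \<psi>h]])
  show ?thesis
  proof (rule iso_equiv[where Q = "mkF I n G \<rho> \<psi>"])
    show "is_functor (coprod_cat I n G) (coprod_cat I n G) (mkF I n G \<sigma> \<phi>)"
      by (rule mkF_functor) (use \<sigma>in \<phi> grp in auto)
    show "is_functor (coprod_cat I n G) (coprod_cat I n G) (mkF I n G \<rho> \<psi>)"
      by (rule mkF_functor) (use \<rho>in \<psi>h grp in auto)
  next
    fix x assume "x \<in> c_obj (coprod_cat I n G)"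
    then obtain i k where x: "x = (i, k)" "i \<in> I" "k \<in> {1..n i}" by (auto simp: co_obj)
    show "fst (mkF I n G \<rho> \<psi>) (fst (mkF I n G \<sigma> \<phi>) x) = x"
      using x \<sigma>in \<rho>\<sigma> by (simp add: mkF_o)
    show "fst (mkF I n G \<sigma> \<phi>) (fst (mkF I n G \<rho> \<psi>) x) = x"
      using x \<rho>in \<sigma>\<rho> by (simp add: mkF_o)
  next
    fix f assume "f \<in> mor (coprod_cat I n G)"
    then obtain i k g where f: "f = (i, k, g)" "i \<in> I" "k \<in> {1..n i}" "g \<in> carrier (G i)" by (auto simp: co_mor)
    show "snd (mkF I n G \<rho> \<psi>) (snd (mkF I n G \<sigma> \<phi>) f) = f"
      using f \<sigma>in \<rho>\<sigma> \<phi>c \<psi>\<phi> by (simp add: mkF_m)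
    show "snd (mkF I n G \<sigma> \<phi>) (snd (mkF I n G \<rho> \<psi>) f) = f"
      using f \<rho>in \<sigma>\<rho> \<psi>c \<phi>\<psi> by (simp add: mkF_m)
  qed (rule co_laws[OF grp], assumption+)+
qed


lemma wr_obj_iff': "p \<in> c_obj (wreath n M) \<longleftrightarrow> fst p permutes {1..n} \<and> snd p \<in> extensional {1..n} \<and> (\<forall>k\<in>{1..n}. snd p k \<in> c_obj M)"
  by (cases p) (simp add: wr_obj_iff)

abbreviation "BB I n G \<equiv> prod_mcat I (\<lambda>i. wreath (n i) (Sym_2grp (grp_cat (G i))))"

definition PsiO :: "'i set \<Rightarrow> ('i \<Rightarrow> nat) \<Rightarrow> ('i \<Rightarrow> 'g monoid) \<Rightarrow> ('i \<Rightarrow> (nat \<Rightarrow> nat) \<times> (nat \<Rightarrow> (unit \<Rightarrow> unit) \<times> ('g \<Rightarrow> 'g)))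
   \<Rightarrow> ('i \<times> nat \<Rightarrow> 'i \<times> nat) \<times> ('i \<times> nat \<times> 'g \<Rightarrow> 'i \<times> nat \<times> 'g)" where
  "PsiO I n G D = mkF I n G (\<lambda>i. fst (D i)) (\<lambda>i k. snd (snd (D i) k))"

lemma wr_hom_iff':
  assumes "p \<in> c_obj (wreath n M)" "q \<in> c_obj (wreath n M)"
  shows "m \<in> c_hom (wreath n M) p q \<longleftrightarrow> fst m = fst p \<and> fst q = fst p \<and> snd m \<in> extensional {1..n} \<and>
     (\<forall>k\<in>{1..n}. snd m k \<in> c_hom M (snd p k) (snd q k))"
proof -
  obtain \<sigma> x \<tau> y where pq: "p = (\<sigma>, x)" "q = (\<tau>, y)" by (cases p, cases q)
  show ?thesis using assms unfolding pq by (cases m) (auto simp: wr_hom)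
qed

lemma symg_hom':
  fixes H :: "'g monoid" (structure)
  assumes H: "group H" and x: "x \<in> c_obj (Sym_2grp (grp_cat H))" and x': "x' \<in> c_obj (Sym_2grp (grp_cat H))"
  shows "t \<in> c_hom (Sym_2grp (grp_cat H)) x x' \<longleftrightarrow>
    fst t = x \<and> fst (snd t) = x' \<and> snd (snd t) () \<in> carrier H \<and> (\<forall>g\<in>carrier H. snd (snd t) () \<otimes> snd x g = snd x' g \<otimes> snd (snd t) ())"
  unfolding symg_hom[OF H x x'] by (cases t) auto

lemma mkF_cong:
  assumes "\<And>i k. i \<in> I \<Longrightarrow> k \<in> {1..n i} \<Longrightarrow> \<sigma> i k = \<sigma>' i k"
    and "\<And>i k g. i \<in> I \<Longrightarrow> k \<in> {1..n i} \<Longrightarrow> g \<in> carrier (G i) \<Longrightarrow> \<phi> i k g = \<phi>' i k g"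
  shows "mkF I n G \<sigma> \<phi> = mkF I n G \<sigma>' \<phi>'"
  unfolding mkF_def using assms by (auto intro!: restrict_ext simp: co_obj co_mor)

lemma mkF_natiso:
  assumes grp: "\<And>i. i \<in> I \<Longrightarrow> group (G i)"
    and \<sigma>: "\<And>i k. i \<in> I \<Longrightarrow> k \<in> {1..n i} \<Longrightarrow> \<sigma> i k \<in> {1..n i}"
    and a: "\<And>i k. i \<in> I \<Longrightarrow> k \<in> {1..n i} \<Longrightarrow> a i k \<in> carrier (G i)"
    and nat: "\<And>i k g. i \<in> I \<Longrightarrow> k \<in> {1..n i} \<Longrightarrow> g \<in> carrier (G i) \<Longrightarrow> a i k \<otimes>\<^bsub>G i\<^esub> \<phi> i k g = \<phi>' i k g \<otimes>\<^bsub>G i\<^esub> a i k"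
  shows "nat_iso (coprod_cat I n G) (coprod_cat I n G) (mkF I n G \<sigma> \<phi>) (mkF I n G \<sigma> \<phi>')
           (restrict (\<lambda>(i, k). (i, \<sigma> i k, a i k)) (c_obj (coprod_cat I n G)))"
  unfolding nat_iso_def nat_trans_def
proof (intro conjI ballI)
  fix x assume "x \<in> c_obj (coprod_cat I n G)"
  then obtain i k where x: "x = (i, k)" "i \<in> I" "k \<in> {1..n i}" by (auto simp: co_obj)
  show "restrict (\<lambda>(i, k). (i, \<sigma> i k, a i k)) (c_obj (coprod_cat I n G)) x
        \<in> c_hom (coprod_cat I n G) (fst (mkF I n G \<sigma> \<phi>) x) (fst (mkF I n G \<sigma> \<phi>') x)"
    using x \<sigma>[OF x(2,3)] a[OF x(2,3)] by (simp add: mkF_o co_obj_iff co_hom_iff)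
  interpret group "G i" using grp x by blast
  show "is_iso_in (coprod_cat I n G) (fst (mkF I n G \<sigma> \<phi>) x) (fst (mkF I n G \<sigma> \<phi>') x)
          (restrict (\<lambda>(i, k). (i, \<sigma> i k, a i k)) (c_obj (coprod_cat I n G)) x)"
  proof -
    have ak: "a i k \<in> carrier (G i)" and sk: "\<sigma> i k \<in> {1..n i}" using a[OF x(2,3)] \<sigma>[OF x(2,3)] .
    have "(i, \<sigma> i k, inv\<^bsub>G i\<^esub> (a i k)) \<in> c_hom (coprod_cat I n G) (i, \<sigma> i k) (i, \<sigma> i k)"
      using x(2) sk ak by (simp add: co_hom_iff)
    moreover have "(i, \<sigma> i k, a i k) \<in> c_hom (coprod_cat I n G) (i, \<sigma> i k) (i, \<sigma> i k)"
      using x(2) sk ak by (simp add: co_hom_iff)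
    ultimately show ?thesis
      unfolding is_iso_in_def using x sk ak
      by (auto simp: mkF_o co_obj_iff co_comp co_id intro!: bexI[of _ "(i, \<sigma> i k, inv\<^bsub>G i\<^esub> (a i k))"])
  qed
next
  fix x y f assume "x \<in> c_obj (coprod_cat I n G)" "y \<in> c_obj (coprod_cat I n G)" and f: "f \<in> c_hom (coprod_cat I n G) x y"
  obtain i k j l where xy: "x = (i, k)" "y = (j, l)" by (cases x, cases y)
  from f obtain g where g: "i \<in> I" "k \<in> {1..n i}" "j = i" "l = k" "f = (i, k, g)" "g \<in> carrier (G i)"
    unfolding xy co_hom_iff by blast
  show "c_comp (coprod_cat I n G) (restrict (\<lambda>(i, k). (i, \<sigma> i k, a i k)) (c_obj (coprod_cat I n G)) y) (snd (mkF I n G \<sigma> \<phi>) f) =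
        c_comp (coprod_cat I n G) (snd (mkF I n G \<sigma> \<phi>') f) (restrict (\<lambda>(i, k). (i, \<sigma> i k, a i k)) (c_obj (coprod_cat I n G)) x)"
    using g nat[OF g(1,2,6)] unfolding xy by (simp add: mkF_m co_obj_iff co_comp)
qed

definition srcB :: "'i set \<Rightarrow> ('i \<Rightarrow> nat) \<Rightarrow> ('i \<Rightarrow> (nat \<Rightarrow> nat) \<times> (nat \<Rightarrow> 'x \<times> 'x \<times> 'a)) \<Rightarrow> ('i \<Rightarrow> (nat \<Rightarrow> nat) \<times> (nat \<Rightarrow> 'x))" where
  "srcB I n m = (\<lambda>i\<in>I. (fst (m i), \<lambda>k\<in>{1..n i}. fst (snd (m i) k)))"
definition tgtB :: "'i set \<Rightarrow> ('i \<Rightarrow> nat) \<Rightarrow> ('i \<Rightarrow> (nat \<Rightarrow> nat) \<times> (nat \<Rightarrow> 'x \<times> 'x \<times> 'a)) \<Rightarrow> ('i \<Rightarrow> (nat \<Rightarrow> nat) \<times> (nat \<Rightarrow> 'x))" where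
  "tgtB I n m = (\<lambda>i\<in>I. (fst (m i), \<lambda>k\<in>{1..n i}. fst (snd (snd (m i) k))))"
definition PsiM where
  "PsiM I n G m = (PsiO I n G (srcB I n m), PsiO I n G (tgtB I n m),
     restrict (\<lambda>(i, k). (i, fst (m i) k, snd (snd (snd (m i) k)) ())) (c_obj (coprod_cat I n G)))"

lemma wr_tens': "m_tens (wreath n M) p q = (fst p \<circ> fst q, \<lambda>k\<in>{1..n}. m_tens M (snd p (fst q k)) (snd q k))"
  by (cases p, cases q) (simp add: wr_tens)
lemma wr_comp': "c_comp (wreath n M) g f = (fst g, \<lambda>k\<in>{1..n}. c_comp M (snd g k) (snd f k))"
  by (cases g, cases f) (simp add: wr_comp)
lemma wr_id': "c_id (wreath n M) p = (fst p, \<lambda>k\<in>{1..n}. c_id M (snd p k))"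
  by (cases p) (simp add: wr_id)
lemma wr_tensm': "m_tensm (wreath n M) f g = (fst f \<circ> fst g, \<lambda>k\<in>{1..n}. m_tensm M (snd f (fst g k)) (snd g k))"
  by (cases f, cases g) (simp add: wr_tensm)
lemma wr_assoc': "m_assoc (wreath n M) p q r = (fst p \<circ> fst q \<circ> fst r,
                    \<lambda>k\<in>{1..n}. m_assoc M (snd p (fst q (fst r k))) (snd q (fst r k)) (snd r k))"
  by (cases p, cases q, cases r) (simp add: wr_assoc)
lemma wr_lu': "m_lu (wreath n M) p = (fst p, \<lambda>k\<in>{1..n}. m_lu M (snd p k))"
  by (cases p) (simp add: wr_lu)
lemma wr_ru': "m_ru (wreath n M) p = (fst p, \<lambda>k\<in>{1..n}. m_ru M (snd p k))"
  by (cases p) (simp add: wr_ru)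

lemma Sym_comp': "c_comp (Sym_2grp C) g f = (fst f, fst (snd g), \<lambda>x\<in>c_obj C. c_comp C (snd (snd g) x) (snd (snd f) x))"
  by (cases g, cases f) (auto simp: Sym_comp)
lemma Sym_tensm': "m_tensm (Sym_2grp C) f g = (fcomp_r C (fst f) (fst g), fcomp_r C (fst (snd f)) (fst (snd g)),
                    \<lambda>x\<in>c_obj C. c_comp C (snd (snd f) (fst (fst (snd g)) x)) (snd (fst f) (snd (snd g) x)))"
  by (cases g, cases f) (auto simp: Sym_tensm)

lemma mkF_fcomp:
  assumes \<tau>: "\<And>i k. i \<in> I \<Longrightarrow> k \<in> {1..n i} \<Longrightarrow> \<tau> i k \<in> {1..n i}"
    and \<psi>: "\<And>i k g. i \<in> I \<Longrightarrow> k \<in> {1..n i} \<Longrightarrow> g \<in> carrier (G i) \<Longrightarrow> \<psi> i k g \<in> carrier (G i)"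
  shows "fcomp_r (coprod_cat I n G) (mkF I n G \<sigma> \<phi>) (mkF I n G \<tau> \<psi>) = mkF I n G (\<lambda>i k. \<sigma> i (\<tau> i k)) (\<lambda>i k g. \<phi> i (\<tau> i k) (\<psi> i k g))"
proof -
  have \<tau>1: "\<And>i k. i \<in> I \<Longrightarrow> Suc 0 \<le> k \<Longrightarrow> k \<le> n i \<Longrightarrow> Suc 0 \<le> \<tau> i k"
    and \<tau>2: "\<And>i k. i \<in> I \<Longrightarrow> Suc 0 \<le> k \<Longrightarrow> k \<le> n i \<Longrightarrow> \<tau> i k \<le> n i"
    using \<tau> by force+
  have 1: "restrict (\<lambda>x. fst (mkF I n G \<sigma> \<phi>) (fst (mkF I n G \<tau> \<psi>) x)) (c_obj (coprod_cat I n G)) =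
     fst (mkF I n G (\<lambda>i k. \<sigma> i (\<tau> i k)) (\<lambda>i k g. \<phi> i (\<tau> i k) (\<psi> i k g)))"
    unfolding mkF_def fst_conv
    by (rule restrict_ext) (auto simp: co_obj_iff \<tau>1 \<tau>2 co_obj)
  have 2: "restrict (\<lambda>f. snd (mkF I n G \<sigma> \<phi>) (snd (mkF I n G \<tau> \<psi>) f)) (mor (coprod_cat I n G)) =
     snd (mkF I n G (\<lambda>i k. \<sigma> i (\<tau> i k)) (\<lambda>i k g. \<phi> i (\<tau> i k) (\<psi> i k g)))"
    unfolding mkF_def snd_conv
    by (rule restrict_ext) (auto simp: co_mor_iff \<tau>1 \<tau>2 \<psi> co_mor)
  show ?thesis unfolding fcomp_r_def 1 2 by simp
qed

lemma mkF_idf: "mkF I n G (\<lambda>i k. k) (\<lambda>i k g. g) = (\<lambda>x\<in>c_obj (coprod_cat I n G). x, \<lambda>f\<in>mor (coprod_cat I n G). f)"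
  unfolding mkF_def by (auto intro!: restrict_ext simp: co_obj co_mor)

definition PhiO :: "'i set \<Rightarrow> ('i \<Rightarrow> nat) \<Rightarrow> ('i \<Rightarrow> 'g monoid) \<Rightarrow> ('i \<times> nat \<Rightarrow> 'i \<times> nat) \<times> ('i \<times> nat \<times> 'g \<Rightarrow> 'i \<times> nat \<times> 'g)
   \<Rightarrow> ('i \<Rightarrow> (nat \<Rightarrow> nat) \<times> (nat \<Rightarrow> (unit \<Rightarrow> unit) \<times> ('g \<Rightarrow> 'g)))" where
  "PhiO I n G F = (\<lambda>i\<in>I. (\<lambda>k. if k \<in> {1..n i} then snd (fst F (i, k)) else k,
       \<lambda>k\<in>{1..n i}. (\<lambda>u. (), \<lambda>g\<in>carrier (G i). snd (snd (snd F (i, k, g))))))"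

definition PhiM where
  "PhiM I n G m = (\<lambda>i\<in>I. (fst (PhiO I n G (fst m) i), \<lambda>k\<in>{1..n i}.
      (snd (PhiO I n G (fst m) i) k, snd (PhiO I n G (fst (snd m)) i) k, \<lambda>u. snd (snd (snd (snd m) (i, k))))))"

context
  fixes I :: "'i set" and n :: "'i \<Rightarrow> nat" and G :: "'i \<Rightarrow> 'g monoid"
  assumes grp: "\<And>i. i \<in> I \<Longrightarrow> group (G i)"
    and noniso: "\<And>i j. i \<in> I \<Longrightarrow> j \<in> I \<Longrightarrow> G i \<cong> G j \<Longrightarrow> i = j"
begin

lemma objB_iff:
  shows "D \<in> c_obj (BB I n G) \<longleftrightarrow> D \<in> extensional I \<and> (\<forall>i\<in>I. fst (D i) permutes {1..n i} \<and> snd (D i) \<in> extensional {1..n i}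
     \<and> (\<forall>k\<in>{1..n i}. aut (G i) (snd (snd (D i) k))))"
proof -
  have "c_obj (BB I n G) = (\<Pi>\<^sub>E i\<in>I. c_obj (wreath (n i) (Sym_2grp (grp_cat (G i)))))" by (simp add: prod_mcat_def)
  then show ?thesis by (auto simp: PiE_iff wr_obj_iff' symg_obj[OF grp])
qed

lemma PsiO_obj:
  assumes D: "D \<in> c_obj (BB I n G)"
  shows "PsiO I n G D \<in> c_obj (Sym_2grp (coprod_cat I n G))"
proof -
  have D': "\<And>i. i \<in> I \<Longrightarrow> fst (D i) permutes {1..n i}"
    "\<And>i k. i \<in> I \<Longrightarrow> k \<in> {1..n i} \<Longrightarrow> aut (G i) (snd (snd (D i) k))"
    using D[unfolded objB_iff] by auto
  have "is_equivalence (coprod_cat I n G) (coprod_cat I n G) (PsiO I n G D)"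
    unfolding PsiO_def
  proof (rule mkF_equiv[OF grp])
    fix i assume "i \<in> I"
    then show "bij_betw (fst (D i)) {1..n i} {1..n i}" by (rule permutes_imp_bij[OF D'(1)])
  next
    fix i k assume "i \<in> I" "k \<in> {1..n i}"
    then show "snd (snd (D i) k) \<in> hom (G i) (G i) \<and> bij_betw (snd (snd (D i) k)) (carrier (G i)) (carrier (G i))"
      using D'(2) unfolding aut_def by blast
  qed
  then show ?thesis by (simp add: Sym_obj PsiO_def mkF_ext)
qed

lemma homB_iff:
  assumes D: "D \<in> c_obj (BB I n G)" and D': "D' \<in> c_obj (BB I n G)"
  shows "m \<in> c_hom (BB I n G) D D' \<longleftrightarrow> m \<in> extensional I \<and> (\<forall>i\<in>I. fst (m i) = fst (D i) \<and> fst (D' i) = fst (D i) \<and>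
     snd (m i) \<in> extensional {1..n i} \<and>
     (\<forall>k\<in>{1..n i}. fst (snd (m i) k) = snd (D i) k \<and> fst (snd (snd (m i) k)) = snd (D' i) k \<and>
        snd (snd (snd (m i) k)) () \<in> carrier (G i) \<and>
        (\<forall>g\<in>carrier (G i). snd (snd (snd (m i) k)) () \<otimes>\<^bsub>G i\<^esub> snd (snd (D i) k) g = snd (snd (D' i) k) g \<otimes>\<^bsub>G i\<^esub> snd (snd (snd (m i) k)) ())))" (is "_ \<longleftrightarrow> ?R")
proof -
  have oD: "D \<in> (\<Pi>\<^sub>E i\<in>I. c_obj (wreath (n i) (Sym_2grp (grp_cat (G i)))))"
    and oD': "D' \<in> (\<Pi>\<^sub>E i\<in>I. c_obj (wreath (n i) (Sym_2grp (grp_cat (G i)))))"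
    using D D' by (simp_all add: prod_mcat_def)
  have h: "c_hom (BB I n G) D D' = (\<Pi>\<^sub>E i\<in>I. c_hom (wreath (n i) (Sym_2grp (grp_cat (G i)))) (D i) (D' i))"
    using oD oD' by (simp add: prod_mcat_def)
  have ok: "\<And>i k. i \<in> I \<Longrightarrow> k \<in> {1..n i} \<Longrightarrow> snd (D i) k \<in> c_obj (Sym_2grp (grp_cat (G i))) \<and> snd (D' i) k \<in> c_obj (Sym_2grp (grp_cat (G i)))"
    using oD oD' by (auto simp: PiE_iff wr_obj_iff')
  have "m \<in> c_hom (BB I n G) D D' \<longleftrightarrow> m \<in> extensional I \<and> (\<forall>i\<in>I. m i \<in> c_hom (wreath (n i) (Sym_2grp (grp_cat (G i)))) (D i) (D' i))"
    unfolding h PiE_iff by blast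
  also have "\<dots> \<longleftrightarrow> m \<in> extensional I \<and> (\<forall>i\<in>I. fst (m i) = fst (D i) \<and> fst (D' i) = fst (D i) \<and>
     snd (m i) \<in> extensional {1..n i} \<and> (\<forall>k\<in>{1..n i}. snd (m i) k \<in> c_hom (Sym_2grp (grp_cat (G i))) (snd (D i) k) (snd (D' i) k)))"
    using oD oD' by (auto simp: wr_hom_iff' PiE_iff)
  also have "\<dots> \<longleftrightarrow> ?R"
    using ok by (auto simp: symg_hom'[OF grp])
  finally show ?thesis .
qed

lemma srcB_tgtB:
  assumes D: "D \<in> c_obj (BB I n G)" and D': "D' \<in> c_obj (BB I n G)" and m: "m \<in> c_hom (BB I n G) D D'"
  shows "srcB I n m = D" "tgtB I n m = D'"
proof -
  have d: "D \<in> extensional I" "\<And>i. i \<in> I \<Longrightarrow> snd (D i) \<in> extensional {1..n i}"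
    and d': "D' \<in> extensional I" "\<And>i. i \<in> I \<Longrightarrow> snd (D' i) \<in> extensional {1..n i}"
    using D D' by (auto simp: objB_iff)
  note mm = m[unfolded homB_iff[OF D D']]
  show "srcB I n m = D"
  proof (rule ext)
    fix i show "srcB I n m i = D i"
    proof (cases "i \<in> I")
      case True
      have "(\<lambda>k\<in>{1..n i}. fst (snd (m i) k)) = snd (D i)"
        using mm True d(2)[OF True] by (auto simp: extensional_def fun_eq_iff)
      then show ?thesis using True mm by (simp add: srcB_def prod_eq_iff)
    next
      case False then show ?thesis using d(1) by (simp add: srcB_def extensional_def)
    qed
  qed
  show "tgtB I n m = D'"
  proof (rule ext)
    fix i show "tgtB I n m i = D' i"
    proof (cases "i \<in> I")
      case True
      have "(\<lambda>k\<in>{1..n i}. fst (snd (snd (m i) k))) = snd (D' i)"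
        using mm True d'(2)[OF True] by (auto simp: extensional_def fun_eq_iff)
      then show ?thesis using True mm by (simp add: tgtB_def prod_eq_iff)
    next
      case False then show ?thesis using d'(1) by (simp add: tgtB_def extensional_def)
    qed
  qed
qed

lemma PsiM_hom:
  assumes D: "D \<in> c_obj (BB I n G)" and D': "D' \<in> c_obj (BB I n G)" and m: "m \<in> c_hom (BB I n G) D D'"
  shows "PsiM I n G m \<in> c_hom (Sym_2grp (coprod_cat I n G)) (PsiO I n G D) (PsiO I n G D')"
proof -
  note mm = m[unfolded homB_iff[OF D D']]
  have pD: "\<And>i k. i \<in> I \<Longrightarrow> k \<in> {1..n i} \<Longrightarrow> fst (D i) k \<in> {1..n i}"
  proof -
    fix i k assume i: "i \<in> I" and k: "k \<in> {1..n i}"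
    have p: "fst (D i) permutes {1..n i}" using D i unfolding objB_iff by blast
    show "fst (D i) k \<in> {1..n i}" by (rule perm_in[OF p k])
  qed
  have e: "PsiO I n G D' = mkF I n G (\<lambda>i. fst (D i)) (\<lambda>i k. snd (snd (D' i) k))"
    unfolding PsiO_def by (rule mkF_cong) (use mm in auto)
  have e2: "restrict (\<lambda>(i, k). (i, fst (m i) k, snd (snd (snd (m i) k)) ())) (c_obj (coprod_cat I n G))
      = restrict (\<lambda>(i, k). (i, fst (D i) k, snd (snd (snd (m i) k)) ())) (c_obj (coprod_cat I n G))"
    using mm by (auto intro!: restrict_ext simp: co_obj)
  have ni: "nat_iso (coprod_cat I n G) (coprod_cat I n G) (PsiO I n G D) (PsiO I n G D')
     (restrict (\<lambda>(i, k). (i, fst (D i) k, snd (snd (snd (m i) k)) ())) (c_obj (coprod_cat I n G)))"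
    unfolding e unfolding PsiO_def
    by (rule mkF_natiso[OF grp pD]) (use mm in auto)
  show ?thesis
    unfolding PsiM_def srcB_tgtB[OF D D' m] e2
    using ni PsiO_obj[OF D] PsiO_obj[OF D'] by (simp add: Sym_hom)
qed

lemma mlaws_B: "mlaws (BB I n G)"
  by (rule mlaws_prod) (rule mlaws_wreath, rule mlaws_symg, rule grp)

lemma objB_D:
  assumes D: "D \<in> c_obj (BB I n G)" and i: "i \<in> I"
  shows "fst (D i) permutes {1..n i}" "\<And>k. k \<in> {1..n i} \<Longrightarrow> fst (D i) k \<in> {1..n i}"
    "\<And>k. k \<in> {1..n i} \<Longrightarrow> aut (G i) (snd (snd (D i) k))"
    "\<And>k g. k \<in> {1..n i} \<Longrightarrow> g \<in> carrier (G i) \<Longrightarrow> snd (snd (D i) k) g \<in> carrier (G i)"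
proof -
  show p: "fst (D i) permutes {1..n i}" using D i unfolding objB_iff by blast
  show "\<And>k. k \<in> {1..n i} \<Longrightarrow> fst (D i) k \<in> {1..n i}" by (rule perm_in[OF p])
  show a: "\<And>k. k \<in> {1..n i} \<Longrightarrow> aut (G i) (snd (snd (D i) k))" using D i unfolding objB_iff by blast
  show "\<And>k g. k \<in> {1..n i} \<Longrightarrow> g \<in> carrier (G i) \<Longrightarrow> snd (snd (D i) k) g \<in> carrier (G i)"
    by (rule aut_carrier[OF a])
qed

lemma objB_b:
  assumes D: "D \<in> c_obj (BB I n G)" and i: "i \<in> I"
  shows "\<And>k. Suc 0 \<le> k \<Longrightarrow> k \<le> n i \<Longrightarrow> Suc 0 \<le> fst (D i) k"
    "\<And>k. Suc 0 \<le> k \<Longrightarrow> k \<le> n i \<Longrightarrow> fst (D i) k \<le> n i"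
  using objB_D(2)[OF D i] by force+

lemma PsiO_tens:
  assumes D1: "D1 \<in> c_obj (BB I n G)" and D2: "D2 \<in> c_obj (BB I n G)"
  shows "PsiO I n G (m_tens (BB I n G) D1 D2) = m_tens (Sym_2grp (coprod_cat I n G)) (PsiO I n G D1) (PsiO I n G D2)"
proof -
  have "m_tens (Sym_2grp (coprod_cat I n G)) (PsiO I n G D1) (PsiO I n G D2) =
     mkF I n G (\<lambda>i k. fst (D1 i) (fst (D2 i) k)) (\<lambda>i k g. snd (snd (D1 i) (fst (D2 i) k)) (snd (snd (D2 i) k) g))"
    unfolding Sym_tens PsiO_def
    by (rule mkF_fcomp) (auto intro: objB_D[OF D2] simp: objB_b[OF D2])
  also have "\<dots> = PsiO I n G (m_tens (BB I n G) D1 D2)"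
    unfolding PsiO_def
    by (rule mkF_cong) (auto simp: prod_mcat_def wr_tens' Sym_tens fcomp_r_grp objB_D[OF D2] objB_b[OF D2])
  finally show ?thesis by simp
qed

lemma PsiO_unit: "PsiO I n G (m_unit (BB I n G)) = m_unit (Sym_2grp (coprod_cat I n G))"
proof -
  have "PsiO I n G (m_unit (BB I n G)) = mkF I n G (\<lambda>i k. k) (\<lambda>i k g. g)"
    unfolding PsiO_def by (rule mkF_cong) (auto simp: prod_mcat_def wr_unit Sym_unit)
  then show ?thesis by (simp add: mkF_idf Sym_unit)
qed

lemma PsiM_eq:
  assumes D: "D \<in> c_obj (BB I n G)" and D': "D' \<in> c_obj (BB I n G)" and m: "m \<in> c_hom (BB I n G) D D'"
  shows "PsiM I n G m = (PsiO I n G D, PsiO I n G D',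
     restrict (\<lambda>(i, k). (i, fst (D i) k, snd (snd (snd (m i) k)) ())) (c_obj (coprod_cat I n G)))"
proof -
  note mm = m[unfolded homB_iff[OF D D']]
  have "restrict (\<lambda>(i, k). (i, fst (m i) k, snd (snd (snd (m i) k)) ())) (c_obj (coprod_cat I n G))
      = restrict (\<lambda>(i, k). (i, fst (D i) k, snd (snd (snd (m i) k)) ())) (c_obj (coprod_cat I n G))"
    using mm by (auto intro!: restrict_ext simp: co_obj)
  then show ?thesis unfolding PsiM_def srcB_tgtB[OF D D' m] by simp
qed

lemma homB_D:
  assumes D: "D \<in> c_obj (BB I n G)" and D': "D' \<in> c_obj (BB I n G)" and m: "m \<in> c_hom (BB I n G) D D'" and i: "i \<in> I"
  shows "fst (m i) = fst (D i)" "fst (D' i) = fst (D i)"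
    "\<And>k. k \<in> {1..n i} \<Longrightarrow> fst (snd (m i) k) = snd (D i) k"
    "\<And>k. k \<in> {1..n i} \<Longrightarrow> fst (snd (snd (m i) k)) = snd (D' i) k"
    "\<And>k. k \<in> {1..n i} \<Longrightarrow> snd (snd (snd (m i) k)) () \<in> carrier (G i)"
  using m[unfolded homB_iff[OF D D']] i by auto

lemma PsiM_comp:
  assumes D1: "D1 \<in> c_obj (BB I n G)" and D2: "D2 \<in> c_obj (BB I n G)" and D3: "D3 \<in> c_obj (BB I n G)"
    and f: "f \<in> c_hom (BB I n G) D1 D2" and g: "g \<in> c_hom (BB I n G) D2 D3"
  shows "PsiM I n G (c_comp (BB I n G) g f) = c_comp (Sym_2grp (coprod_cat I n G)) (PsiM I n G g) (PsiM I n G f)"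
proof -
  have c: "c_comp (BB I n G) g f \<in> c_hom (BB I n G) D1 D3" by (rule mlaws.comp_hom[OF mlaws_B D1 D2 D3 f g])
  show ?thesis
    unfolding PsiM_eq[OF D1 D3 c] PsiM_eq[OF D1 D2 f] PsiM_eq[OF D2 D3 g] Sym_comp'
    by (auto intro!: restrict_ext simp: co_obj prod_mcat_def wr_comp' Sym_comp' co_comp homB_D[OF D1 D2 f] homB_D[OF D2 D3 g])
qed

lemma PsiM_id:
  assumes D: "D \<in> c_obj (BB I n G)"
  shows "PsiM I n G (c_id (BB I n G) D) = c_id (Sym_2grp (coprod_cat I n G)) (PsiO I n G D)"
proof -
  have c: "c_id (BB I n G) D \<in> c_hom (BB I n G) D D" by (rule mlaws.id_hom[OF mlaws_B D])
  show ?thesis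
    unfolding PsiM_eq[OF D D c] Sym_id
    by (auto intro!: restrict_ext simp: co_obj prod_mcat_def wr_id' Sym_id co_id PsiO_def mkF_o objB_D[OF D])
qed

lemma PsiM_tensm:
  assumes D1: "D1 \<in> c_obj (BB I n G)" and D1': "D1' \<in> c_obj (BB I n G)" and D2: "D2 \<in> c_obj (BB I n G)" and D2': "D2' \<in> c_obj (BB I n G)"
    and f: "f \<in> c_hom (BB I n G) D1 D1'" and g: "g \<in> c_hom (BB I n G) D2 D2'"
  shows "PsiM I n G (m_tensm (BB I n G) f g) = m_tensm (Sym_2grp (coprod_cat I n G)) (PsiM I n G f) (PsiM I n G g)"
proof -
  have o: "m_tens (BB I n G) D1 D2 \<in> c_obj (BB I n G)" "m_tens (BB I n G) D1' D2' \<in> c_obj (BB I n G)"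
    by (rule mlaws.tens_obj[OF mlaws_B D1 D2], rule mlaws.tens_obj[OF mlaws_B D1' D2'])
  have c: "m_tensm (BB I n G) f g \<in> c_hom (BB I n G) (m_tens (BB I n G) D1 D2) (m_tens (BB I n G) D1' D2')"
    by (rule mlaws.tensm_hom[OF mlaws_B D1 D1' D2 D2' f g])
  have e3: "restrict (\<lambda>(i, k). (i, fst (m_tens (BB I n G) D1 D2 i) k, snd (snd (snd (m_tensm (BB I n G) f g i) k)) ())) (c_obj (coprod_cat I n G))
    = (\<lambda>x\<in>c_obj (coprod_cat I n G). c_comp (coprod_cat I n G)
         (restrict (\<lambda>(i, k). (i, fst (D1 i) k, snd (snd (snd (f i) k)) ())) (c_obj (coprod_cat I n G)) (fst (PsiO I n G D2') x))
         (snd (PsiO I n G D1) (restrict (\<lambda>(i, k). (i, fst (D2 i) k, snd (snd (snd (g i) k)) ())) (c_obj (coprod_cat I n G)) x)))"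
  proof (rule restrict_ext)
    fix x assume "x \<in> c_obj (coprod_cat I n G)"
    then obtain i k where x: "x = (i, k)" "i \<in> I" "k \<in> {1..n i}" by (auto simp: co_obj)
    have s2: "fst (D2 i) k \<in> {1..n i}" by (rule objB_D(2)[OF D2 x(2,3)])
    have ag: "snd (snd (snd (g i) k)) () \<in> carrier (G i)" by (rule homB_D(5)[OF D2 D2' g x(2,3)])
    have e2': "fst (PsiO I n G D2') (i, k) = (i, fst (D2 i) k)"
      using x homB_D(2)[OF D2 D2' g x(2)] by (simp add: PsiO_def mkF_o)
    show "(case x of (i, k) \<Rightarrow> (i, fst (m_tens (BB I n G) D1 D2 i) k, snd (snd (snd (m_tensm (BB I n G) f g i) k)) ())) =
      c_comp (coprod_cat I n G)
         (restrict (\<lambda>(i, k). (i, fst (D1 i) k, snd (snd (snd (f i) k)) ())) (c_obj (coprod_cat I n G)) (fst (PsiO I n G D2') x))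
         (snd (PsiO I n G D1) (restrict (\<lambda>(i, k). (i, fst (D2 i) k, snd (snd (snd (g i) k)) ())) (c_obj (coprod_cat I n G)) x))"
      unfolding x(1) e2'
      using x s2 ag
      by (simp add: co_obj_iff prod_mcat_def wr_tens' wr_tensm' Sym_tensm' co_comp PsiO_def mkF_m homB_D[OF D1 D1' f x(2)]
          homB_D[OF D2 D2' g x(2)])
  qed
  show ?thesis
    unfolding PsiM_eq[OF o c] PsiM_eq[OF D1 D1' f] PsiM_eq[OF D2 D2' g] Sym_tensm'
    using PsiO_tens[OF D1 D2] PsiO_tens[OF D1' D2'] e3 by (simp add: Sym_tens)
qed

lemma PsiM_assoc:
  assumes D1: "D1 \<in> c_obj (BB I n G)" and D2: "D2 \<in> c_obj (BB I n G)" and D3: "D3 \<in> c_obj (BB I n G)"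
  shows "PsiM I n G (m_assoc (BB I n G) D1 D2 D3) = m_assoc (Sym_2grp (coprod_cat I n G)) (PsiO I n G D1) (PsiO I n G D2) (PsiO I n G D3)"
proof -
  interpret b: mlaws "BB I n G" by (rule mlaws_B)
  have o: "m_tens (BB I n G) D1 (m_tens (BB I n G) D2 D3) \<in> c_obj (BB I n G)" "m_tens (BB I n G) (m_tens (BB I n G) D1 D2) D3 \<in> c_obj (BB I n G)"
    "m_tens (BB I n G) D2 D3 \<in> c_obj (BB I n G)" "m_tens (BB I n G) D1 D2 \<in> c_obj (BB I n G)"
    using D1 D2 D3 by (auto intro!: b.tens_obj)
  have c: "m_assoc (BB I n G) D1 D2 D3 \<in> c_hom (BB I n G) (m_tens (BB I n G) D1 (m_tens (BB I n G) D2 D3)) (m_tens (BB I n G) (m_tens (BB I n G) D1 D2) D3)"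
    by (rule b.assoc_hom[OF D1 D2 D3])
  have e1: "PsiO I n G (m_tens (BB I n G) D1 (m_tens (BB I n G) D2 D3)) = fcomp_r (coprod_cat I n G) (PsiO I n G D1) (fcomp_r (coprod_cat I n G) (PsiO I n G D2) (PsiO I n G D3))"
    using PsiO_tens[OF D1 o(3)] PsiO_tens[OF D2 D3] by (simp add: Sym_tens)
  have e2: "PsiO I n G (m_tens (BB I n G) (m_tens (BB I n G) D1 D2) D3) = fcomp_r (coprod_cat I n G) (fcomp_r (coprod_cat I n G) (PsiO I n G D1) (PsiO I n G D2)) (PsiO I n G D3)"
    using PsiO_tens[OF o(4) D3] PsiO_tens[OF D1 D2] by (simp add: Sym_tens)
  have e3: "restrict (\<lambda>(i, k). (i, fst (m_tens (BB I n G) D1 (m_tens (BB I n G) D2 D3) i) k, snd (snd (snd (m_assoc (BB I n G) D1 D2 D3 i) k)) ())) (c_obj (coprod_cat I n G))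
    = (\<lambda>x\<in>c_obj (coprod_cat I n G). c_id (coprod_cat I n G) (fst (PsiO I n G D1) (fst (PsiO I n G D2) (fst (PsiO I n G D3) x))))"
  proof (rule restrict_ext)
    fix x assume "x \<in> c_obj (coprod_cat I n G)"
    then obtain i k where x: "x = (i, k)" "i \<in> I" "k \<in> {1..n i}" by (auto simp: co_obj)
    have s3: "fst (D3 i) k \<in> {1..n i}" by (rule objB_D(2)[OF D3 x(2,3)])
    have s2: "fst (D2 i) (fst (D3 i) k) \<in> {1..n i}" by (rule objB_D(2)[OF D2 x(2) s3])
    show "(case x of (i, k) \<Rightarrow> (i, fst (m_tens (BB I n G) D1 (m_tens (BB I n G) D2 D3) i) k, snd (snd (snd (m_assoc (BB I n G) D1 D2 D3 i) k)) ())) =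
       c_id (coprod_cat I n G) (fst (PsiO I n G D1) (fst (PsiO I n G D2) (fst (PsiO I n G D3) x)))"
      using x s3 s2 by (simp add: prod_mcat_def wr_tens' wr_assoc' Sym_assoc co_id PsiO_def mkF_o)
  qed
  show ?thesis
    unfolding PsiM_eq[OF o(1,2) c] e1 e2 e3 by (simp add: Sym_assoc)
qed

lemma PsiM_lu:
  assumes D: "D \<in> c_obj (BB I n G)"
  shows "PsiM I n G (m_lu (BB I n G) D) = m_lu (Sym_2grp (coprod_cat I n G)) (PsiO I n G D)"
proof -
  interpret b: mlaws "BB I n G" by (rule mlaws_B)
  have o: "m_tens (BB I n G) (m_unit (BB I n G)) D \<in> c_obj (BB I n G)"
    using D by (auto intro!: b.tens_obj b.unit_obj)
  have c: "m_lu (BB I n G) D \<in> c_hom (BB I n G) (m_tens (BB I n G) (m_unit (BB I n G)) D) D"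
    by (rule b.lu_hom[OF D])
  have e1: "PsiO I n G (m_tens (BB I n G) (m_unit (BB I n G)) D) = fcomp_r (coprod_cat I n G) (\<lambda>x\<in>c_obj (coprod_cat I n G). x, \<lambda>f\<in>mor (coprod_cat I n G). f) (PsiO I n G D)"
    using PsiO_tens[OF b.unit_obj D] PsiO_unit by (simp add: Sym_tens Sym_unit)
  have e3: "restrict (\<lambda>(i, k). (i, fst (m_tens (BB I n G) (m_unit (BB I n G)) D i) k, snd (snd (snd (m_lu (BB I n G) D i) k)) ())) (c_obj (coprod_cat I n G))
    = (\<lambda>x\<in>c_obj (coprod_cat I n G). c_id (coprod_cat I n G) (fst (PsiO I n G D) x))"
  proof (rule restrict_ext)
    fix x assume "x \<in> c_obj (coprod_cat I n G)"
    then obtain i k where x: "x = (i, k)" "i \<in> I" "k \<in> {1..n i}" by (auto simp: co_obj)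
    show "(case x of (i, k) \<Rightarrow> (i, fst (m_tens (BB I n G) (m_unit (BB I n G)) D i) k, snd (snd (snd (m_lu (BB I n G) D i) k)) ())) =
       c_id (coprod_cat I n G) (fst (PsiO I n G D) x)"
      using x by (simp add: prod_mcat_def wr_tens' wr_unit wr_lu' Sym_lu co_id PsiO_def mkF_o)
  qed
  show ?thesis
    unfolding PsiM_eq[OF o D c] e1 e3 by (simp add: Sym_lu)
qed

lemma PsiM_ru:
  assumes D: "D \<in> c_obj (BB I n G)"
  shows "PsiM I n G (m_ru (BB I n G) D) = m_ru (Sym_2grp (coprod_cat I n G)) (PsiO I n G D)"
proof -
  interpret b: mlaws "BB I n G" by (rule mlaws_B)
  have o: "m_tens (BB I n G) D (m_unit (BB I n G)) \<in> c_obj (BB I n G)"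
    using D by (auto intro!: b.tens_obj b.unit_obj)
  have c: "m_ru (BB I n G) D \<in> c_hom (BB I n G) (m_tens (BB I n G) D (m_unit (BB I n G))) D"
    by (rule b.ru_hom[OF D])
  have e1: "PsiO I n G (m_tens (BB I n G) D (m_unit (BB I n G))) = fcomp_r (coprod_cat I n G) (PsiO I n G D) (\<lambda>x\<in>c_obj (coprod_cat I n G). x, \<lambda>f\<in>mor (coprod_cat I n G). f)"
    using PsiO_tens[OF D b.unit_obj] PsiO_unit by (simp add: Sym_tens Sym_unit)
  have e3: "restrict (\<lambda>(i, k). (i, fst (m_tens (BB I n G) D (m_unit (BB I n G)) i) k, snd (snd (snd (m_ru (BB I n G) D i) k)) ())) (c_obj (coprod_cat I n G))
    = (\<lambda>x\<in>c_obj (coprod_cat I n G). c_id (coprod_cat I n G) (fst (PsiO I n G D) x))"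
  proof (rule restrict_ext)
    fix x assume "x \<in> c_obj (coprod_cat I n G)"
    then obtain i k where x: "x = (i, k)" "i \<in> I" "k \<in> {1..n i}" by (auto simp: co_obj)
    show "(case x of (i, k) \<Rightarrow> (i, fst (m_tens (BB I n G) D (m_unit (BB I n G)) i) k, snd (snd (snd (m_ru (BB I n G) D i) k)) ())) =
       c_id (coprod_cat I n G) (fst (PsiO I n G D) x)"
      using x by (simp add: prod_mcat_def wr_tens' wr_unit wr_ru' Sym_ru co_id PsiO_def mkF_o)
  qed
  show ?thesis
    unfolding PsiM_eq[OF o D c] e1 e3 by (simp add: Sym_ru)
qed

lemma equiv_analysis:
  assumes F: "F \<in> c_obj (Sym_2grp (coprod_cat I n G))" and i: "i \<in> I" and k: "k \<in> {1..n i}"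
  shows "fst F (i, k) = (i, snd (fst F (i, k)))" "snd (fst F (i, k)) \<in> {1..n i}"
    "\<And>g. g \<in> carrier (G i) \<Longrightarrow> snd F (i, k, g) = (i, snd (fst F (i, k)), snd (snd (snd F (i, k, g))))"
    "aut (G i) (\<lambda>g\<in>carrier (G i). snd (snd (snd F (i, k, g))))"
proof -
  let ?C = "coprod_cat I n G"
  have eqv: "is_equivalence ?C ?C F" using F by (simp add: Sym_obj)
  then obtain Q \<eta> \<epsilon> where fF: "is_functor ?C ?C F" and fQ: "is_functor ?C ?C Q"
    and \<eta>: "nat_iso ?C ?C (id, id) (fcomp Q F) \<eta>" and \<epsilon>: "nat_iso ?C ?C (fcomp F Q) (id, id) \<epsilon>"
    unfolding is_equivalence_def by blast
  have Fo: "\<And>x. x \<in> c_obj ?C \<Longrightarrow> fst F x \<in> c_obj ?C"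
    and Fh: "\<And>x y f. x \<in> c_obj ?C \<Longrightarrow> y \<in> c_obj ?C \<Longrightarrow> f \<in> c_hom ?C x y \<Longrightarrow> snd F f \<in> c_hom ?C (fst F x) (fst F y)"
    and Fc: "\<And>x y z f g. x \<in> c_obj ?C \<Longrightarrow> y \<in> c_obj ?C \<Longrightarrow> z \<in> c_obj ?C \<Longrightarrow> f \<in> c_hom ?C x y \<Longrightarrow> g \<in> c_hom ?C y z \<Longrightarrow>
        snd F (c_comp ?C g f) = c_comp ?C (snd F g) (snd F f)"
    using fF unfolding is_functor_def by blast+
  have Qo: "\<And>x. x \<in> c_obj ?C \<Longrightarrow> fst Q x \<in> c_obj ?C"
    and Qh: "\<And>x y f. x \<in> c_obj ?C \<Longrightarrow> y \<in> c_obj ?C \<Longrightarrow> f \<in> c_hom ?C x y \<Longrightarrow> snd Q f \<in> c_hom ?C (fst Q x) (fst Q y)"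
    using fQ unfolding is_functor_def by blast+
  have \<eta>h: "\<And>x. x \<in> c_obj ?C \<Longrightarrow> \<eta> x \<in> c_hom ?C x (fst Q (fst F x))"
    and \<eta>n: "\<And>x y f. x \<in> c_obj ?C \<Longrightarrow> y \<in> c_obj ?C \<Longrightarrow> f \<in> c_hom ?C x y \<Longrightarrow>
        c_comp ?C (\<eta> y) f = c_comp ?C (snd Q (snd F f)) (\<eta> x)"
    using \<eta> unfolding nat_iso_def nat_trans_def fcomp_def by auto
  have \<epsilon>h: "\<And>x. x \<in> c_obj ?C \<Longrightarrow> \<epsilon> x \<in> c_hom ?C (fst F (fst Q x)) x"
    and \<epsilon>n: "\<And>x y f. x \<in> c_obj ?C \<Longrightarrow> y \<in> c_obj ?C \<Longrightarrow> f \<in> c_hom ?C x y \<Longrightarrow>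
        c_comp ?C (\<epsilon> y) (snd F (snd Q f)) = c_comp ?C f (\<epsilon> x)"
    using \<epsilon> unfolding nat_iso_def nat_trans_def fcomp_def by auto
  have x: "(i, k) \<in> c_obj ?C" using i k by (simp add: co_obj_iff)
  obtain j l where jl: "fst F (i, k) = (j, l)" by (cases "fst F (i, k)")
  have y: "(j, l) \<in> c_obj ?C" using Fo[OF x] jl by simp
  then have j: "j \<in> I" and l: "l \<in> {1..n j}" by (auto simp: co_obj_iff)
  define \<phi> where "\<phi> g = snd (snd (snd F (i, k, g)))" for g
  have fi: "\<And>g. g \<in> carrier (G i) \<Longrightarrow> (i, k, g) \<in> c_hom ?C (i, k) (i, k)"
    using i k by (simp add: co_hom_iff)
  have \<phi>e: "\<And>g. g \<in> carrier (G i) \<Longrightarrow> snd F (i, k, g) = (j, l, \<phi> g) \<and> \<phi> g \<in> carrier (G j)"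
  proof -
    fix g assume g: "g \<in> carrier (G i)"
    have "snd F (i, k, g) \<in> c_hom ?C (j, l) (j, l)" using Fh[OF x x fi[OF g]] jl by simp
    then show "snd F (i, k, g) = (j, l, \<phi> g) \<and> \<phi> g \<in> carrier (G j)"
      unfolding co_hom_iff \<phi>_def by auto
  qed
  interpret gi: group "G i" using grp i by blast
  interpret gj: group "G j" using grp j by blast
  have \<phi>m: "\<And>g h. g \<in> carrier (G i) \<Longrightarrow> h \<in> carrier (G i) \<Longrightarrow> \<phi> (h \<otimes>\<^bsub>G i\<^esub> g) = \<phi> h \<otimes>\<^bsub>G j\<^esub> \<phi> g"
  proof -
    fix g h assume g: "g \<in> carrier (G i)" and h: "h \<in> carrier (G i)"
    have "snd F (c_comp ?C (i, k, h) (i, k, g)) = c_comp ?C (snd F (i, k, h)) (snd F (i, k, g))"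
      by (rule Fc[OF x x x fi[OF g] fi[OF h]])
    then show "\<phi> (h \<otimes>\<^bsub>G i\<^esub> g) = \<phi> h \<otimes>\<^bsub>G j\<^esub> \<phi> g"
      using \<phi>e[OF g] \<phi>e[OF h] \<phi>e[OF gi.m_closed[OF h g]] by (simp add: co_comp)
  qed
  obtain i' k' where q: "fst Q (j, l) = (i', k')" by (cases "fst Q (j, l)")
  have "\<eta> (i, k) \<in> c_hom ?C (i, k) (i', k')" using \<eta>h[OF x] jl q by simp
  then have "i' = i \<and> k' = k \<and> (\<exists>a. \<eta> (i, k) = (i, k, a) \<and> a \<in> carrier (G i))" unfolding co_hom_iff by auto
  then have Qjl: "fst Q (j, l) = (i, k)" and a: "\<exists>a. \<eta> (i, k) = (i, k, a) \<and> a \<in> carrier (G i)"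
    using q by auto
  then obtain a where a: "\<eta> (i, k) = (i, k, a)" "a \<in> carrier (G i)" by blast
  define \<psi> where "\<psi> h = snd (snd (snd Q (j, l, h)))" for h
  have fj: "\<And>h. h \<in> carrier (G j) \<Longrightarrow> (j, l, h) \<in> c_hom ?C (j, l) (j, l)"
    using j l by (simp add: co_hom_iff)
  have \<psi>e: "\<And>h. h \<in> carrier (G j) \<Longrightarrow> snd Q (j, l, h) = (i, k, \<psi> h) \<and> \<psi> h \<in> carrier (G i)"
  proof -
    fix h assume h: "h \<in> carrier (G j)"
    have "snd Q (j, l, h) \<in> c_hom ?C (i, k) (i, k)" using Qh[OF y y fj[OF h]] Qjl by simp
    then show "snd Q (j, l, h) = (i, k, \<psi> h) \<and> \<psi> h \<in> carrier (G i)"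
      unfolding co_hom_iff \<psi>_def by auto
  qed
  have FQ: "fst F (fst Q (j, l)) = (j, l)" using Qjl jl by simp
  have "\<epsilon> (j, l) \<in> c_hom ?C (j, l) (j, l)" using \<epsilon>h[OF y] FQ by simp
  then obtain b where b: "\<epsilon> (j, l) = (j, l, b)" "b \<in> carrier (G j)"
    unfolding co_hom_iff by blast
  have an: "\<And>g. g \<in> carrier (G i) \<Longrightarrow> a \<otimes>\<^bsub>G i\<^esub> g = \<psi> (\<phi> g) \<otimes>\<^bsub>G i\<^esub> a"
  proof -
    fix g assume g: "g \<in> carrier (G i)"
    have "c_comp ?C (\<eta> (i, k)) (i, k, g) = c_comp ?C (snd Q (snd F (i, k, g))) (\<eta> (i, k))"
      by (rule \<eta>n[OF x x fi[OF g]])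
    then show "a \<otimes>\<^bsub>G i\<^esub> g = \<psi> (\<phi> g) \<otimes>\<^bsub>G i\<^esub> a"
      using a \<phi>e[OF g] \<psi>e[OF conjunct2[OF \<phi>e[OF g]]] by (simp add: co_comp)
  qed
  have bn: "\<And>h. h \<in> carrier (G j) \<Longrightarrow> b \<otimes>\<^bsub>G j\<^esub> \<phi> (\<psi> h) = h \<otimes>\<^bsub>G j\<^esub> b"
  proof -
    fix h assume h: "h \<in> carrier (G j)"
    have "c_comp ?C (\<epsilon> (j, l)) (snd F (snd Q (j, l, h))) = c_comp ?C (j, l, h) (\<epsilon> (j, l))"
      by (rule \<epsilon>n[OF y y fj[OF h]])
    then show "b \<otimes>\<^bsub>G j\<^esub> \<phi> (\<psi> h) = h \<otimes>\<^bsub>G j\<^esub> b"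
      using b \<psi>e[OF h] \<phi>e[OF conjunct2[OF \<psi>e[OF h]]] by (simp add: co_comp)
  qed
  have inj: "inj_on \<phi> (carrier (G i))"
  proof (rule inj_onI)
    fix g g' assume g: "g \<in> carrier (G i)" and g': "g' \<in> carrier (G i)" and e: "\<phi> g = \<phi> g'"
    have "a \<otimes>\<^bsub>G i\<^esub> g = a \<otimes>\<^bsub>G i\<^esub> g'" using an[OF g] an[OF g'] e by simp
    then show "g = g'" using g g' a(2) by simp
  qed
  have sur: "\<phi> ` carrier (G i) = carrier (G j)"
  proof
    show "\<phi> ` carrier (G i) \<subseteq> carrier (G j)" using \<phi>e by blast
  next
    show "carrier (G j) \<subseteq> \<phi> ` carrier (G i)"
    proof
      fix h assume h: "h \<in> carrier (G j)"
      define h' where "h' = b \<otimes>\<^bsub>G j\<^esub> h \<otimes>\<^bsub>G j\<^esub> inv\<^bsub>G j\<^esub> b"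
      have h': "h' \<in> carrier (G j)" unfolding h'_def using h b(2) by simp
      have c1: "\<phi> (\<psi> h') \<in> carrier (G j)" using \<phi>e[OF conjunct2[OF \<psi>e[OF h']]] by blast
      have "b \<otimes>\<^bsub>G j\<^esub> \<phi> (\<psi> h') = h' \<otimes>\<^bsub>G j\<^esub> b" by (rule bn[OF h'])
      also have "\<dots> = b \<otimes>\<^bsub>G j\<^esub> h" unfolding h'_def using h b(2) by (simp add: gj.m_assoc)
      finally have "\<phi> (\<psi> h') = h" using h b(2) c1 by simp
      then show "h \<in> \<phi> ` carrier (G i)" using \<psi>e[OF h'] by force
    qed
  qed
  have hom: "\<phi> \<in> hom (G i) (G j)" unfolding hom_def using \<phi>e \<phi>m by auto
  have "\<phi> \<in> iso (G i) (G j)" using hom inj sur by (simp add: iso_def bij_betw_def)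
  then have "G i \<cong> G j" by (rule is_isoI)
  then have ji: "j = i" using noniso[OF i j] by simp
  show "fst F (i, k) = (i, snd (fst F (i, k)))" using jl ji by simp
  show "snd (fst F (i, k)) \<in> {1..n i}" using jl ji l by simp
  show "\<And>g. g \<in> carrier (G i) \<Longrightarrow> snd F (i, k, g) = (i, snd (fst F (i, k)), snd (snd (snd F (i, k, g))))"
    using \<phi>e jl ji \<phi>_def by simp
  have "restrict \<phi> (carrier (G i)) \<in> hom (G i) (G i)" using hom ji by (simp add: hom_def Pi_def)
  moreover have "bij_betw (restrict \<phi> (carrier (G i))) (carrier (G i)) (carrier (G i))"
    using inj sur ji by (simp add: bij_betw_def inj_on_def)
  ultimately show "aut (G i) (\<lambda>g\<in>carrier (G i). snd (snd (snd F (i, k, g))))"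
    unfolding aut_def \<phi>_def[symmetric] by simp
qed

lemma equiv_Qinv:
  assumes F: "F \<in> c_obj (Sym_2grp (coprod_cat I n G))"
  shows "\<exists>Q :: ('i \<times> nat \<Rightarrow> 'i \<times> nat). \<forall>x\<in>c_obj (coprod_cat I n G). Q (fst F x) = x"
proof -
  let ?C = "coprod_cat I n G"
  have eqv: "is_equivalence ?C ?C F" using F by (simp add: Sym_obj)
  then obtain Q \<eta> where \<eta>: "nat_iso ?C ?C (id, id) (fcomp Q F) \<eta>"
    unfolding is_equivalence_def by blast
  have \<eta>h: "\<And>x. x \<in> c_obj ?C \<Longrightarrow> \<eta> x \<in> c_hom ?C x (fst Q (fst F x))"
    using \<eta> unfolding nat_iso_def nat_trans_def fcomp_def by auto
  have "\<forall>x\<in>c_obj ?C. fst Q (fst F x) = x"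
  proof
    fix x assume x: "x \<in> c_obj ?C"
    obtain i k where xe: "x = (i, k)" by (cases x)
    obtain i' k' where q: "fst Q (fst F x) = (i', k')" by (cases "fst Q (fst F x)")
    have "\<eta> x \<in> c_hom ?C (i, k) (i', k')" using \<eta>h[OF x] xe q by simp
    then have "i' = i \<and> k' = k" unfolding co_hom_iff by blast
    then show "fst Q (fst F x) = x" using q xe by simp
  qed
  then show ?thesis by (intro exI[of _ "fst Q"])
qed

lemma equiv_perm:
  assumes F: "F \<in> c_obj (Sym_2grp (coprod_cat I n G))" and i: "i \<in> I"
  shows "fst (PhiO I n G F i) permutes {1..n i}"
proof -
  let ?\<sigma> = "\<lambda>k. if k \<in> {1..n i} then snd (fst F (i, k)) else k"
  have e: "fst (PhiO I n G F i) = ?\<sigma>" using i by (simp add: PhiO_def)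
  obtain Q where Q: "\<forall>x\<in>c_obj (coprod_cat I n G). Q (fst F x) = x" using equiv_Qinv[OF F] by blast
  have into: "?\<sigma> ` {1..n i} \<subseteq> {1..n i}" using equiv_analysis(2)[OF F i] by auto
  have inj: "inj_on ?\<sigma> {1..n i}"
  proof (rule inj_onI)
    fix k k' assume k: "k \<in> {1..n i}" and k': "k' \<in> {1..n i}" and eq: "?\<sigma> k = ?\<sigma> k'"
    have "fst F (i, k) = fst F (i, k')"
      using equiv_analysis(1)[OF F i k] equiv_analysis(1)[OF F i k'] eq k k' by simp
    then have "Q (fst F (i, k)) = Q (fst F (i, k'))" by simp
    then show "k = k'" using Q i k k' by (simp add: co_obj_iff)
  qed
  have "bij_betw ?\<sigma> {1..n i} {1..n i}"
    unfolding bij_betw_def using inj endo_inj_surj[OF finite_atLeastAtMost into inj] by blast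
  then have "?\<sigma> permutes {1..n i}" by (rule bij_imp_permutes) (rule if_not_P)
  then show ?thesis using e by simp
qed

lemma PhiO_obj:
  assumes F: "F \<in> c_obj (Sym_2grp (coprod_cat I n G))"
  shows "PhiO I n G F \<in> c_obj (BB I n G)"
  unfolding objB_iff
proof (intro conjI ballI)
  show "PhiO I n G F \<in> extensional I" by (simp add: PhiO_def)
  fix i assume i: "i \<in> I"
  show "fst (PhiO I n G F i) permutes {1..n i}" by (rule equiv_perm[OF F i])
  show "snd (PhiO I n G F i) \<in> extensional {1..n i}" using i by (simp add: PhiO_def)
  fix k assume k: "k \<in> {1..n i}"
  show "aut (G i) (snd (snd (PhiO I n G F i) k))" using i k equiv_analysis(4)[OF F i k] by (simp add: PhiO_def)
qed

lemma PsiO_PhiO: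
  assumes F: "F \<in> c_obj (Sym_2grp (coprod_cat I n G))"
  shows "PsiO I n G (PhiO I n G F) = F"
proof -
  have ex: "fst F \<in> extensional (c_obj (coprod_cat I n G))" "snd F \<in> extensional (mor (coprod_cat I n G))"
    using F by (auto simp: Sym_obj ext_functor_def)
  have 1: "fst (PsiO I n G (PhiO I n G F)) = fst F"
  proof (rule extensionalityI[OF _ ex(1)])
    show "fst (PsiO I n G (PhiO I n G F)) \<in> extensional (c_obj (coprod_cat I n G))" by (simp add: PsiO_def mkF_def)
    fix x assume "x \<in> c_obj (coprod_cat I n G)"
    then obtain i k where x: "x = (i, k)" "i \<in> I" "k \<in> {1..n i}" by (auto simp: co_obj)
    show "fst (PsiO I n G (PhiO I n G F)) x = fst F x"
      using x equiv_analysis(1)[OF F x(2,3)] by (simp add: PsiO_def mkF_o PhiO_def)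
  qed
  have 2: "snd (PsiO I n G (PhiO I n G F)) = snd F"
  proof (rule extensionalityI[OF _ ex(2)])
    show "snd (PsiO I n G (PhiO I n G F)) \<in> extensional (mor (coprod_cat I n G))" by (simp add: PsiO_def mkF_def)
    fix f assume "f \<in> mor (coprod_cat I n G)"
    then obtain i k g where f: "f = (i, k, g)" "i \<in> I" "k \<in> {1..n i}" "g \<in> carrier (G i)" by (auto simp: co_mor)
    show "snd (PsiO I n G (PhiO I n G F)) f = snd F f"
      using f equiv_analysis(3)[OF F f(2,3,4)] by (simp add: PsiO_def mkF_m PhiO_def)
  qed
  show ?thesis using 1 2 by (simp add: prod_eq_iff)
qed

lemma unit_fun_eq: "(f :: unit \<Rightarrow> unit) = (\<lambda>u. ())" by (rule ext) simp

lemma PhiO_PsiO: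
  assumes D: "D \<in> c_obj (BB I n G)"
  shows "PhiO I n G (PsiO I n G D) = D"
proof (rule ext)
  fix i
  have dx: "D \<in> extensional I" using D by (simp add: objB_iff)
  show "PhiO I n G (PsiO I n G D) i = D i"
  proof (cases "i \<in> I")
    case False then show ?thesis using dx by (simp add: PhiO_def extensional_def)
  next
    case i: True
    have p: "fst (D i) permutes {1..n i}" by (rule objB_D(1)[OF D i])
    have sx: "snd (D i) \<in> extensional {1..n i}" using D i by (simp add: objB_iff)
    have e1: "(\<lambda>k. if k \<in> {1..n i} then snd (fst (PsiO I n G D) (i, k)) else k) = fst (D i)"
    proof (rule ext)
      fix k show "(if k \<in> {1..n i} then snd (fst (PsiO I n G D) (i, k)) else k) = fst (D i) k"
        using i p by (auto simp: PsiO_def mkF_o permutes_not_in)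
    qed
    have e2: "(\<lambda>k\<in>{1..n i}. (\<lambda>u. (), \<lambda>g\<in>carrier (G i). snd (snd (snd (PsiO I n G D) (i, k, g))))) = snd (D i)"
    proof (rule extensionalityI[OF _ sx])
      fix k assume k: "k \<in> {1..n i}"
      have a: "aut (G i) (snd (snd (D i) k))" by (rule objB_D(3)[OF D i k])
      then have ex: "snd (snd (D i) k) \<in> extensional (carrier (G i))" by (simp add: aut_def)
      have "(\<lambda>g\<in>carrier (G i). snd (snd (snd (PsiO I n G D) (i, k, g)))) = snd (snd (D i) k)"
        by (rule extensionalityI[OF _ ex]) (use i k in \<open>auto simp: PsiO_def mkF_m\<close>)
      then show "(\<lambda>k\<in>{1..n i}. (\<lambda>u. (), \<lambda>g\<in>carrier (G i). snd (snd (snd (PsiO I n G D) (i, k, g))))) k = snd (D i) k"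
        using k unit_fun_eq[of "fst (snd (D i) k)"] by (simp add: prod_eq_iff)
    qed auto
    show ?thesis using i e1 e2 by (simp add: PhiO_def prod_eq_iff)
  qed
qed

lemma homA_D:
  assumes F: "F \<in> c_obj (Sym_2grp (coprod_cat I n G))" and F': "F' \<in> c_obj (Sym_2grp (coprod_cat I n G))"
    and m: "m \<in> c_hom (Sym_2grp (coprod_cat I n G)) F F'"
  shows "m = (F, F', snd (snd m))" "snd (snd m) \<in> extensional (c_obj (coprod_cat I n G))"
    "\<And>i k. i \<in> I \<Longrightarrow> k \<in> {1..n i} \<Longrightarrow> snd (fst F' (i, k)) = snd (fst F (i, k))"
    "\<And>i k. i \<in> I \<Longrightarrow> k \<in> {1..n i} \<Longrightarrow> snd (snd m) (i, k) = (i, snd (fst F (i, k)), snd (snd (snd (snd m) (i, k))))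
        \<and> snd (snd (snd (snd m) (i, k))) \<in> carrier (G i)"
    "\<And>i k g. i \<in> I \<Longrightarrow> k \<in> {1..n i} \<Longrightarrow> g \<in> carrier (G i) \<Longrightarrow>
        snd (snd (snd (snd m) (i, k))) \<otimes>\<^bsub>G i\<^esub> snd (snd (snd F (i, k, g))) = snd (snd (snd F' (i, k, g))) \<otimes>\<^bsub>G i\<^esub> snd (snd (snd (snd m) (i, k)))"
proof -
  let ?C = "coprod_cat I n G"
  obtain \<alpha> where m': "m = (F, F', \<alpha>)" "nat_iso ?C ?C F F' \<alpha>" "\<alpha> \<in> extensional (c_obj ?C)"
    using m F F' by (auto simp: Sym_hom)
  have \<alpha>h: "\<And>x. x \<in> c_obj ?C \<Longrightarrow> \<alpha> x \<in> c_hom ?C (fst F x) (fst F' x)"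
    and \<alpha>n: "\<And>x y f. x \<in> c_obj ?C \<Longrightarrow> y \<in> c_obj ?C \<Longrightarrow> f \<in> c_hom ?C x y \<Longrightarrow>
        c_comp ?C (\<alpha> y) (snd F f) = c_comp ?C (snd F' f) (\<alpha> x)"
    using m'(2) unfolding nat_iso_def nat_trans_def by auto
  show "m = (F, F', snd (snd m))" "snd (snd m) \<in> extensional (c_obj ?C)" using m' by auto
  have A: "\<And>i k. i \<in> I \<Longrightarrow> k \<in> {1..n i} \<Longrightarrow> snd (fst F' (i, k)) = snd (fst F (i, k)) \<and>
      \<alpha> (i, k) = (i, snd (fst F (i, k)), snd (snd (\<alpha> (i, k)))) \<and> snd (snd (\<alpha> (i, k))) \<in> carrier (G i)"
  proof -
    fix i k assume i: "i \<in> I" and k: "k \<in> {1..n i}"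
    have x: "(i, k) \<in> c_obj ?C" using i k by (simp add: co_obj_iff)
    have "\<alpha> (i, k) \<in> c_hom ?C (i, snd (fst F (i, k))) (i, snd (fst F' (i, k)))"
      using \<alpha>h[OF x] equiv_analysis(1)[OF F i k] equiv_analysis(1)[OF F' i k] by simp
    then show "snd (fst F' (i, k)) = snd (fst F (i, k)) \<and>
      \<alpha> (i, k) = (i, snd (fst F (i, k)), snd (snd (\<alpha> (i, k)))) \<and> snd (snd (\<alpha> (i, k))) \<in> carrier (G i)"
      unfolding co_hom_iff by auto
  qed
  show "\<And>i k. i \<in> I \<Longrightarrow> k \<in> {1..n i} \<Longrightarrow> snd (fst F' (i, k)) = snd (fst F (i, k))" using A by blast
  show "\<And>i k. i \<in> I \<Longrightarrow> k \<in> {1..n i} \<Longrightarrow> snd (snd m) (i, k) = (i, snd (fst F (i, k)), snd (snd (snd (snd m) (i, k))))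
        \<and> snd (snd (snd (snd m) (i, k))) \<in> carrier (G i)" using A m'(1) by simp
  fix i k g assume i: "i \<in> I" and k: "k \<in> {1..n i}" and g: "g \<in> carrier (G i)"
  have x: "(i, k) \<in> c_obj ?C" using i k by (simp add: co_obj_iff)
  have f: "(i, k, g) \<in> c_hom ?C (i, k) (i, k)" using i k g by (simp add: co_hom_iff)
  have "c_comp ?C (\<alpha> (i, k)) (snd F (i, k, g)) = c_comp ?C (snd F' (i, k, g)) (\<alpha> (i, k))" by (rule \<alpha>n[OF x x f])
  then have "c_comp ?C (i, snd (fst F (i, k)), snd (snd (\<alpha> (i, k)))) (i, snd (fst F (i, k)), snd (snd (snd F (i, k, g)))) =
     c_comp ?C (i, snd (fst F' (i, k)), snd (snd (snd F' (i, k, g)))) (i, snd (fst F (i, k)), snd (snd (\<alpha> (i, k))))"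
    using A[OF i k] equiv_analysis(3)[OF F i k g] equiv_analysis(3)[OF F' i k g] by simp
  then show "snd (snd (snd (snd m) (i, k))) \<otimes>\<^bsub>G i\<^esub> snd (snd (snd F (i, k, g))) = snd (snd (snd F' (i, k, g))) \<otimes>\<^bsub>G i\<^esub> snd (snd (snd (snd m) (i, k)))"
    using m'(1) by (simp add: co_comp)
qed

lemma PhiM_hom:
  assumes F: "F \<in> c_obj (Sym_2grp (coprod_cat I n G))" and F': "F' \<in> c_obj (Sym_2grp (coprod_cat I n G))"
    and m: "m \<in> c_hom (Sym_2grp (coprod_cat I n G)) F F'"
  shows "PhiM I n G m \<in> c_hom (BB I n G) (PhiO I n G F) (PhiO I n G F')"
proof -
  have fm: "fst m = F" "fst (snd m) = F'" using homA_D(1)[OF F F' m] by (metis fst_conv snd_conv)+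
  show ?thesis unfolding homB_iff[OF PhiO_obj[OF F] PhiO_obj[OF F']]
  proof (intro conjI ballI)
    show "PhiM I n G m \<in> extensional I" by (simp add: PhiM_def)
    fix i assume i: "i \<in> I"
    show "fst (PhiM I n G m i) = fst (PhiO I n G F i)" using i fm by (simp add: PhiM_def)
    show "fst (PhiO I n G F' i) = fst (PhiO I n G F i)"
      using i homA_D(3)[OF F F' m i] by (auto simp: PhiO_def fun_eq_iff)
    show "snd (PhiM I n G m i) \<in> extensional {1..n i}" using i by (simp add: PhiM_def)
    fix k assume k: "k \<in> {1..n i}"
    show "fst (snd (PhiM I n G m i) k) = snd (PhiO I n G F i) k" using i k fm by (simp add: PhiM_def)
    show "fst (snd (snd (PhiM I n G m i) k)) = snd (PhiO I n G F' i) k" using i k fm by (simp add: PhiM_def)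
    show "snd (snd (snd (PhiM I n G m i) k)) () \<in> carrier (G i)" using i k homA_D(4)[OF F F' m i k] by (simp add: PhiM_def)
    fix g assume g: "g \<in> carrier (G i)"
    show "snd (snd (snd (PhiM I n G m i) k)) () \<otimes>\<^bsub>G i\<^esub> snd (snd (PhiO I n G F i) k) g =
          snd (snd (PhiO I n G F' i) k) g \<otimes>\<^bsub>G i\<^esub> snd (snd (snd (PhiM I n G m i) k)) ()"
      using i k g homA_D(5)[OF F F' m i k g] by (simp add: PhiM_def PhiO_def)
  qed
qed

lemma PsiM_PhiM:
  assumes F: "F \<in> c_obj (Sym_2grp (coprod_cat I n G))" and F': "F' \<in> c_obj (Sym_2grp (coprod_cat I n G))"
    and m: "m \<in> c_hom (Sym_2grp (coprod_cat I n G)) F F'"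
  shows "PsiM I n G (PhiM I n G m) = m"
proof -
  have h: "PhiM I n G m \<in> c_hom (BB I n G) (PhiO I n G F) (PhiO I n G F')" by (rule PhiM_hom[OF F F' m])
  have e: "restrict (\<lambda>(i, k). (i, fst (PhiO I n G F i) k, snd (snd (snd (PhiM I n G m i) k)) ())) (c_obj (coprod_cat I n G))
     = snd (snd m)"
  proof (rule extensionalityI[OF _ homA_D(2)[OF F F' m]])
    fix x assume "x \<in> c_obj (coprod_cat I n G)"
    then obtain i k where x: "x = (i, k)" "i \<in> I" "k \<in> {1..n i}" by (auto simp: co_obj)
    show "restrict (\<lambda>(i, k). (i, fst (PhiO I n G F i) k, snd (snd (snd (PhiM I n G m i) k)) ())) (c_obj (coprod_cat I n G)) x
      = snd (snd m) x"
      using x homA_D(4)[OF F F' m x(2,3)] by (simp add: co_obj_iff PhiM_def PhiO_def)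
  qed simp
  show ?thesis
    unfolding PsiM_eq[OF PhiO_obj[OF F] PhiO_obj[OF F'] h] PsiO_PhiO[OF F] PsiO_PhiO[OF F'] e
    using homA_D(1)[OF F F' m] by simp
qed

lemma PhiM_PsiM:
  assumes D: "D \<in> c_obj (BB I n G)" and D': "D' \<in> c_obj (BB I n G)" and m: "m \<in> c_hom (BB I n G) D D'"
  shows "PhiM I n G (PsiM I n G m) = m"
proof (rule ext)
  note mm = m[unfolded homB_iff[OF D D']]
  fix i show "PhiM I n G (PsiM I n G m) i = m i"
  proof (cases "i \<in> I")
    case False then show ?thesis using mm by (simp add: PhiM_def extensional_def)
  next
    case i: True
    have e2: "(\<lambda>k\<in>{1..n i}. (snd (PhiO I n G (PsiO I n G D) i) k, snd (PhiO I n G (PsiO I n G D') i) k,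
        \<lambda>u. snd (snd (restrict (\<lambda>(i, k). (i, fst (D i) k, snd (snd (snd (m i) k)) ())) (c_obj (coprod_cat I n G)) (i, k)))))
      = snd (m i)"
    proof (rule extensionalityI)
      show "snd (m i) \<in> extensional {1..n i}" using mm i by blast
      fix k assume k: "k \<in> {1..n i}"
      have u: "(\<lambda>u. snd (snd (snd (m i) k)) ()) = snd (snd (snd (m i) k))" by (rule ext) simp
      show "(\<lambda>k\<in>{1..n i}. (snd (PhiO I n G (PsiO I n G D) i) k, snd (PhiO I n G (PsiO I n G D') i) k,
        \<lambda>u. snd (snd (restrict (\<lambda>(i, k). (i, fst (D i) k, snd (snd (snd (m i) k)) ())) (c_obj (coprod_cat I n G)) (i, k))))) k
        = snd (m i) k"
        using i k mm u by (simp add: PhiO_PsiO[OF D] PhiO_PsiO[OF D'] co_obj_iff prod_eq_iff)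
    qed simp
    show ?thesis unfolding PsiM_eq[OF D D' m] PhiM_def
      using i e2 mm PhiO_PsiO[OF D] by (simp add: prod_eq_iff)
  qed
qed

theorem iso_main: "two_group_iso (Sym_2grp (coprod_cat I n G)) (BB I n G)"
proof (rule strict_iso[where F = "(PhiO I n G, PhiM I n G)" and K = "(PsiO I n G, PsiM I n G)", OF mlaws_B])
  show "\<And>x. x \<in> c_obj (Sym_2grp (coprod_cat I n G)) \<Longrightarrow> fst (PhiO I n G, PhiM I n G) x \<in> c_obj (BB I n G)"
    using PhiO_obj by simp
  show "\<And>x y f. x \<in> c_obj (Sym_2grp (coprod_cat I n G)) \<Longrightarrow> y \<in> c_obj (Sym_2grp (coprod_cat I n G)) \<Longrightarrow>
      f \<in> c_hom (Sym_2grp (coprod_cat I n G)) x y \<Longrightarrow>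
      snd (PhiO I n G, PhiM I n G) f \<in> c_hom (BB I n G) (fst (PhiO I n G, PhiM I n G) x) (fst (PhiO I n G, PhiM I n G) y)"
    using PhiM_hom by simp
  show "\<And>x. x \<in> c_obj (BB I n G) \<Longrightarrow> fst (PsiO I n G, PsiM I n G) x \<in> c_obj (Sym_2grp (coprod_cat I n G))"
    using PsiO_obj by simp
  show "\<And>x y f. x \<in> c_obj (BB I n G) \<Longrightarrow> y \<in> c_obj (BB I n G) \<Longrightarrow> f \<in> c_hom (BB I n G) x y \<Longrightarrow>
      snd (PsiO I n G, PsiM I n G) f \<in> c_hom (Sym_2grp (coprod_cat I n G)) (fst (PsiO I n G, PsiM I n G) x) (fst (PsiO I n G, PsiM I n G) y)"
    using PsiM_hom by simp
  show "\<And>x. x \<in> c_obj (Sym_2grp (coprod_cat I n G)) \<Longrightarrow> fst (PsiO I n G, PsiM I n G) (fst (PhiO I n G, PhiM I n G) x) = x"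
    using PsiO_PhiO by simp
  show "\<And>f. f \<in> mor (Sym_2grp (coprod_cat I n G)) \<Longrightarrow> snd (PsiO I n G, PsiM I n G) (snd (PhiO I n G, PhiM I n G) f) = f"
    unfolding mor_iff using PsiM_PhiM by auto
  show "\<And>x. x \<in> c_obj (BB I n G) \<Longrightarrow> fst (PhiO I n G, PhiM I n G) (fst (PsiO I n G, PsiM I n G) x) = x"
    using PhiO_PsiO by simp
  show "\<And>f. f \<in> mor (BB I n G) \<Longrightarrow> snd (PhiO I n G, PhiM I n G) (snd (PsiO I n G, PsiM I n G) f) = f"
    unfolding mor_iff using PhiM_PsiM by auto
qed (simp_all add: PsiM_comp PsiM_id PsiO_tens PsiM_tensm PsiO_unit PsiM_assoc PsiM_lu PsiM_ru)

end


theorem theorem4p14: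
  fixes I :: "'i set" and n :: "'i \<Rightarrow> nat" and G :: "'i \<Rightarrow> 'g monoid"
  assumes "\<forall>i\<in>I. n i \<ge> 1"
    and "\<forall>i\<in>I. group (G i)"
    and "\<forall>i\<in>I. \<forall>i'\<in>I. i \<noteq> i' \<longrightarrow> \<not> (G i \<cong> G i')"
  shows "two_group_iso (Sym_2grp (coprod_cat I n G))
           (prod_mcat I (\<lambda>i. wreath (n i) (Sym_2grp (grp_cat (G i)))))"
proof (rule iso_main)
  show "\<And>i. i \<in> I \<Longrightarrow> group (G i)" using assms(2) by blast
  show "\<And>i j. i \<in> I \<Longrightarrow> j \<in> I \<Longrightarrow> G i \<cong> G j \<Longrightarrow> i = j" using assms(3) by blast
qed

end
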